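(* There is an algorithm which, given a first-order sentence $\Phi$ over $\mathcal{B}=\langle \mathbb{T},\sqcup,\sqcap,\bar{\cdot}\rangle$ with arbitrary tree-share constants, of size $n$, computes in time $O(n^2)$ a sentence $\Phi'$ such that: (1) the only constants occurring in $\Phi'$ are $\bullet$ and $\circ$; (2) $\Phi$ and $\Phi'$ have the same number of quantifier alternations; (3) $\Phi$ and $\Phi'$ are equivalent in $\mathcal{B}$ (i.e. $\mathcal{B}\models\Phi$ iff $\mathcal{B}\models\Phi'$); (4) $\Phi'$ has size $O(n^2)$.
   Context: A tree share is a finite binary tree whose leaves are labelled $\bullet$ (black) or $\circ$ (white), in canonical form: no subtree has the form $\mathrm{Node}(\bullet,\bullet)$ or $\mathrm{Node}(\circ,\circ)$ (such subtrees are identified with the leaf $\bullet$, resp. $\circ$). $\mathbb{T}$ denotes the set of tree shares. To compute $\tau_1\sqcup\tau_2$ or $\tau_1\sqcap\tau_2$, unfold both trees (replacing a leaf $\ell$ by $\mathrm{Node}(\ell,\ell)$ as needed) to a common shape, apply Boolean join, resp. meet, leafwise (with $\bullet$ as true and $\circ$ as false), and refold to canonical form; $\bar\tau$ swaps the colours of all leaves. The number of quantifier alternations of a prenex sentence is the number of switches between $\forall$ and $\exists$ blocks. *)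

theory Defs
  imports Main
begin

datatype tree = Leaf bool | Node tree tree
  \<comment> \<open>Leaf True = black (bullet), Leaf False = white (circ)\<close>

fun canonical :: "tree \<Rightarrow> bool" where
  "canonical (Leaf b) = True"
| "canonical (Node l r) = (canonical l \<and> canonical r \<and> \<not> (\<exists>b. l = Leaf b \<and> r = Leaf b))"

definition mk :: "tree \<Rightarrow> tree \<Rightarrow> tree" where
  "mk l r = (case (l, r) of (Leaf a, Leaf b) \<Rightarrow> (if a = b then Leaf a else Node l r) | _ \<Rightarrow> Node l r)"

fun lift2 :: "(bool \<Rightarrow> bool \<Rightarrow> bool) \<Rightarrow> tree \<Rightarrow> tree \<Rightarrow> tree" where
  "lift2 f (Leaf a) (Leaf b) = Leaf (f a b)"
| "lift2 f (Leaf a) (Node l r) = mk (lift2 f (Leaf a) l) (lift2 f (Leaf a) r)"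
| "lift2 f (Node l r) (Leaf b) = mk (lift2 f l (Leaf b)) (lift2 f r (Leaf b))"
| "lift2 f (Node l1 r1) (Node l2 r2) = mk (lift2 f l1 l2) (lift2 f r1 r2)"

definition tjoin :: "tree \<Rightarrow> tree \<Rightarrow> tree" where "tjoin = lift2 (\<or>)"
definition tmeet :: "tree \<Rightarrow> tree \<Rightarrow> tree" where "tmeet = lift2 (\<and>)"

fun tcompl :: "tree \<Rightarrow> tree" where
  "tcompl (Leaf b) = Leaf (\<not> b)"
| "tcompl (Node l r) = Node (tcompl l) (tcompl r)"

datatype trm = TVar nat | TConst tree | TJoin trm trm | TMeet trm trm | TCompl trm

datatype fm = FEq trm trm | FNot fm | FAnd fm fm | FOr fm fm | FAll nat fm | FEx nat fm

fun tval :: "(nat \<Rightarrow> tree) \<Rightarrow> trm \<Rightarrow> tree" where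
  "tval e (TVar x) = e x"
| "tval e (TConst c) = c"
| "tval e (TJoin a b) = tjoin (tval e a) (tval e b)"
| "tval e (TMeet a b) = tmeet (tval e a) (tval e b)"
| "tval e (TCompl a) = tcompl (tval e a)"

fun holds :: "(nat \<Rightarrow> tree) \<Rightarrow> fm \<Rightarrow> bool" where
  "holds e (FEq a b) = (tval e a = tval e b)"
| "holds e (FNot p) = (\<not> holds e p)"
| "holds e (FAnd p q) = (holds e p \<and> holds e q)"
| "holds e (FOr p q) = (holds e p \<or> holds e q)"
| "holds e (FAll x p) = (\<forall>t. canonical t \<longrightarrow> holds (e(x := t)) p)"
| "holds e (FEx x p) = (\<exists>t. canonical t \<and> holds (e(x := t)) p)"

text \<open>Truth of a sentence in the structure B (environment irrelevant for sentences).\<close>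
definition models_B :: "fm \<Rightarrow> bool" where
  "models_B p = holds (\<lambda>_. Leaf False) p"

fun tfv :: "trm \<Rightarrow> nat set" where
  "tfv (TVar x) = {x}"
| "tfv (TConst c) = {}"
| "tfv (TJoin a b) = tfv a \<union> tfv b"
| "tfv (TMeet a b) = tfv a \<union> tfv b"
| "tfv (TCompl a) = tfv a"

fun ffv :: "fm \<Rightarrow> nat set" where
  "ffv (FEq a b) = tfv a \<union> tfv b"
| "ffv (FNot p) = ffv p"
| "ffv (FAnd p q) = ffv p \<union> ffv q"
| "ffv (FOr p q) = ffv p \<union> ffv q"
| "ffv (FAll x p) = ffv p - {x}"
| "ffv (FEx x p) = ffv p - {x}"

definition sentence :: "fm \<Rightarrow> bool" where "sentence p = (ffv p = {})"

fun tconsts :: "trm \<Rightarrow> tree set" where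
  "tconsts (TVar x) = {}"
| "tconsts (TConst c) = {c}"
| "tconsts (TJoin a b) = tconsts a \<union> tconsts b"
| "tconsts (TMeet a b) = tconsts a \<union> tconsts b"
| "tconsts (TCompl a) = tconsts a"

fun fconsts :: "fm \<Rightarrow> tree set" where
  "fconsts (FEq a b) = tconsts a \<union> tconsts b"
| "fconsts (FNot p) = fconsts p"
| "fconsts (FAnd p q) = fconsts p \<union> fconsts q"
| "fconsts (FOr p q) = fconsts p \<union> fconsts q"
| "fconsts (FAll x p) = fconsts p"
| "fconsts (FEx x p) = fconsts p"

fun qfree :: "fm \<Rightarrow> bool" where
  "qfree (FEq a b) = True"
| "qfree (FNot p) = qfree p"
| "qfree (FAnd p q) = (qfree p \<and> qfree q)"
| "qfree (FOr p q) = (qfree p \<and> qfree q)"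
| "qfree (FAll x p) = False"
| "qfree (FEx x p) = False"

inductive prenex :: "fm \<Rightarrow> bool" where
  "qfree p \<Longrightarrow> prenex p"
| "prenex p \<Longrightarrow> prenex (FAll x p)"
| "prenex p \<Longrightarrow> prenex (FEx x p)"

fun qprefix :: "fm \<Rightarrow> bool list" where
  "qprefix (FAll x p) = True # qprefix p"
| "qprefix (FEx x p) = False # qprefix p"
| "qprefix _ = []"

fun switches :: "bool list \<Rightarrow> nat" where
  "switches (a # b # r) = (if a = b then 0 else 1) + switches (b # r)"
| "switches _ = 0"

definition alternations :: "fm \<Rightarrow> nat" where
  "alternations p = switches (qprefix p)"

section \<open>Machine model: Jones' WHILE language over binary trees, with unit-cost time\<close>

datatype dat = DNil | DCons dat dat

fun dsize :: "dat \<Rightarrow> nat" where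
  "dsize DNil = 1"
| "dsize (DCons a b) = 1 + dsize a + dsize b"

datatype exp = EVar nat | ENil | ECons exp exp | EHd exp | ETl exp | EIsNil exp

fun hd_d :: "dat \<Rightarrow> dat" where "hd_d (DCons a b) = a" | "hd_d DNil = DNil"
fun tl_d :: "dat \<Rightarrow> dat" where "tl_d (DCons a b) = b" | "tl_d DNil = DNil"

fun eval :: "(nat \<Rightarrow> dat) \<Rightarrow> exp \<Rightarrow> dat" where
  "eval s (EVar x) = s x"
| "eval s ENil = DNil"
| "eval s (ECons a b) = DCons (eval s a) (eval s b)"
| "eval s (EHd a) = hd_d (eval s a)"
| "eval s (ETl a) = tl_d (eval s a)"
| "eval s (EIsNil a) = (if eval s a = DNil then DCons DNil DNil else DNil)"

fun etime :: "exp \<Rightarrow> nat" where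
  "etime (EVar x) = 1"
| "etime ENil = 1"
| "etime (ECons a b) = 1 + etime a + etime b"
| "etime (EHd a) = 1 + etime a"
| "etime (ETl a) = 1 + etime a"
| "etime (EIsNil a) = 1 + etime a"

datatype com = Assign nat exp | Seq com com | While exp com

inductive exec :: "com \<Rightarrow> (nat \<Rightarrow> dat) \<Rightarrow> nat \<Rightarrow> (nat \<Rightarrow> dat) \<Rightarrow> bool" where
  "exec (Assign x e) s (1 + etime e) (s(x := eval s e))"
| "exec c1 s t1 s1 \<Longrightarrow> exec c2 s1 t2 s2 \<Longrightarrow> exec (Seq c1 c2) s (t1 + t2) s2"
| "eval s b = DNil \<Longrightarrow> exec (While b c) s (1 + etime b) s"
| "eval s b \<noteq> DNil \<Longrightarrow> exec c s t1 s1 \<Longrightarrow> exec (While b c) s1 t2 s2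
     \<Longrightarrow> exec (While b c) s (1 + etime b + t1 + t2) s2"

definition run :: "com \<Rightarrow> dat \<Rightarrow> nat \<Rightarrow> dat \<Rightarrow> bool" where
  "run p x t y = (\<exists>s'. exec p (\<lambda>v. if v = 0 then x else DNil) t s' \<and> s' 1 = y)"

fun tg :: "nat \<Rightarrow> dat" where
  "tg 0 = DNil"
| "tg (Suc k) = DCons DNil (tg k)"

fun enc_nat :: "nat \<Rightarrow> dat" where
  "enc_nat n = (if n = 0 then DNil
     else DCons (if odd n then DCons DNil DNil else DNil) (enc_nat (n div 2)))"

fun enc_tree :: "tree \<Rightarrow> dat" where
  "enc_tree (Leaf b) = DCons (tg 0) (if b then DCons DNil DNil else DNil)"
| "enc_tree (Node l r) = DCons (tg 1) (DCons (enc_tree l) (enc_tree r))"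

fun enc_trm :: "trm \<Rightarrow> dat" where
  "enc_trm (TVar x) = DCons (tg 0) (enc_nat x)"
| "enc_trm (TConst c) = DCons (tg 1) (enc_tree c)"
| "enc_trm (TJoin a b) = DCons (tg 2) (DCons (enc_trm a) (enc_trm b))"
| "enc_trm (TMeet a b) = DCons (tg 3) (DCons (enc_trm a) (enc_trm b))"
| "enc_trm (TCompl a) = DCons (tg 4) (enc_trm a)"

fun enc_fm :: "fm \<Rightarrow> dat" where
  "enc_fm (FEq a b) = DCons (tg 0) (DCons (enc_trm a) (enc_trm b))"
| "enc_fm (FNot p) = DCons (tg 1) (enc_fm p)"
| "enc_fm (FAnd p q) = DCons (tg 2) (DCons (enc_fm p) (enc_fm q))"
| "enc_fm (FOr p q) = DCons (tg 3) (DCons (enc_fm p) (enc_fm q))"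
| "enc_fm (FAll x p) = DCons (tg 4) (DCons (enc_nat x) (enc_fm p))"
| "enc_fm (FEx x p) = DCons (tg 5) (DCons (enc_nat x) (enc_fm p))"

text \<open>Size of a sentence = size of its encoding (constants contribute their node count).\<close>
definition fsize :: "fm \<Rightarrow> nat" where "fsize p = dsize (enc_fm p)"

end

theory Submission
  imports Defs
begin


type_synonym seq = "nat \<Rightarrow> bool"

fun den :: "tree \<Rightarrow> seq \<Rightarrow> bool" where
  "den (Leaf b) w = b"
| "den (Node l r) w = den (if w 0 then r else l) (\<lambda>n. w (Suc n))"

lemma den_mk[simp]: "den (mk l r) = den (Node l r)"
  by (auto simp: mk_def split: tree.splits intro!: ext)

lemma den_lift2[simp]: "den (lift2 f a b) w = f (den a w) (den b w)"
  by (induction f a b arbitrary: w rule: lift2.induct) auto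

lemma den_tcompl[simp]: "den (tcompl a) w = (\<not> den a w)"
  by (induction a arbitrary: w) auto

lemma canonical_mk[simp]: "canonical l \<Longrightarrow> canonical r \<Longrightarrow> canonical (mk l r)"
  by (auto simp: mk_def split: tree.splits)

lemma canonical_lift2[simp]: "canonical (lift2 f a b)"
  by (induction f a b rule: lift2.induct) auto

lemma canonical_tcompl[simp]: "canonical a \<Longrightarrow> canonical (tcompl a)"
  apply (induction a) apply auto
  apply (case_tac a1; case_tac a2; auto)+
  done

lemma canonical_tjoin[simp]: "canonical (tjoin a b)" by (simp add: tjoin_def)
lemma canonical_tmeet[simp]: "canonical (tmeet a b)" by (simp add: tmeet_def)
lemma den_tjoin[simp]: "den (tjoin a b) w = (den a w \<or> den b w)" by (simp add: tjoin_def)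
lemma den_tmeet[simp]: "den (tmeet a b) w = (den a w \<and> den b w)" by (simp add: tmeet_def)

definition scons :: "bool \<Rightarrow> seq \<Rightarrow> seq" where
  "scons b w = (\<lambda>n. case n of 0 \<Rightarrow> b | Suc m \<Rightarrow> w m)"

lemma scons_0[simp]: "scons b w 0 = b" and scons_Suc[simp]: "scons b w (Suc n) = w n"
  by (auto simp: scons_def)

lemma scons_tl[simp]: "(\<lambda>n. scons b w (Suc n)) = w" by auto

lemma den_Node_scons[simp]: "den (Node l r) (scons b w) = den (if b then r else l) w" by simp

lemma const_leaf: "canonical a \<Longrightarrow> (\<forall>w. den a w = c) \<Longrightarrow> a = Leaf c"
proof (induction a)
  case (Leaf x)
  then show ?case by auto
next
  case (Node l r)
  have "\<forall>w. den l w = c" using Node.prems(2)[rule_format, of "scons False _"] by simp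
  moreover have "\<forall>w. den r w = c" using Node.prems(2)[rule_format, of "scons True _"] by simp
  ultimately show ?case using Node by auto
qed

lemma den_inj: "canonical a \<Longrightarrow> canonical b \<Longrightarrow> den a = den b \<Longrightarrow> a = b"
proof (induction a arbitrary: b)
  case (Leaf x)
  have "\<forall>w. den b w = x" using Leaf.prems(3) by (metis den.simps(1))
  then show ?case using const_leaf[of b x] Leaf by auto
next
  case (Node l r)
  show ?case
  proof (cases b)
    case (Leaf y)
    then have "Node l r = Leaf y" using const_leaf[of "Node l r" y] Node.prems by auto
    then show ?thesis by simp
  next
    case (Node l' r')
    have eq: "den (Node l r) = den b" by (rule Node.prems(3))
    have "\<And>w. den l w = den b (scons False w)" using fun_cong[OF eq, of "scons False _"] by simp
    moreover have "\<And>w. den r w = den b (scons True w)" using fun_cong[OF eq, of "scons True _"] by simp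
    ultimately have "den l = den l'" "den r = den r'" using Node by (auto intro!: ext)
    then show ?thesis using Node.IH Node.prems Node by auto
  qed
qed


definition agree :: "nat \<Rightarrow> seq \<Rightarrow> seq \<Rightarrow> bool" where
  "agree N w w' = (\<forall>i<N. w i = w' i)"

definition fdep :: "(seq \<Rightarrow> bool) \<Rightarrow> bool" where
  "fdep f = (\<exists>N. \<forall>w w'. agree N w w' \<longrightarrow> f w = f w')"

definition cont :: "(seq \<Rightarrow> seq) \<Rightarrow> bool" where
  "cont G = (\<forall>N. \<exists>M. \<forall>w w'. agree M w w' \<longrightarrow> agree N (G w) (G w'))"

lemma agree_Suc: "agree (Suc N) w w' = (w 0 = w' 0 \<and> agree N (\<lambda>n. w (Suc n)) (\<lambda>n. w' (Suc n)))"
  unfolding agree_def by (auto simp: less_Suc_eq_0_disj)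

lemma agree_mono: "agree M w w' \<Longrightarrow> N \<le> M \<Longrightarrow> agree N w w'"
  unfolding agree_def by auto

lemma den_fdep_aux: "\<exists>N. \<forall>w w'. agree N w w' \<longrightarrow> den t w = den t w'"
proof (induction t)
  case (Leaf x) then show ?case by auto
next
  case (Node l r)
  then obtain N1 N2 where N: "\<forall>w w'. agree N1 w w' \<longrightarrow> den l w = den l w'"
     "\<forall>w w'. agree N2 w w' \<longrightarrow> den r w = den r w'" by blast
  show ?case
  proof (intro exI allI impI)
    fix w w' assume a: "agree (Suc (max N1 N2)) w w'"
    then have "w 0 = w' 0" "agree N1 (\<lambda>n. w (Suc n)) (\<lambda>n. w' (Suc n))"
       "agree N2 (\<lambda>n. w (Suc n)) (\<lambda>n. w' (Suc n))"
      by (auto simp: agree_Suc intro: agree_mono)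
    then show "den (Node l r) w = den (Node l r) w'" using N by simp
  qed
qed

lemma den_fdep: "fdep (den t)" using den_fdep_aux unfolding fdep_def by blast

lemma fdep_definable_aux: "\<forall>w w'. agree N w w' \<longrightarrow> f w = f w' \<Longrightarrow> \<exists>t. canonical t \<and> den t = f"
proof (induction N arbitrary: f)
  case 0
  then have "\<And>w. f w = f (\<lambda>_. False)" by (auto simp: agree_def)
  then show ?case by (intro exI[of _ "Leaf (f (\<lambda>_. False))"]) (auto intro!: ext)
next
  case (Suc N)
  have "\<forall>w w'. agree N w w' \<longrightarrow> f (scons False w) = f (scons False w')"
       "\<forall>w w'. agree N w w' \<longrightarrow> f (scons True w) = f (scons True w')"
    using Suc.prems by (auto simp: agree_Suc)
  then obtain l r where lr: "canonical l" "den l = (\<lambda>w. f (scons False w))"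
                            "canonical r" "den r = (\<lambda>w. f (scons True w))"
    using Suc.IH by metis
  have se: "\<And>w. scons (w 0) (\<lambda>n. w (Suc n)) = w" unfolding scons_def by (rule ext) (simp split: nat.splits)
  have "\<And>w. den (mk l r) w = f w"
  proof -
    fix w
    have "den (mk l r) w = f (scons (w 0) (\<lambda>n. w (Suc n)))" using lr by simp
    then show "den (mk l r) w = f w" using se by simp
  qed
  then have "den (mk l r) = f" by auto
  then show ?case using lr by (intro exI[of _ "mk l r"]) auto
qed

lemma fdep_definable: "fdep f \<Longrightarrow> \<exists>t. canonical t \<and> den t = f"
  unfolding fdep_def using fdep_definable_aux by blast

lemma fdep_comp: "fdep f \<Longrightarrow> cont G \<Longrightarrow> fdep (\<lambda>w. f (G w))"
  unfolding fdep_def cont_def by metis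

lemma fdep_and: "fdep f \<Longrightarrow> fdep g \<Longrightarrow> fdep (\<lambda>w. f w \<and> g w)"
  unfolding fdep_def by (metis agree_mono max.cobounded1 max.cobounded2)

locale autom =
  fixes G H :: "seq \<Rightarrow> seq"
  assumes cG: "cont G" and cH: "cont H" and GH: "\<And>v. G (H v) = v" and HG: "\<And>w. H (G w) = w"
begin

definition sig :: "tree \<Rightarrow> tree" where
  "sig t = (SOME t'. canonical t' \<and> den t' = (\<lambda>w. den t (G w)))"

lemma sig: "canonical (sig t) \<and> den (sig t) = (\<lambda>w. den t (G w))"
proof -
  have "\<exists>t'. canonical t' \<and> den t' = (\<lambda>w. den t (G w))"
    by (rule fdep_definable[OF fdep_comp[OF den_fdep cG]])
  then show ?thesis unfolding sig_def by (rule someI_ex)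
qed

lemma sig_can[simp]: "canonical (sig t)" using sig by blast
lemma den_sig[simp]: "den (sig t) w = den t (G w)" using sig by simp

lemma sig_eqI: "canonical t' \<Longrightarrow> (\<And>w. den t' w = den t (G w)) \<Longrightarrow> sig t = t'"
  by (rule den_inj) (auto intro!: ext)

lemma sig_leaf[simp]: "sig (Leaf b) = Leaf b" by (rule sig_eqI) auto
lemma sig_join: "sig (tjoin a b) = tjoin (sig a) (sig b)" by (rule sig_eqI) auto
lemma sig_meet: "sig (tmeet a b) = tmeet (sig a) (sig b)" by (rule sig_eqI) auto
lemma sig_compl: "canonical a \<Longrightarrow> sig (tcompl a) = tcompl (sig a)" by (rule sig_eqI) auto

lemma sig_inj: "canonical a \<Longrightarrow> canonical b \<Longrightarrow> sig a = sig b \<Longrightarrow> a = b"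
proof -
  assume a: "canonical a" "canonical b" "sig a = sig b"
  then have "\<And>w. den a (G w) = den b (G w)" by (metis den_sig)
  then have "\<And>v. den a v = den b v" by (metis GH)
  then show "a = b" using a by (intro den_inj) (auto intro!: ext)
qed

lemma sig_surj: "canonical y \<Longrightarrow> \<exists>t. canonical t \<and> sig t = y"
proof -
  assume y: "canonical y"
  obtain t where t: "canonical t" "den t = (\<lambda>v. den y (H v))"
    using fdep_definable[OF fdep_comp[OF den_fdep cH]] by blast
  have "sig t = y" by (rule sig_eqI[OF y]) (simp add: t HG)
  then show ?thesis using t by blast
qed

lemma tval_sig: "\<forall>x. canonical (e x) \<Longrightarrow> tconsts a \<subseteq> {Leaf True, Leaf False} \<Longrightarrow>
   tval (\<lambda>v. sig (e v)) a = sig (tval e a) \<and> canonical (tval e a)"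
  by (induction a) (auto simp: sig_join sig_meet sig_compl tjoin_def[symmetric] tmeet_def[symmetric])

lemma holds_sig: "\<forall>x. canonical (e x) \<Longrightarrow> fconsts p \<subseteq> {Leaf True, Leaf False} \<Longrightarrow>
   holds (\<lambda>v. sig (e v)) p = holds e p"
proof (induction p arbitrary: e)
  case (FEq a b)
  then have A: "tval (\<lambda>v. sig (e v)) a = sig (tval e a)" "canonical (tval e a)"
    and B: "tval (\<lambda>v. sig (e v)) b = sig (tval e b)" "canonical (tval e b)"
    using tval_sig[of e a] tval_sig[of e b] by auto
  show ?case unfolding holds.simps A(1) B(1) using sig_inj[OF A(2) B(2)] by auto
next
  case (FAll x p)
  have key: "\<And>t. canonical t \<Longrightarrow> holds ((\<lambda>v. sig (e v))(x := sig t)) p = holds (e(x:=t)) p"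
  proof -
    fix t assume t: "canonical t"
    have eq: "(\<lambda>v. sig (e v))(x := sig t) = (\<lambda>v. sig ((e(x:=t)) v))" by auto
    have c: "\<forall>v. canonical ((e(x:=t)) v)" using FAll.prems t by auto
    show "holds ((\<lambda>v. sig (e v))(x := sig t)) p = holds (e(x:=t)) p"
      unfolding eq by (rule FAll.IH[OF c]) (use FAll.prems in simp)
  qed
  have "(\<forall>t. canonical t \<longrightarrow> holds ((\<lambda>v. sig (e v))(x := t)) p) = (\<forall>t. canonical t \<longrightarrow> holds (e(x := t)) p)"
    by (metis key sig_surj sig_can)
  then show ?case by simp
next
  case (FEx x p)
  have key: "\<And>t. canonical t \<Longrightarrow> holds ((\<lambda>v. sig (e v))(x := sig t)) p = holds (e(x:=t)) p"
  proof -
    fix t assume t: "canonical t"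
    have eq: "(\<lambda>v. sig (e v))(x := sig t) = (\<lambda>v. sig ((e(x:=t)) v))" by auto
    have c: "\<forall>v. canonical ((e(x:=t)) v)" using FEx.prems t by auto
    show "holds ((\<lambda>v. sig (e v))(x := sig t)) p = holds (e(x:=t)) p"
      unfolding eq by (rule FEx.IH[OF c]) (use FEx.prems in simp)
  qed
  have "(\<exists>t. canonical t \<and> holds ((\<lambda>v. sig (e v))(x := t)) p) = (\<exists>t. canonical t \<and> holds (e(x := t)) p)"
    by (metis key sig_surj sig_can)
  then show ?case by simp
qed auto

end


definition stl :: "seq \<Rightarrow> seq" where "stl w = (\<lambda>n. w (Suc n))"

lemma stl_scons[simp]: "stl (scons b w) = w" by (simp add: stl_def)
lemma scons_eta: "scons (w 0) (stl w) = w"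
  unfolding scons_def stl_def by (rule ext) (simp split: nat.splits)
lemma scons_eta'[simp]: "w 0 = b \<Longrightarrow> scons b (stl w) = w" using scons_eta by blast
lemma den_Node': "den (Node l r) w = den (if w 0 then r else l) (stl w)" by (simp add: stl_def)
declare den.simps(2)[simp del]
declare den_Node'[simp]

lemma cont_id: "cont (\<lambda>w. w)" unfolding cont_def by blast
lemma cont_comp: "cont F \<Longrightarrow> cont G \<Longrightarrow> cont (\<lambda>w. F (G w))" unfolding cont_def by metis
lemma cont_stl: "cont stl"
  unfolding cont_def agree_def stl_def by (intro allI exI[of _ "Suc _"]) auto
lemma cont_scons: "cont F \<Longrightarrow> cont (\<lambda>w. scons b (F w))"
  unfolding cont_def
proof (intro allI)
  fix N assume "\<forall>N. \<exists>M. \<forall>w w'. agree M w w' \<longrightarrow> agree N (F w) (F w')"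
  then obtain M where "\<forall>w w'. agree M w w' \<longrightarrow> agree N (F w) (F w')" by blast
  then show "\<exists>M. \<forall>w w'. agree M w w' \<longrightarrow> agree N (scons b (F w)) (scons b (F w'))"
    by (intro exI[of _ M]) (auto simp: agree_def scons_def split: nat.splits)
qed
lemma cont_if: "fdep P \<Longrightarrow> cont F \<Longrightarrow> cont G \<Longrightarrow> cont (\<lambda>w. if P w then F w else G w)"
  unfolding cont_def fdep_def
proof (intro allI)
  fix N assume P: "\<exists>N. \<forall>w w'. agree N w w' \<longrightarrow> P w = P w'"
    and F: "\<forall>N. \<exists>M. \<forall>w w'. agree M w w' \<longrightarrow> agree N (F w) (F w')"
    and G: "\<forall>N. \<exists>M. \<forall>w w'. agree M w w' \<longrightarrow> agree N (G w) (G w')"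
  obtain M0 where M0: "\<forall>w w'. agree M0 w w' \<longrightarrow> P w = P w'" using P by blast
  obtain M1 where M1: "\<forall>w w'. agree M1 w w' \<longrightarrow> agree N (F w) (F w')" using F by blast
  obtain M2 where M2: "\<forall>w w'. agree M2 w w' \<longrightarrow> agree N (G w) (G w')" using G by blast
  show "\<exists>M. \<forall>w w'. agree M w w' \<longrightarrow> agree N (if P w then F w else G w) (if P w' then F w' else G w')"
    apply (rule exI[of _ "max M0 (max M1 M2)"])
    using M0 M1 M2 agree_mono by (smt (verit) max.cobounded1 max.cobounded2 max.coboundedI2)
qed
lemma fdep_0: "fdep (\<lambda>w. w 0)"
  unfolding fdep_def agree_def by (intro exI[of _ 1]) auto

fun ga :: "tree \<Rightarrow> seq \<Rightarrow> seq" where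
  "ga (Leaf b) w = w"
| "ga (Node l r) w = (if l = Leaf False then ga r (stl w) else if r = Leaf False then ga l (stl w)
     else if w 0 then scons True (ga r (stl w)) else scons False (ga l (stl w)))"

fun ha :: "tree \<Rightarrow> seq \<Rightarrow> seq" where
  "ha (Leaf b) v = v"
| "ha (Node l r) v = (if l = Leaf False then scons True (ha r v) else if r = Leaf False then scons False (ha l v)
     else if v 0 then scons True (ha r (stl v)) else scons False (ha l (stl v)))"

definition nz :: "tree \<Rightarrow> bool" where "nz a = (canonical a \<and> a \<noteq> Leaf False)"

lemma nz_Node: "nz (Node l r) \<Longrightarrow> canonical l \<and> canonical r \<and> (l \<noteq> Leaf False \<or> r \<noteq> Leaf False)"
  by (auto simp: nz_def)

lemma nz_leaf: "nz (Leaf b) = b" by (auto simp: nz_def)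

lemma ha_in: "nz a \<Longrightarrow> den a (ha a v)"
proof (induction a arbitrary: v)
  case (Leaf x) then show ?case by (simp add: nz_leaf)
next
  case (Node l r)
  then show ?case using nz_Node[OF Node.prems] by (auto simp: nz_def)
qed

lemma ga_ha: "nz a \<Longrightarrow> ga a (ha a v) = v"
proof (induction a arbitrary: v)
  case (Leaf x) then show ?case by simp
next
  case (Node l r)
  then show ?case using nz_Node[OF Node.prems] by (auto simp: nz_def)
qed

lemma ha_ga: "nz a \<Longrightarrow> den a w \<Longrightarrow> ha a (ga a w) = w"
proof (induction a arbitrary: w)
  case (Leaf x) then show ?case by simp
next
  case (Node l r)
  then show ?case using nz_Node[OF Node.prems(1)] by (auto simp: nz_def)
qed

lemma cont_ga: "cont (ga a)"
proof (induction a)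
  case (Leaf x)
  then show ?case using cont_id by simp
next
  case (Node l r)
  have c: "cont (\<lambda>w. ga r (stl w))" "cont (\<lambda>w. ga l (stl w))"
    using cont_comp[OF Node.IH(2) cont_stl] cont_comp[OF Node.IH(1) cont_stl] by auto
  have "cont (\<lambda>w. if w 0 then scons True (ga r (stl w)) else scons False (ga l (stl w)))"
    by (intro cont_if fdep_0 cont_scons c)
  then show ?case using c by (cases "l = Leaf False"; cases "r = Leaf False") (simp_all add: ga.simps ha.simps)
qed

lemma cont_ha: "cont (ha a)"
proof (induction a)
  case (Leaf x)
  then show ?case using cont_id by simp
next
  case (Node l r)
  have c: "cont (\<lambda>w. ha r (stl w))" "cont (\<lambda>w. ha l (stl w))"
    using cont_comp[OF Node.IH(2) cont_stl] cont_comp[OF Node.IH(1) cont_stl] by auto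
  have "cont (\<lambda>w. if w 0 then scons True (ha r (stl w)) else scons False (ha l (stl w)))"
    by (intro cont_if fdep_0 cont_scons c)
  moreover have "cont (\<lambda>w. scons True (ha r w))" "cont (\<lambda>w. scons False (ha l w))"
    by (intro cont_scons Node.IH)+
  ultimately show ?case by (cases "l = Leaf False"; cases "r = Leaf False") (simp_all add: ga.simps ha.simps)
qed


fun Gk :: "(bool list \<Rightarrow> tree) \<Rightarrow> tree \<Rightarrow> bool list \<Rightarrow> seq \<Rightarrow> seq" where
  "Gk A (Leaf b) p w = ga (A p) w"
| "Gk A (Node K0 K1) p w = (if den (A (p @ [False])) w then scons False (Gk A K0 (p @ [False]) w)
      else scons True (Gk A K1 (p @ [True]) w))"

fun Hk :: "(bool list \<Rightarrow> tree) \<Rightarrow> tree \<Rightarrow> bool list \<Rightarrow> seq \<Rightarrow> seq" where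
  "Hk A (Leaf b) p v = ha (A p) v"
| "Hk A (Node K0 K1) p v = (if v 0 then Hk A K1 (p @ [True]) (stl v) else Hk A K0 (p @ [False]) (stl v))"

fun Valid :: "(bool list \<Rightarrow> tree) \<Rightarrow> tree \<Rightarrow> bool list \<Rightarrow> bool" where
  "Valid A (Leaf b) p = nz (A p)"
| "Valid A (Node K0 K1) p = (nz (A p) \<and> (\<forall>w. den (A (p @ [False])) w \<or> den (A (p @ [True])) w \<longleftrightarrow> den (A p) w)
     \<and> (\<forall>w. \<not> (den (A (p @ [False])) w \<and> den (A (p @ [True])) w)) \<and> Valid A K0 (p @ [False]) \<and> Valid A K1 (p @ [True]))"

lemma Valid_nz: "Valid A K p \<Longrightarrow> nz (A p)" by (cases K) auto

lemma Hk_in: "Valid A K p \<Longrightarrow> den (A p) (Hk A K p v)"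
proof (induction K arbitrary: p v)
  case (Leaf x) then show ?case by (simp add: ha_in)
next
  case (Node K0 K1)
  then show ?case by auto
qed

lemma Gk_Hk: "Valid A K p \<Longrightarrow> Gk A K p (Hk A K p v) = v"
proof (induction K arbitrary: p v)
  case (Leaf x) then show ?case by (simp add: ga_ha)
next
  case (Node K0 K1)
  show ?case
  proof (cases "v 0")
    case True
    have "den (A (p @ [True])) (Hk A K1 (p @ [True]) (stl v))" using Node by (auto intro: Hk_in)
    then have "\<not> den (A (p @ [False])) (Hk A K1 (p @ [True]) (stl v))" using Node.prems by auto
    then show ?thesis using Node True by auto
  next
    case False
    have "den (A (p @ [False])) (Hk A K0 (p @ [False]) (stl v))" using Node by (auto intro: Hk_in)
    then show ?thesis using Node False by auto
  qed
qed

lemma Hk_Gk: "Valid A K p \<Longrightarrow> den (A p) w \<Longrightarrow> Hk A K p (Gk A K p w) = w"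
proof (induction K arbitrary: p w)
  case (Leaf x) then show ?case by (simp add: ha_ga)
next
  case (Node K0 K1)
  show ?case
  proof (cases "den (A (p @ [False])) w")
    case True
    then show ?thesis using Node by auto
  next
    case False
    then have "den (A (p @ [True])) w" using Node.prems by auto
    then show ?thesis using Node False by auto
  qed
qed

lemma cont_Gk: "cont (Gk A K p)"
proof (induction K arbitrary: p)
  case (Leaf x) then show ?case using cont_ga by simp
next
  case (Node K0 K1)
  have "cont (\<lambda>w. if den (A (p @ [False])) w then scons False (Gk A K0 (p @ [False]) w)
      else scons True (Gk A K1 (p @ [True]) w))"
    by (intro cont_if den_fdep cont_scons Node.IH)
  then show ?case by simp
qed

lemma cont_Hk: "cont (Hk A K p)"
proof (induction K arbitrary: p)
  case (Leaf x) then show ?case using cont_ha by simp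
next
  case (Node K0 K1)
  have "cont (\<lambda>w. if w 0 then Hk A K1 (p @ [True]) (stl w) else Hk A K0 (p @ [False]) (stl w))"
    by (intro cont_if fdep_0 cont_comp[OF _ cont_stl] Node.IH)
  then show ?case by simp
qed

fun knodes :: "tree \<Rightarrow> bool list set" where
  "knodes (Leaf b) = {[]}"
| "knodes (Node K0 K1) = insert [] (Cons False ` knodes K0 \<union> Cons True ` knodes K1)"

definition sprefix :: "bool list \<Rightarrow> seq \<Rightarrow> bool" where
  "sprefix q v = (\<forall>i<length q. v i = q ! i)"

lemma sprefix_Nil[simp]: "sprefix [] v" by (simp add: sprefix_def)
lemma sprefix_Cons[simp]: "sprefix (b # q) v = (v 0 = b \<and> sprefix q (stl v))"
  unfolding sprefix_def stl_def by (auto simp: less_Suc_eq_0_disj)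

lemma sub_region: "Valid A K p \<Longrightarrow> q \<in> knodes K \<Longrightarrow> den (A (p @ q)) w \<Longrightarrow> den (A p) w"
proof (induction K arbitrary: p q)
  case (Leaf x) then show ?case by simp
next
  case (Node K0 K1)
  from Node.prems(2) consider "q = []" | q' where "q = False # q'" "q' \<in> knodes K0"
     | q' where "q = True # q'" "q' \<in> knodes K1" by auto
  then show ?case
  proof cases
    case 1 then show ?thesis using Node by simp
  next
    case 2
    then have "den (A (p @ [False])) w" using Node.IH(1)[of "p @ [False]" q'] Node.prems by auto
    then show ?thesis using Node.prems by auto
  next
    case 3
    then have "den (A (p @ [True])) w" using Node.IH(2)[of "p @ [True]" q'] Node.prems by auto
    then show ?thesis using Node.prems by auto
  qed
qed

lemma Gk_prefix: "Valid A K p \<Longrightarrow> q \<in> knodes K \<Longrightarrow> den (A p) w \<Longrightarrow>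
   sprefix q (Gk A K p w) = den (A (p @ q)) w"
proof (induction K arbitrary: p q)
  case (Leaf x) then show ?case by simp
next
  case (Node K0 K1)
  from Node.prems(2) consider "q = []" | q' where "q = False # q'" "q' \<in> knodes K0"
     | q' where "q = True # q'" "q' \<in> knodes K1" by auto
  then show ?case
  proof cases
    case 1 then show ?thesis using Node by simp
  next
    case 2
    show ?thesis
    proof (cases "den (A (p @ [False])) w")
      case True
      then show ?thesis using 2 Node.IH(1)[of "p @ [False]" q'] Node.prems by auto
    next
      case False
      have "\<not> den (A ((p @ [False]) @ q')) w"
        using sub_region[of A K0 "p @ [False]" q' w] False Node.prems 2 by auto
      then show ?thesis using 2 False by auto
    qed
  next
    case 3
    show ?thesis
    proof (cases "den (A (p @ [False])) w")
      case True
      have "\<not> den (A (p @ [True])) w" using True Node.prems by auto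
      then have "\<not> den (A ((p @ [True]) @ q')) w"
        using sub_region[of A K1 "p @ [True]" q' w] Node.prems 3 by auto
      then show ?thesis using 3 True by auto
    next
      case False
      have "den (A (p @ [True])) w" using False Node.prems by auto
      then show ?thesis using 3 False Node.IH(2)[of "p @ [True]" q'] Node.prems by auto
    qed
  qed
qed


fun xn :: "bool list \<Rightarrow> nat" where
  "xn [] = 1"
| "xn (b # rp) = 2 * xn rp + (if b then 1 else 0)"

definition nm :: "bool list \<Rightarrow> nat" where "nm rp = 2 * xn rp"

lemma xn_pos: "xn rp \<ge> 1" by (induction rp) auto

lemma xn_Cons_ge: "xn (b # l) \<ge> 2" using xn_pos[of l] by auto

lemma xn_inj: "xn rp = xn rp' \<Longrightarrow> rp = rp'"
proof (induction rp arbitrary: rp')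
  case Nil
  then show ?case using xn_Cons_ge by (cases rp') (auto, metis One_nat_def Suc_1 Suc_n_not_le_n)
next
  case (Cons b rp)
  show ?case
  proof (cases rp')
    case Nil then show ?thesis using Cons.prems xn_Cons_ge[of b rp] by simp
  next
    case (Cons b' l)
    then have "2 * xn rp + (if b then 1 else 0) = 2 * xn l + (if b' then 1 else 0)" using Cons.prems by simp
    then have "b = b'" "xn rp = xn l" by (auto split: if_splits) presburger+
    then show ?thesis using Cons Cons.IH by simp
  qed
qed

lemma nm_inj[simp]: "nm rp = nm rp' \<longleftrightarrow> rp = rp'" using xn_inj by (auto simp: nm_def)
lemma nm_even: "even (nm rp)" by (simp add: nm_def)
lemma odd_ne_nm[simp]: "Suc (2 * x) \<noteq> nm rp" "nm rp \<noteq> Suc (2 * x)" unfolding nm_def by presburger+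

fun place :: "bool list \<Rightarrow> tree \<Rightarrow> tree" where
  "place [] t = t"
| "place (b # p) t = (if b then Node (Leaf False) (place p t) else Node (place p t) (Leaf False))"

definition sdrop :: "nat \<Rightarrow> seq \<Rightarrow> seq" where "sdrop n v = (\<lambda>i. v (i + n))"

lemma sprefix_snoc: "sprefix (p @ [b]) v = (sprefix p v \<and> v (length p) = b)"
  unfolding sprefix_def by (auto simp: nth_append less_Suc_eq)

lemma stl_sdrop: "stl (sdrop n v) = sdrop (Suc n) v" by (simp add: stl_def sdrop_def)
lemma sdrop_0_app: "sdrop n v 0 = v n" by (simp add: sdrop_def)

lemma den_place_T: "den (place p (Leaf True)) v = sprefix p v"
  by (induction p arbitrary: v) auto

lemma place_T_can: "canonical (place p (Leaf True))"
proof (induction p)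
  case Nil then show ?case by simp
next
  case (Cons b p)
  have "place p (Leaf True) \<noteq> Leaf False"
  proof
    assume "place p (Leaf True) = Leaf False"
    then have "den (place p (Leaf True)) (\<lambda>i. p ! i) = False" by simp
    then show False by (simp add: den_place_T sprefix_def)
  qed
  then show ?case using Cons by auto
qed

lemma place_T_nz: "place p (Leaf True) \<noteq> Leaf False"
proof
  assume "place p (Leaf True) = Leaf False"
  then have "den (place p (Leaf True)) (\<lambda>i. p ! i) = False" by simp
  then show False by (simp add: den_place_T sprefix_def)
qed

fun trk :: "tree \<Rightarrow> bool list \<Rightarrow> trm" where
  "trk (Leaf b) rp = (if b then TVar (nm rp) else TConst (Leaf False))"
| "trk (Node l r) rp = TJoin (trk l (False # rp)) (trk r (True # rp))"

fun fits :: "tree \<Rightarrow> tree \<Rightarrow> bool" where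
  "fits (Leaf b) K = True"
| "fits (Node l r) (Leaf b) = False"
| "fits (Node l r) (Node K0 K1) = (fits l K0 \<and> fits r K1)"

lemma den_trk:
  assumes "fits c K'"
    and "\<forall>q\<in>knodes K'. \<forall>w. den (e (nm (rev (p @ q)))) w = sprefix (p @ q) (\<Gamma> w)"
  shows "den (tval e (trk c (rev p))) w = (sprefix p (\<Gamma> w) \<and> den c (sdrop (length p) (\<Gamma> w)))"
  using assms
proof (induction c arbitrary: K' p)
  case (Leaf x)
  have "[] \<in> knodes K'" by (cases K') auto
  then show ?case using Leaf by auto
next
  case (Node l r)
  then obtain K0 K1 where K: "K' = Node K0 K1" "fits l K0" "fits r K1" by (cases K') auto
  have hl: "\<forall>q\<in>knodes K0. \<forall>w. den (e (nm (rev ((p @ [False]) @ q)))) w = sprefix ((p @ [False]) @ q) (\<Gamma> w)"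
  proof (intro ballI allI)
    fix q w assume "q \<in> knodes K0"
    then have "False # q \<in> knodes K'" using K by simp
    from Node.prems(2)[rule_format, OF this, of w]
    show "den (e (nm (rev ((p @ [False]) @ q)))) w = sprefix ((p @ [False]) @ q) (\<Gamma> w)" by simp
  qed
  have hr: "\<forall>q\<in>knodes K1. \<forall>w. den (e (nm (rev ((p @ [True]) @ q)))) w = sprefix ((p @ [True]) @ q) (\<Gamma> w)"
  proof (intro ballI allI)
    fix q w assume "q \<in> knodes K1"
    then have "True # q \<in> knodes K'" using K by simp
    from Node.prems(2)[rule_format, OF this, of w]
    show "den (e (nm (rev ((p @ [True]) @ q)))) w = sprefix ((p @ [True]) @ q) (\<Gamma> w)" by simp
  qed
  show ?case
    using Node.IH(1)[OF K(2) hl] Node.IH(2)[OF K(3) hr]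
    by (auto simp: sprefix_snoc stl_sdrop sdrop_0_app)
qed


fun trt :: "trm \<Rightarrow> trm" where
  "trt (TVar x) = TVar (2 * x + 1)"
| "trt (TConst c) = trk c []"
| "trt (TJoin a b) = TJoin (trt a) (trt b)"
| "trt (TMeet a b) = TMeet (trt a) (trt b)"
| "trt (TCompl a) = TCompl (trt a)"

fun trf :: "fm \<Rightarrow> fm" where
  "trf (FEq a b) = FEq (trt a) (trt b)"
| "trf (FNot p) = FNot (trf p)"
| "trf (FAnd p q) = FAnd (trf p) (trf q)"
| "trf (FOr p q) = FOr (trf p) (trf q)"
| "trf (FAll x p) = FAll (2 * x + 1) (trf p)"
| "trf (FEx x p) = FEx (2 * x + 1) (trf p)"

fun inodes :: "tree \<Rightarrow> bool list set" where
  "inodes (Leaf b) = {}"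
| "inodes (Node l r) = insert [] (Cons False ` inodes l \<union> Cons True ` inodes r)"

definition CN :: "fm \<Rightarrow> bool list set" where
  "CN \<phi> = (\<Union>c\<in>fconsts \<phi>. rev ` inodes c)"

definition NK :: "tree \<Rightarrow> nat set" where
  "NK c = {nm (b # rev q) | b q. q \<in> inodes c}"

definition NMs :: "fm \<Rightarrow> nat set" where
  "NMs \<phi> = insert (nm []) (\<Union>c\<in>fconsts \<phi>. NK c)"

lemma tfv_trk: "tfv (trk c rp) \<subseteq> insert (nm rp) {nm (b # rev q @ rp) | b q. q \<in> inodes c}"
proof (induction c arbitrary: rp)
  case (Leaf x) then show ?case by auto
next
  case (Node l r)
  show ?case
  proof
    fix v assume "v \<in> tfv (trk (Node l r) rp)"
    then consider "v \<in> tfv (trk l (False # rp))" | "v \<in> tfv (trk r (True # rp))" by auto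
    then show "v \<in> insert (nm rp) {nm (b # rev q @ rp) | b q. q \<in> inodes (Node l r)}"
    proof cases
      case 1
      then have "v \<in> insert (nm (False # rp)) {nm (b # rev q @ False # rp) | b q. q \<in> inodes l}"
        using Node.IH(1) by blast
      then show ?thesis
      proof
        assume "v = nm (False # rp)"
        then show ?thesis by (intro insertI2 CollectI exI[of _ False] exI[of _ "[]"]) auto
      next
        assume "v \<in> {nm (b # rev q @ False # rp) | b q. q \<in> inodes l}"
        then obtain b q where "v = nm (b # rev q @ False # rp)" "q \<in> inodes l" by blast
        then show ?thesis by (intro insertI2 CollectI exI[of _ b] exI[of _ "False # q"]) auto
      qed
    next
      case 2
      then have "v \<in> insert (nm (True # rp)) {nm (b # rev q @ True # rp) | b q. q \<in> inodes r}"
        using Node.IH(2) by blast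
      then show ?thesis
      proof
        assume "v = nm (True # rp)"
        then show ?thesis by (intro insertI2 CollectI exI[of _ True] exI[of _ "[]"]) auto
      next
        assume "v \<in> {nm (b # rev q @ True # rp) | b q. q \<in> inodes r}"
        then obtain b q where "v = nm (b # rev q @ True # rp)" "q \<in> inodes r" by blast
        then show ?thesis by (intro insertI2 CollectI exI[of _ b] exI[of _ "True # q"]) auto
      qed
    qed
  qed
qed

lemma tfv_trt: "tfv (trt a) \<subseteq> (\<lambda>x. 2 * x + 1) ` tfv a \<union> insert (nm []) (\<Union>c\<in>tconsts a. NK c)"
proof (induction a)
  case (TConst c)
  then show ?case using tfv_trk[of c "[]"] by (auto simp: NK_def)
qed auto

lemma ffv_trf: "ffv (trf \<phi>) \<subseteq> (\<lambda>x. 2 * x + 1) ` ffv \<phi> \<union> NMs \<phi>"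
proof (induction \<phi>)
  case (FEq a b)
  then show ?case using tfv_trt[of a] tfv_trt[of b] by (auto simp: NMs_def)
next
  case (FAll x p)
  have "\<And>v. v \<in> NMs p \<Longrightarrow> v \<noteq> 2 * x + 1" by (auto simp: NMs_def NK_def)
  then show ?case using FAll by (auto simp: NMs_def)
next
  case (FEx x p)
  have "\<And>v. v \<in> NMs p \<Longrightarrow> v \<noteq> 2 * x + 1" by (auto simp: NMs_def NK_def)
  then show ?case using FEx by (auto simp: NMs_def)
qed (auto simp: NMs_def)

lemma tval_agree: "\<forall>v\<in>tfv a. e v = e' v \<Longrightarrow> tval e a = tval e' a"
  by (induction a) auto

lemma holds_agree: "\<forall>v\<in>ffv \<phi>. e v = e' v \<Longrightarrow> holds e \<phi> = holds e' \<phi>"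
proof (induction \<phi> arbitrary: e e')
  case (FEq a b) then show ?case using tval_agree[of a e e'] tval_agree[of b e e'] by auto
next
  case (FAll x p)
  have "\<And>t. holds (e(x:=t)) p = holds (e'(x:=t)) p" using FAll by (intro FAll.IH) auto
  then show ?case by simp
next
  case (FEx x p)
  have "\<And>t. holds (e(x:=t)) p = holds (e'(x:=t)) p" using FEx by (intro FEx.IH) auto
  then show ?case by simp
next
  case (FNot p) then show ?case by simp
next
  case (FAnd p q)
  have "holds e p = holds e' p" "holds e q = holds e' q" using FAnd.prems by (intro FAnd.IH; auto)+
  then show ?case by simp
next
  case (FOr p q)
  have "holds e p = holds e' p" "holds e q = holds e' q" using FOr.prems by (intro FOr.IH; auto)+
  then show ?case by simp
qed

lemma tval_can: "\<forall>x. canonical (e x) \<Longrightarrow> \<forall>k\<in>tconsts a. canonical k \<Longrightarrow> canonical (tval e a)"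
  by (induction a) auto

definition estd :: "nat \<Rightarrow> tree" where
  "estd v = (if v \<in> range nm then place (rev (inv nm v)) (Leaf True) else Leaf False)"

lemma inj_nm: "inj nm" by (auto intro: injI)
lemma estd_nm[simp]: "estd (nm rp) = place (rev rp) (Leaf True)"
  using inv_f_f[OF inj_nm] by (auto simp: estd_def)
lemma estd_can: "canonical (estd v)" by (auto simp: estd_def place_T_can)

lemma tval_trk_std:
  assumes "\<forall>rp. f (nm rp) = place (rev rp) (Leaf True)" "\<forall>x. canonical (f x)" "canonical c"
  shows "tval f (trk c []) = c"
proof (rule den_inj)
  show "canonical (tval f (trk c []))" 
  proof -
    have "\<forall>k\<in>tconsts (trk c rp). canonical k" for rp by (induction c arbitrary: rp) auto
    then show ?thesis using assms tval_can by blast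
  qed
  show "canonical c" by fact
  have "\<forall>q\<in>knodes c. \<forall>w. den (f (nm (rev ([] @ q)))) w = sprefix ([] @ q) (id w)"
    using assms(1) by (simp add: den_place_T)
  from den_trk[of c c f "[]" id, OF _ this]
  have "\<And>w. den (tval f (trk c (rev []))) w = den c (sdrop 0 w)"
  proof -
    have fc: "fits c c" by (induction c) auto
    fix w show "den (tval f (trk c (rev []))) w = den c (sdrop 0 w)"
      using den_trk[of c c f "[]" id, OF fc] assms(1) by (simp add: den_place_T)
  qed
  moreover have "sdrop 0 w = w" for w by (simp add: sdrop_def)
  ultimately show "den (tval f (trk c [])) = den c" by auto
qed

lemma holds_trf_std:
  assumes "\<forall>rp. f (nm rp) = place (rev rp) (Leaf True)" "\<forall>x. canonical (f x)" "\<forall>k\<in>fconsts \<phi>. canonical k"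
  shows "holds f (trf \<phi>) = holds (\<lambda>x. f (2 * x + 1)) \<phi>"
  using assms
proof (induction \<phi> arbitrary: f)
  case (FEq a b)
  have "\<And>a. \<forall>k\<in>tconsts a. canonical k \<Longrightarrow> tval f (trt a) = tval (\<lambda>x. f (2 * x + 1)) a"
  proof -
    fix a show "\<forall>k\<in>tconsts a. canonical k \<Longrightarrow> tval f (trt a) = tval (\<lambda>x. f (2 * x + 1)) a"
      by (induction a) (use FEq.prems tval_trk_std in auto)
  qed
  then show ?case using FEq.prems by simp
next
  case (FAll x p)
  have "\<And>t. canonical t \<Longrightarrow> holds (f(2 * x + 1 := t)) (trf p) = holds ((\<lambda>x. f (2 * x + 1))(x := t)) p"
  proof -
    fix t assume t: "canonical t"
    have "holds (f(2 * x + 1 := t)) (trf p) = holds (\<lambda>y. (f(2 * x + 1 := t)) (2 * y + 1)) p"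
      by (rule FAll.IH) (use FAll.prems t in auto)
    also have "(\<lambda>y. (f(2 * x + 1 := t)) (2 * y + 1)) = (\<lambda>x. f (2 * x + 1))(x := t)" by auto
    finally show "holds (f(2 * x + 1 := t)) (trf p) = holds ((\<lambda>x. f (2 * x + 1))(x := t)) p" .
  qed
  then show ?case by simp
next
  case (FEx x p)
  have "\<And>t. canonical t \<Longrightarrow> holds (f(2 * x + 1 := t)) (trf p) = holds ((\<lambda>x. f (2 * x + 1))(x := t)) p"
  proof -
    fix t assume t: "canonical t"
    have "holds (f(2 * x + 1 := t)) (trf p) = holds (\<lambda>y. (f(2 * x + 1 := t)) (2 * y + 1)) p"
      by (rule FEx.IH) (use FEx.prems t in auto)
    also have "(\<lambda>y. (f(2 * x + 1 := t)) (2 * y + 1)) = (\<lambda>x. f (2 * x + 1))(x := t)" by auto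
    finally show "holds (f(2 * x + 1 := t)) (trf p) = holds ((\<lambda>x. f (2 * x + 1))(x := t)) p" .
  qed
  then show ?case by auto
qed auto


definition consf :: "bool list \<Rightarrow> fm" where
  "consf rp = FAnd (FEq (TJoin (TVar (nm (False # rp))) (TVar (nm (True # rp)))) (TVar (nm rp)))
     (FAnd (FEq (TMeet (TVar (nm (False # rp))) (TVar (nm (True # rp)))) (TConst (Leaf False)))
     (FAnd (FNot (FEq (TVar (nm (False # rp))) (TConst (Leaf False))))
           (FNot (FEq (TVar (nm (True # rp))) (TConst (Leaf False))))))"

fun ck :: "tree \<Rightarrow> bool list \<Rightarrow> fm \<Rightarrow> fm" where
  "ck (Leaf b) rp C = C"
| "ck (Node l r) rp C = ck r (True # rp) (ck l (False # rp) (FAnd (consf rp) C))"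

fun ct :: "trm \<Rightarrow> fm \<Rightarrow> fm" where
  "ct (TVar x) C = C"
| "ct (TConst c) C = ck c [] C"
| "ct (TJoin a b) C = ct b (ct a C)"
| "ct (TMeet a b) C = ct b (ct a C)"
| "ct (TCompl a) C = ct a C"

fun cf :: "fm \<Rightarrow> fm \<Rightarrow> fm" where
  "cf (FEq a b) C = ct b (ct a C)"
| "cf (FNot p) C = cf p C"
| "cf (FAnd p q) C = cf q (cf p C)"
| "cf (FOr p q) C = cf q (cf p C)"
| "cf (FAll x p) C = cf p C"
| "cf (FEx x p) C = cf p C"

fun uk :: "tree \<Rightarrow> bool list \<Rightarrow> nat list \<Rightarrow> nat list" where
  "uk (Leaf b) rp U = U"
| "uk (Node l r) rp U = uk r (True # rp) (uk l (False # rp) (nm (False # rp) # nm (True # rp) # U))"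

fun ut :: "trm \<Rightarrow> nat list \<Rightarrow> nat list" where
  "ut (TVar x) U = U"
| "ut (TConst c) U = uk c [] U"
| "ut (TJoin a b) U = ut b (ut a U)"
| "ut (TMeet a b) U = ut b (ut a U)"
| "ut (TCompl a) U = ut a U"

fun uf :: "fm \<Rightarrow> nat list \<Rightarrow> nat list" where
  "uf (FEq a b) U = ut b (ut a U)"
| "uf (FNot p) U = uf p U"
| "uf (FAnd p q) U = uf q (uf p U)"
| "uf (FOr p q) U = uf q (uf p U)"
| "uf (FAll x p) U = uf p U"
| "uf (FEx x p) U = uf p U"

definition C0 :: fm where "C0 = FEq (TVar (nm [])) (TConst (Leaf True))"

lemma ball_img: "(\<forall>x\<in>f ` A. P x) = (\<forall>y\<in>A. P (f y))" by blast

lemma ball_inodes_Node: "(\<forall>q\<in>inodes (Node l r). P (rev q @ rp)) =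
  (P rp \<and> (\<forall>q\<in>inodes l. P (rev q @ False # rp)) \<and> (\<forall>q\<in>inodes r. P (rev q @ True # rp)))"
  by (simp add: ball_Un ball_img)

lemma UN_inodes_Node: "(\<Union>q\<in>inodes (Node l r). F (rev q @ rp)) =
  F rp \<union> (\<Union>q\<in>inodes l. F (rev q @ False # rp)) \<union> (\<Union>q\<in>inodes r. F (rev q @ True # rp))"
  by auto

lemma holds_ck: "holds e (ck c rp C) = (holds e C \<and> (\<forall>q\<in>inodes c. holds e (consf (rev q @ rp))))"
proof (induction c arbitrary: rp C)
  case (Leaf x) then show ?case by simp
next
  case (Node l r)
  show ?case
    by (subst ball_inodes_Node[where P="\<lambda>x. holds e (consf x)"]) (simp add: Node.IH, blast)
qed

lemma holds_ct: "holds e (ct a C) = (holds e C \<and> (\<forall>c\<in>tconsts a. \<forall>q\<in>inodes c. holds e (consf (rev q))))"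
  by (induction a arbitrary: C) (auto simp: holds_ck)

lemma holds_cf': "holds e (cf \<phi> C) = (holds e C \<and> (\<forall>c\<in>fconsts \<phi>. \<forall>q\<in>inodes c. holds e (consf (rev q))))"
  by (induction \<phi> arbitrary: C) (auto simp: holds_ct)

lemma holds_cf: "holds e (cf \<phi> C) = (holds e C \<and> (\<forall>rp\<in>CN \<phi>. holds e (consf rp)))"
  unfolding holds_cf' CN_def by blast

definition nset :: "tree \<Rightarrow> bool list \<Rightarrow> nat set" where
  "nset c rp = (\<lambda>(b, q). nm (b # rev q @ rp)) ` (UNIV \<times> inodes c)"

lemma nset_Leaf[simp]: "nset (Leaf x) rp = {}" by (simp add: nset_def)
lemma nset_Node: "nset (Node l r) rp = {nm (False # rp), nm (True # rp)} \<union> nset l (False # rp) \<union> nset r (True # rp)"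
proof -
  have u: "(UNIV :: bool set) = {False, True}" by auto
  show ?thesis unfolding nset_def
    by (simp add: u image_Un image_image insert_commute Sigma_Un_distrib2 Un_ac) (auto simp: image_iff)
qed

lemma NK_nset: "NK c = nset c []" by (auto simp: NK_def nset_def)

lemma set_uk: "set (uk c rp U) = set U \<union> nset c rp"
  by (induction c arbitrary: rp U) (auto simp: nset_Node)

lemma set_ut: "set (ut a U) = set U \<union> (\<Union>c\<in>tconsts a. NK c)"
  by (induction a arbitrary: U) (auto simp: set_uk NK_nset)

lemma set_uf: "set (uf \<phi> U) = set U \<union> (\<Union>c\<in>fconsts \<phi>. NK c)"
  by (induction \<phi> arbitrary: U) (auto simp: set_ut)

lemma set_uf0: "set (uf \<phi> [nm []]) = NMs \<phi>"
  by (simp add: set_uf NMs_def)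

lemma inodes_snoc: "q @ [b] \<in> inodes c \<Longrightarrow> q \<in> inodes c"
proof (induction c arbitrary: q)
  case (Leaf x) then show ?case by simp
next
  case (Node l r)
  then show ?case by (cases q) auto
qed

lemma ffv_consf: "ffv (consf rp) = {nm rp, nm (False # rp), nm (True # rp)}"
  by (auto simp: consf_def)

lemma ffv_cf: "ffv (cf \<phi> C) \<subseteq> ffv C \<union> NMs \<phi>"
proof -
  have k: "ffv (ck c rp C) \<subseteq> ffv C \<union> (\<Union>q\<in>inodes c. ffv (consf (rev q @ rp)))" for c rp C
  proof (induction c arbitrary: rp C)
    case (Leaf x) then show ?case by simp
  next
    case (Node l r)
    have "ffv (ck (Node l r) rp C) \<subseteq> ffv C \<union> ffv (consf rp) \<union> (\<Union>q\<in>inodes l. ffv (consf (rev q @ False # rp)))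
       \<union> (\<Union>q\<in>inodes r. ffv (consf (rev q @ True # rp)))"
      using Node.IH(1)[of "False # rp" "FAnd (consf rp) C"] Node.IH(2)[of "True # rp" "ck l (False # rp) (FAnd (consf rp) C)"]
      by auto
    then show ?case by (subst UN_inodes_Node[where F="\<lambda>x. ffv (consf x)"]) auto
  qed
  have t: "ffv (ct a C) \<subseteq> ffv C \<union> (\<Union>c\<in>tconsts a. \<Union>q\<in>inodes c. ffv (consf (rev q)))" for a C
  proof (induction a arbitrary: C)
    case (TConst c) then show ?case using k[of c "[]" C] by simp
  next
    case (TJoin a1 a2)
    have A: "ffv (ct a1 C) \<subseteq> ffv C \<union> (\<Union>c\<in>tconsts a1. \<Union>q\<in>inodes c. ffv (consf (rev q)))" by (rule TJoin.IH(1))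
    have B: "ffv (ct a2 (ct a1 C)) \<subseteq> ffv (ct a1 C) \<union> (\<Union>c\<in>tconsts a2. \<Union>q\<in>inodes c. ffv (consf (rev q)))" by (rule TJoin.IH(2))
    show ?case using A B unfolding ct.simps tconsts.simps UN_Un by blast
  next
    case (TMeet a1 a2)
    have A: "ffv (ct a1 C) \<subseteq> ffv C \<union> (\<Union>c\<in>tconsts a1. \<Union>q\<in>inodes c. ffv (consf (rev q)))" by (rule TMeet.IH(1))
    have B: "ffv (ct a2 (ct a1 C)) \<subseteq> ffv (ct a1 C) \<union> (\<Union>c\<in>tconsts a2. \<Union>q\<in>inodes c. ffv (consf (rev q)))" by (rule TMeet.IH(2))
    show ?case using A B unfolding ct.simps tconsts.simps UN_Un by blast
  qed auto
  have f: "ffv (cf \<phi> C) \<subseteq> ffv C \<union> (\<Union>c\<in>fconsts \<phi>. \<Union>q\<in>inodes c. ffv (consf (rev q)))" for \<phi> C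
  proof (induction \<phi> arbitrary: C)
    case (FEq a1 a2)
    have A: "ffv (ct a1 C) \<subseteq> ffv C \<union> (\<Union>c\<in>tconsts a1. \<Union>q\<in>inodes c. ffv (consf (rev q)))" by (rule t)
    have B: "ffv (ct a2 (ct a1 C)) \<subseteq> ffv (ct a1 C) \<union> (\<Union>c\<in>tconsts a2. \<Union>q\<in>inodes c. ffv (consf (rev q)))" by (rule t)
    show ?case using A B unfolding cf.simps fconsts.simps UN_Un by blast
  next
    case (FAnd a1 a2)
    have A: "ffv (cf a1 C) \<subseteq> ffv C \<union> (\<Union>c\<in>fconsts a1. \<Union>q\<in>inodes c. ffv (consf (rev q)))" by (rule FAnd.IH(1))
    have B: "ffv (cf a2 (cf a1 C)) \<subseteq> ffv (cf a1 C) \<union> (\<Union>c\<in>fconsts a2. \<Union>q\<in>inodes c. ffv (consf (rev q)))" by (rule FAnd.IH(2))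
    show ?case using A B unfolding cf.simps fconsts.simps UN_Un by blast
  next
    case (FOr a1 a2)
    have A: "ffv (cf a1 C) \<subseteq> ffv C \<union> (\<Union>c\<in>fconsts a1. \<Union>q\<in>inodes c. ffv (consf (rev q)))" by (rule FOr.IH(1))
    have B: "ffv (cf a2 (cf a1 C)) \<subseteq> ffv (cf a1 C) \<union> (\<Union>c\<in>fconsts a2. \<Union>q\<in>inodes c. ffv (consf (rev q)))" by (rule FOr.IH(2))
    show ?case using A B unfolding cf.simps fconsts.simps UN_Un by blast
  qed auto
  have "\<And>c q. c \<in> fconsts \<phi> \<Longrightarrow> q \<in> inodes c \<Longrightarrow> ffv (consf (rev q)) \<subseteq> NMs \<phi>"
  proof -
    fix c q assume c: "c \<in> fconsts \<phi>" and q: "q \<in> inodes c"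
    have "nm (rev q) \<in> NMs \<phi>"
    proof (cases q rule: rev_cases)
      case Nil then show ?thesis by (simp add: NMs_def)
    next
      case (snoc q' b)
      then have "q' \<in> inodes c" using q inodes_snoc by blast
      then show ?thesis using c snoc by (auto simp: NMs_def NK_def)
    qed
    moreover have "nm (b # rev q) \<in> NMs \<phi>" for b using c q by (auto simp: NMs_def NK_def)
    ultimately show "ffv (consf (rev q)) \<subseteq> NMs \<phi>" by (auto simp: ffv_consf)
  qed
  then show ?thesis using f[of \<phi> C] by blast
qed

lemma tconsts_trk: "tconsts (trk c rp) \<subseteq> {Leaf False}"
  by (induction c arbitrary: rp) auto

lemma fconsts_trf: "fconsts (trf \<phi>) \<subseteq> {Leaf True, Leaf False}"
proof -
  have "tconsts (trt a) \<subseteq> {Leaf True, Leaf False}" for a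
  proof (induction a)
    case (TConst c) then show ?case using tconsts_trk[of c "[]"] by auto
  qed auto
  then show ?thesis by (induction \<phi>) auto
qed

lemma fconsts_cf: "fconsts C \<subseteq> {Leaf True, Leaf False} \<Longrightarrow> fconsts (cf \<phi> C) \<subseteq> {Leaf True, Leaf False}"
proof -
  have k: "fconsts C \<subseteq> {Leaf True, Leaf False} \<Longrightarrow> fconsts (ck c rp C) \<subseteq> {Leaf True, Leaf False}" for c rp C
    by (induction c arbitrary: rp C) (auto simp: consf_def)
  have t: "fconsts C \<subseteq> {Leaf True, Leaf False} \<Longrightarrow> fconsts (ct a C) \<subseteq> {Leaf True, Leaf False}" for a C
    using k by (induction a arbitrary: C) auto
  show "fconsts C \<subseteq> {Leaf True, Leaf False} \<Longrightarrow> fconsts (cf \<phi> C) \<subseteq> {Leaf True, Leaf False}"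
    using t by (induction \<phi> arbitrary: C) auto
qed


fun un :: "tree \<Rightarrow> tree \<Rightarrow> tree" where
  "un (Leaf b) k = k"
| "un (Node a b) (Leaf x) = Node a b"
| "un (Node a b) (Node c d) = Node (un a c) (un b d)"

lemma fits_refl: "fits c c" by (induction c) auto
lemma fits_un1: "fits c (un c k)" by (induction c k rule: un.induct) (auto simp: fits_refl)
lemma fits_un2: "fits c k \<Longrightarrow> fits c (un c' k)"
  by (induction c' k arbitrary: c rule: un.induct) (auto elim: fits.elims)
lemma inodes_un: "inodes (un a b) = inodes a \<union> inodes b"
  by (induction a b rule: un.induct) auto

lemma skel_exists: "finite S \<Longrightarrow> \<exists>K. (\<forall>c\<in>S. fits c K) \<and> inodes K \<subseteq> (\<Union>c\<in>S. inodes c)"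
proof (induction S rule: finite_induct)
  case empty then show ?case by (intro exI[of _ "Leaf True"]) auto
next
  case (insert c S)
  then obtain K where "\<forall>c\<in>S. fits c K" "inodes K \<subseteq> (\<Union>c\<in>S. inodes c)" by blast
  then show ?case by (intro exI[of _ "un c K"]) (auto simp: fits_un1 fits_un2 inodes_un)
qed

lemma finite_tconsts: "finite (tconsts a)" by (induction a) auto
lemma finite_fconsts: "finite (fconsts \<phi>)" by (induction \<phi>) (auto simp: finite_tconsts)

lemma fits_inodes: "fits c K \<Longrightarrow> inodes c \<subseteq> inodes K"
  by (induction c K rule: fits.induct) auto

lemma knodes_Nil: "[] \<in> knodes K" by (cases K) auto
lemma inodes_knodes: "q \<in> inodes K \<Longrightarrow> q @ [b] \<in> knodes K"
proof (induction K arbitrary: q)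
  case (Leaf x) then show ?case by simp
next
  case (Node K0 K1)
  from Node.prems consider "q = []" | q' where "q = False # q'" "q' \<in> inodes K0"
    | q' where "q = True # q'" "q' \<in> inodes K1" by auto
  then show ?case
  proof cases
    case 1 then show ?thesis using knodes_Nil[of K0] knodes_Nil[of K1] by (cases b) auto
  next
    case 2 then show ?thesis using Node.IH(1) by auto
  next
    case 3 then show ?thesis using Node.IH(2) by auto
  qed
qed

lemma holds_consf: "holds e (consf rp) = (tjoin (e (nm (False # rp))) (e (nm (True # rp))) = e (nm rp) \<and>
   tmeet (e (nm (False # rp))) (e (nm (True # rp))) = Leaf False \<and>
   e (nm (False # rp)) \<noteq> Leaf False \<and> e (nm (True # rp)) \<noteq> Leaf False)"
  by (simp add: consf_def)

lemma Valid_from: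
  assumes can: "\<forall>p. canonical (A p)"
    and "nz (A p)"
    and "\<forall>q\<in>inodes K. tjoin (A (p @ q @ [False])) (A (p @ q @ [True])) = A (p @ q) \<and>
          tmeet (A (p @ q @ [False])) (A (p @ q @ [True])) = Leaf False \<and>
          A (p @ q @ [False]) \<noteq> Leaf False \<and> A (p @ q @ [True]) \<noteq> Leaf False"
  shows "Valid A K p"
  using assms(2,3)
proof (induction K arbitrary: p)
  case (Leaf x) then show ?case by simp
next
  case (Node K0 K1)
  have c: "tjoin (A (p @ [False])) (A (p @ [True])) = A p" "tmeet (A (p @ [False])) (A (p @ [True])) = Leaf False"
     "A (p @ [False]) \<noteq> Leaf False" "A (p @ [True]) \<noteq> Leaf False"
    using Node.prems(2)[rule_format, of "[]"] by auto
  have j: "\<forall>w. den (A (p @ [False])) w \<or> den (A (p @ [True])) w \<longleftrightarrow> den (A p) w"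
    using c(1) by (metis den_tjoin)
  have m: "\<forall>w. \<not> (den (A (p @ [False])) w \<and> den (A (p @ [True])) w)"
    using c(2) by (metis den_tmeet den.simps(1))
  have v0: "Valid A K0 (p @ [False])"
  proof (rule Node.IH(1))
    show "nz (A (p @ [False]))" using c can by (simp add: nz_def)
    show "\<forall>q\<in>inodes K0. tjoin (A ((p @ [False]) @ q @ [False])) (A ((p @ [False]) @ q @ [True])) = A ((p @ [False]) @ q) \<and>
          tmeet (A ((p @ [False]) @ q @ [False])) (A ((p @ [False]) @ q @ [True])) = Leaf False \<and>
          A ((p @ [False]) @ q @ [False]) \<noteq> Leaf False \<and> A ((p @ [False]) @ q @ [True]) \<noteq> Leaf False"
      using Node.prems(2) by (simp add: ball_Un ball_img)
  qed
  have v1: "Valid A K1 (p @ [True])"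
  proof (rule Node.IH(2))
    show "nz (A (p @ [True]))" using c can by (simp add: nz_def)
    show "\<forall>q\<in>inodes K1. tjoin (A ((p @ [True]) @ q @ [False])) (A ((p @ [True]) @ q @ [True])) = A ((p @ [True]) @ q) \<and>
          tmeet (A ((p @ [True]) @ q @ [False])) (A ((p @ [True]) @ q @ [True])) = Leaf False \<and>
          A ((p @ [True]) @ q @ [False]) \<noteq> Leaf False \<and> A ((p @ [True]) @ q @ [True]) \<noteq> Leaf False"
      using Node.prems(2) by (simp add: ball_Un ball_img)
  qed
  show ?case using Node.prems(1) j m v0 v1 by simp
qed

lemma trf_sentence_ffv: "ffv \<Phi> = {} \<Longrightarrow> ffv (trf \<Phi>) \<subseteq> NMs \<Phi>"
  using ffv_trf[of \<Phi>] by simp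

theorem main_sem:
  assumes can: "\<forall>x. canonical (e x)" and c0: "holds e C0" and cs: "\<forall>rp\<in>CN \<Phi>. holds e (consf rp)"
    and kc: "\<forall>k\<in>fconsts \<Phi>. canonical k" and sen: "ffv \<Phi> = {}"
  shows "holds e (trf \<Phi>) = models_B \<Phi>"
proof -
  obtain K where K: "\<forall>c\<in>fconsts \<Phi>. fits c K" "inodes K \<subseteq> (\<Union>c\<in>fconsts \<Phi>. inodes c)"
    using skel_exists[OF finite_fconsts] by blast
  define A where "A p = e (nm (rev p))" for p
  have Acan: "\<forall>p. canonical (A p)" using can by (simp add: A_def)
  have A0: "A [] = Leaf True" using c0 by (simp add: A_def C0_def)
  have val: "Valid A K []"
  proof (rule Valid_from[OF Acan])
    show "nz (A [])" using A0 by (simp add: nz_def)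
    show "\<forall>q\<in>inodes K. tjoin (A ([] @ q @ [False])) (A ([] @ q @ [True])) = A ([] @ q) \<and>
          tmeet (A ([] @ q @ [False])) (A ([] @ q @ [True])) = Leaf False \<and>
          A ([] @ q @ [False]) \<noteq> Leaf False \<and> A ([] @ q @ [True]) \<noteq> Leaf False"
    proof
      fix q assume "q \<in> inodes K"
      then have "rev q \<in> CN \<Phi>" using K(2) by (auto simp: CN_def)
      then have "holds e (consf (rev q))" using cs by blast
      then show "tjoin (A ([] @ q @ [False])) (A ([] @ q @ [True])) = A ([] @ q) \<and>
          tmeet (A ([] @ q @ [False])) (A ([] @ q @ [True])) = Leaf False \<and>
          A ([] @ q @ [False]) \<noteq> Leaf False \<and> A ([] @ q @ [True]) \<noteq> Leaf False"
        by (simp add: holds_consf A_def)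
    qed
  qed
  define G where "G = Gk A K []"
  define H where "H = Hk A K []"
  interpret autom G H
  proof
    show "cont G" unfolding G_def by (rule cont_Gk)
    show "cont H" unfolding H_def by (rule cont_Hk)
    show "\<And>v. G (H v) = v" unfolding G_def H_def using Gk_Hk[OF val] .
    show "\<And>w. H (G w) = w" unfolding G_def H_def using Hk_Gk[OF val] A0 by simp
  qed
  define f where "f v = (if even v then estd v else Leaf False)" for v
  have fnm: "\<forall>rp. f (nm rp) = place (rev rp) (Leaf True)" by (simp add: f_def nm_even)
  have fcan: "\<forall>x. canonical (f x)" by (simp add: f_def estd_can)
  have step1: "holds (\<lambda>v. sig (f v)) (trf \<Phi>) = holds f (trf \<Phi>)"
    by (rule holds_sig[OF fcan fconsts_trf])
  have step2: "holds f (trf \<Phi>) = holds (\<lambda>x. f (2 * x + 1)) \<Phi>"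
    by (rule holds_trf_std[OF fnm fcan kc])
  have step3: "holds (\<lambda>x. f (2 * x + 1)) \<Phi> = models_B \<Phi>"
    unfolding models_B_def by (rule holds_agree) (simp add: sen)
  have step4: "holds (\<lambda>v. sig (f v)) (trf \<Phi>) = holds e (trf \<Phi>)"
  proof (rule holds_agree, rule ballI)
    fix v assume "v \<in> ffv (trf \<Phi>)"
    then have v: "v \<in> NMs \<Phi>" using trf_sentence_ffv[OF sen] by blast
    have "\<exists>p. v = nm (rev p) \<and> p \<in> knodes K"
    proof -
      from v consider "v = nm []" | c b q where "c \<in> fconsts \<Phi>" "q \<in> inodes c" "v = nm (b # rev q)"
        by (auto simp: NMs_def NK_def)
      then show ?thesis
      proof cases
        case 1 then show ?thesis using knodes_Nil by (intro exI[of _ "[]"]) auto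
      next
        case 2
        then have "q \<in> inodes K" using K(1) fits_inodes by blast
        then have "q @ [b] \<in> knodes K" by (rule inodes_knodes)
        then show ?thesis using 2 by (intro exI[of _ "q @ [b]"]) auto
      qed
    qed
    then obtain p where p: "v = nm (rev p)" "p \<in> knodes K" by blast
    have "sig (f v) = e v"
    proof (rule sig_eqI)
      show "canonical (e v)" using can by blast
      fix w
      have "den (f v) (G w) = sprefix p (G w)" using p fnm by (simp add: den_place_T)
      also have "\<dots> = den (A ([] @ p)) w" unfolding G_def by (rule Gk_prefix[OF val p(2)]) (simp add: A0)
      finally show "den (e v) w = den (f v) (G w)" by (simp add: A_def p)
    qed
    then show "sig (f v) = e v" .
  qed
  show ?thesis using step1 step2 step3 step4 by simp
qed


type_synonym state = "nat \<Rightarrow> dat"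

datatype scom = SA nat exp | SS scom scom | SIF nat exp scom | SIFE nat nat exp scom scom

fun cp :: "scom \<Rightarrow> com" where
  "cp (SA x e) = Assign x e"
| "cp (SS a b) = Seq (cp a) (cp b)"
| "cp (SIF f b c) = Seq (Assign f b) (While (EVar f) (Seq (cp c) (Assign f ENil)))"
| "cp (SIFE f g b c1 c2) = Seq (Assign f b) (Seq (Assign g (EIsNil (EVar f)))
     (Seq (While (EVar f) (Seq (cp c1) (Assign f ENil))) (While (EVar g) (Seq (cp c2) (Assign g ENil)))))"

fun mods :: "scom \<Rightarrow> nat set" where
  "mods (SA x e) = {x}"
| "mods (SS a b) = mods a \<union> mods b"
| "mods (SIF f b c) = insert f (mods c)"
| "mods (SIFE f g b c1 c2) = {f, g} \<union> mods c1 \<union> mods c2"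

fun wf :: "scom \<Rightarrow> bool" where
  "wf (SA x e) = True"
| "wf (SS a b) = (wf a \<and> wf b)"
| "wf (SIF f b c) = wf c"
| "wf (SIFE f g b c1 c2) = (f \<noteq> g \<and> g \<notin> mods c1 \<and> wf c1 \<and> wf c2)"

fun sem :: "scom \<Rightarrow> state \<Rightarrow> state" where
  "sem (SA x e) s = s(x := eval s e)"
| "sem (SS a b) s = sem b (sem a s)"
| "sem (SIF f b c) s = (if eval s b \<noteq> DNil then (sem c (s(f := eval s b)))(f := DNil) else s(f := DNil))"
| "sem (SIFE f g b c1 c2) s = (if eval s b \<noteq> DNil
     then (sem c1 (s(f := eval s b, g := DNil)))(f := DNil)
     else (sem c2 (s(f := DNil, g := DCons DNil DNil)))(g := DNil))"

fun tm :: "scom \<Rightarrow> state \<Rightarrow> nat" where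
  "tm (SA x e) s = 1 + etime e"
| "tm (SS a b) s = tm a s + tm b (sem a s)"
| "tm (SIF f b c) s = (if eval s b \<noteq> DNil then 1 + etime b + 2 + tm c (s(f := eval s b)) + 2 + 2
     else 1 + etime b + 2)"
| "tm (SIFE f g b c1 c2) s = (if eval s b \<noteq> DNil
     then 1 + etime b + 3 + 2 + tm c1 (s(f := eval s b, g := DNil)) + 2 + 2 + 2
     else 1 + etime b + 3 + 2 + 2 + tm c2 (s(f := DNil, g := DCons DNil DNil)) + 2 + 2)"

fun cost :: "scom \<Rightarrow> nat" where
  "cost (SA x e) = 1 + etime e"
| "cost (SS a b) = cost a + cost b"
| "cost (SIF f b c) = 7 + etime b + cost c"
| "cost (SIFE f g b c1 c2) = 13 + etime b + cost c1 + cost c2"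

lemma tm_cost: "tm c s \<le> cost c"
  by (induction c arbitrary: s) (auto simp: add_mono intro: le_SucI trans_le_add1 trans_le_add2)

lemma sem_mods: "x \<notin> mods c \<Longrightarrow> sem c s x = s x"
  by (induction c arbitrary: s) auto

lemma exec_comp: "wf c \<Longrightarrow> exec (cp c) s (tm c s) (sem c s)"
proof (induction c arbitrary: s)
  case (SA x e)
  show ?case by (simp only: cp.simps sem.simps tm.simps) (rule exec.intros(1))
next
  case (SS a b)
  then show ?case by (auto intro: exec.intros(2))
next
  case (SIF f b c)
  show ?case
  proof (cases "eval s b \<noteq> DNil")
    case True
    let ?s1 = "s(f := eval s b)"
    have e1: "exec (Assign f b) s (1 + etime b) ?s1" by (rule exec.intros(1))
    have ec: "exec (cp c) ?s1 (tm c ?s1) (sem c ?s1)" using SIF by simp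
    have ea: "exec (Assign f ENil) (sem c ?s1) 2 ((sem c ?s1)(f := DNil))"
      using exec.intros(1)[of f ENil "sem c ?s1"] by (simp add: numeral_2_eq_2 numeral_3_eq_3)
    have eb: "exec (Seq (cp c) (Assign f ENil)) ?s1 (tm c ?s1 + 2) ((sem c ?s1)(f := DNil))"
      by (rule exec.intros(2)[OF ec ea])
    have ew0: "exec (While (EVar f) (Seq (cp c) (Assign f ENil))) ((sem c ?s1)(f := DNil)) 2 ((sem c ?s1)(f := DNil))"
      using exec.intros(3)[of "(sem c ?s1)(f := DNil)" "EVar f"] by (simp add: numeral_2_eq_2 numeral_3_eq_3)
    have ew: "exec (While (EVar f) (Seq (cp c) (Assign f ENil))) ?s1 (1 + 1 + (tm c ?s1 + 2) + 2) ((sem c ?s1)(f := DNil))"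
      using exec.intros(4)[OF _ eb ew0] True by simp
    show ?thesis using exec.intros(2)[OF e1 ew] True by (simp add: add.assoc fun_upd_def)
  next
    case False
    then have F: "eval s b = DNil" by simp
    let ?s1 = "s(f := eval s b)"
    have e1: "exec (Assign f b) s (1 + etime b) ?s1" by (rule exec.intros(1))
    have ew: "exec (While (EVar f) (Seq (cp c) (Assign f ENil))) ?s1 2 ?s1"
      using exec.intros(3)[of ?s1 "EVar f"] F by (simp add: numeral_2_eq_2 numeral_3_eq_3)
    show ?thesis using exec.intros(2)[OF e1 ew] F by (simp add: fun_upd_def)
  qed
next
  case (SIFE f g b c1 c2)
  have fg: "f \<noteq> g" "g \<notin> mods c1" "wf c1" "wf c2" using SIFE.prems by auto
  let ?v = "eval s b"
  let ?s1 = "s(f := ?v)"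
  let ?s2 = "?s1(g := eval ?s1 (EIsNil (EVar f)))"
  have e1: "exec (Assign f b) s (1 + etime b) ?s1" by (rule exec.intros(1))
  have e2: "exec (Assign g (EIsNil (EVar f))) ?s1 3 ?s2"
    using exec.intros(1)[of g "EIsNil (EVar f)" ?s1] by (simp add: numeral_2_eq_2 numeral_3_eq_3)
  show ?case
  proof (cases "?v \<noteq> DNil")
    case True
    have s2: "?s2 = s(f := ?v, g := DNil)" using True fg by (auto simp: fun_upd_def)
    let ?t = "sem c1 (s(f := ?v, g := DNil))"
    have ec: "exec (cp c1) ?s2 (tm c1 (s(f := ?v, g := DNil))) ?t" using SIFE.IH(1) fg s2 by simp
    have ea: "exec (Assign f ENil) ?t 2 (?t(f := DNil))"
      using exec.intros(1)[of f ENil ?t] by (simp add: numeral_2_eq_2 numeral_3_eq_3)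
    have eb: "exec (Seq (cp c1) (Assign f ENil)) ?s2 (tm c1 (s(f := ?v, g := DNil)) + 2) (?t(f := DNil))"
      by (rule exec.intros(2)[OF ec ea])
    have ew0: "exec (While (EVar f) (Seq (cp c1) (Assign f ENil))) (?t(f := DNil)) 2 (?t(f := DNil))"
      using exec.intros(3)[of "?t(f := DNil)" "EVar f"] by (simp add: numeral_2_eq_2 numeral_3_eq_3)
    have ew: "exec (While (EVar f) (Seq (cp c1) (Assign f ENil))) ?s2 (1 + 1 + (tm c1 (s(f := ?v, g := DNil)) + 2) + 2) (?t(f := DNil))"
      using exec.intros(4)[OF _ eb ew0] True s2 fg by simp
    have gt: "?t g = DNil" using sem_mods[OF fg(2)] by simp
    have ew2: "exec (While (EVar g) (Seq (cp c2) (Assign g ENil))) (?t(f := DNil)) 2 (?t(f := DNil))"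
      using exec.intros(3)[of "?t(f := DNil)" "EVar g"] gt fg by (simp add: numeral_2_eq_2 numeral_3_eq_3)
    have "exec (cp (SIFE f g b c1 c2)) s (1 + etime b + (3 + ((1 + 1 + (tm c1 (s(f := ?v, g := DNil)) + 2) + 2) + 2))) (?t(f := DNil))"
      unfolding cp.simps by (rule exec.intros(2)[OF e1 exec.intros(2)[OF e2 exec.intros(2)[OF ew ew2]]])
    then show ?thesis using True by (simp add: add.assoc fun_upd_def)
  next
    case False
    then have F: "?v = DNil" by simp
    have s2: "?s2 = s(f := DNil, g := DCons DNil DNil)" using F fg by (auto simp: fun_upd_def)
    let ?t = "sem c2 (s(f := DNil, g := DCons DNil DNil))"
    have ew: "exec (While (EVar f) (Seq (cp c1) (Assign f ENil))) ?s2 2 ?s2"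
      using exec.intros(3)[of ?s2 "EVar f"] F fg by (simp add: numeral_2_eq_2 numeral_3_eq_3)
    have ec: "exec (cp c2) ?s2 (tm c2 (s(f := DNil, g := DCons DNil DNil))) ?t" using SIFE.IH(2) fg s2 by simp
    have ea: "exec (Assign g ENil) ?t 2 (?t(g := DNil))"
      using exec.intros(1)[of g ENil ?t] by (simp add: numeral_2_eq_2 numeral_3_eq_3)
    have eb: "exec (Seq (cp c2) (Assign g ENil)) ?s2 (tm c2 (s(f := DNil, g := DCons DNil DNil)) + 2) (?t(g := DNil))"
      by (rule exec.intros(2)[OF ec ea])
    have ew0: "exec (While (EVar g) (Seq (cp c2) (Assign g ENil))) (?t(g := DNil)) 2 (?t(g := DNil))"
      using exec.intros(3)[of "?t(g := DNil)" "EVar g"] by (simp add: numeral_2_eq_2 numeral_3_eq_3)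
    have ew2: "exec (While (EVar g) (Seq (cp c2) (Assign g ENil))) ?s2 (1 + 1 + (tm c2 (s(f := DNil, g := DCons DNil DNil)) + 2) + 2) (?t(g := DNil))"
      using exec.intros(4)[OF _ eb ew0] s2 fg F by simp
    have "exec (cp (SIFE f g b c1 c2)) s (1 + etime b + (3 + (2 + (1 + 1 + (tm c2 (s(f := DNil, g := DCons DNil DNil)) + 2) + 2)))) (?t(g := DNil))"
      unfolding cp.simps by (rule exec.intros(2)[OF e1 exec.intros(2)[OF e2 exec.intros(2)[OF ew ew2]]])
    then show ?thesis using F by (simp add: add.assoc fun_upd_def)
  qed
qed

inductive steps :: "exp \<Rightarrow> com \<Rightarrow> state \<Rightarrow> nat \<Rightarrow> state \<Rightarrow> bool" where
  steps_refl: "steps b c s 0 s"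
| steps_step: "eval s b \<noteq> DNil \<Longrightarrow> exec c s t1 s1 \<Longrightarrow> steps b c s1 t2 s2 \<Longrightarrow> steps b c s (1 + etime b + t1 + t2) s2"

lemma steps_trans: "steps b c s t1 s1 \<Longrightarrow> steps b c s1 t2 s2 \<Longrightarrow> steps b c s (t1 + t2) s2"
proof (induction rule: steps.induct)
  case (steps_refl b c s) then show ?case by simp
next
  case (steps_step s b c t1 s1 t2 s2)
  then show ?case using steps.steps_step[of s b c t1 s1 "t2 + _"] by (simp add: add.assoc)
qed

lemma steps_one: "eval s b \<noteq> DNil \<Longrightarrow> exec c s t s1 \<Longrightarrow> steps b c s (1 + etime b + t) s1"
  using steps_step[OF _ _ steps_refl] by fastforce

lemma steps_while: "steps b c s t s' \<Longrightarrow> eval s' b = DNil \<Longrightarrow> exec (While b c) s (t + 1 + etime b) s'"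
proof (induction rule: steps.induct)
  case (steps_refl b c s) then show ?case using exec.intros(3)[of s b c] by (simp add: numeral_2_eq_2 numeral_3_eq_3)
next
  case (steps_step s b c t1 s1 t2 s2)
  then show ?case using exec.intros(4)[of s b c t1 s1 "t2 + 1 + etime b" s2] by (simp add: algebra_simps)
qed

lemma steps_mono_time: "steps b c s t s' \<Longrightarrow> \<exists>t'. steps b c s t' s' \<and> t' = t" by blast


abbreviation dT :: dat where "dT \<equiv> DCons DNil DNil"

fun kc :: "nat \<Rightarrow> dat" where
  "kc 0 = DCons dT DNil"
| "kc (Suc k) = DCons DNil (kc k)"

fun edat :: "dat \<Rightarrow> exp" where
  "edat DNil = ENil"
| "edat (DCons a b) = ECons (edat a) (edat b)"

lemma eval_edat[simp]: "eval s (edat d) = d" by (induction d) auto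

fun etl :: "nat \<Rightarrow> exp \<Rightarrow> exp" where
  "etl 0 e = e"
| "etl (Suc n) e = ETl (etl n e)"

definition task :: "nat \<Rightarrow> exp \<Rightarrow> exp" where "task k p = ECons (edat (kc k)) p"
lemma eval_task[simp]: "eval s (task k p) = DCons (kc k) (eval s p)" by (simp add: task_def)

definition sel :: "nat \<Rightarrow> exp" where "sel k = EHd (etl k (EVar 8))"

lemma tl_kc: "k \<le> j \<Longrightarrow> (tl_d ^^ k) (kc j) = kc (j - k)"
proof (induction k arbitrary: j)
  case 0 then show ?case by simp
next
  case (Suc k)
  then obtain j' where "j = Suc j'" by (cases j) auto
  then show ?case using Suc by (simp add: funpow_Suc_right del: funpow.simps)
qed

lemma eval_etl: "eval s (etl k e) = (tl_d ^^ k) (eval s e)"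
  by (induction k) auto

lemma tl_DNil: "(tl_d ^^ k) DNil = DNil" by (induction k) auto

lemma sel_kc: "s 8 = kc j \<Longrightarrow> (eval s (sel k) \<noteq> DNil) = (j = k)"
proof -
  assume s: "s 8 = kc j"
  show ?thesis
  proof (cases "k \<le> j")
    case True
    then show ?thesis using s by (simp add: sel_def eval_etl tl_kc) (cases "j - k"; auto)
  next
    case False
    then have "(tl_d ^^ k) (kc j) = (tl_d ^^ (k - Suc j)) ((tl_d ^^ Suc j) (kc j))"
    proof -
      have "k = (k - Suc j) + Suc j" using False by arith
      then show ?thesis by (metis funpow_add comp_apply)
    qed
    also have "(tl_d ^^ Suc j) (kc j) = DNil" using tl_kc[of j j] by simp
    finally show ?thesis using s False by (simp add: sel_def eval_etl tl_DNil)
  qed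
qed


definition codeA :: scom where
  "codeA = SIFE 11 12 (ETl (EHd (EVar 9)))
     (SA 2 (ECons (task 0 (EHd (ETl (EVar 9)))) (ECons (task 0 (ETl (ETl (EVar 9)))) (ECons (task 4 (EHd (EVar 9))) (EVar 2)))))
     (SIFE 13 14 (EHd (EVar 9))
        (SA 2 (ECons (task 0 (ETl (EVar 9))) (ECons (task 3 (EHd (EVar 9))) (EVar 2))))
        (SA 2 (ECons (task 1 (EHd (ETl (EVar 9)))) (ECons (task 1 (ETl (ETl (EVar 9)))) (ECons (task 4 (EHd (EVar 9))) (EVar 2))))))"

definition codeB :: scom where
  "codeB = SIFE 11 12 (etl 3 (EHd (EVar 9)))
     (SA 2 (ECons (task 1 (ETl (EVar 9))) (ECons (task 3 (EHd (EVar 9))) (EVar 2))))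
     (SIFE 13 14 (ETl (EHd (EVar 9)))
        (SA 2 (ECons (task 1 (EHd (ETl (EVar 9)))) (ECons (task 1 (ETl (ETl (EVar 9)))) (ECons (task 4 (EHd (EVar 9))) (EVar 2)))))
        (SIFE 15 16 (EHd (EVar 9))
           (SA 2 (ECons (task 2 (ECons (ETl (EVar 9)) (edat (DCons dT DNil)))) (EVar 2)))
           (SA 3 (ECons (ECons ENil (ECons (edat dT) (ETl (EVar 9)))) (EVar 3)))))"

definition eTV :: "exp \<Rightarrow> exp" where "eTV v = ECons ENil v"
definition eZ :: exp where "eZ = edat (enc_trm (TConst (Leaf False)))"
definition eF2 :: "nat \<Rightarrow> exp \<Rightarrow> exp \<Rightarrow> exp" where "eF2 k a b = ECons (edat (tg k)) (ECons a b)"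
definition eF1 :: "nat \<Rightarrow> exp \<Rightarrow> exp" where "eF1 k a = ECons (edat (tg k)) a"

definition econs :: "exp \<Rightarrow> exp" where
  "econs X = (let v0 = eTV (ECons ENil (ECons ENil X)); v1 = eTV (ECons ENil (ECons (edat dT) X)); vn = eTV (ECons ENil X)
     in eF2 2 (eF2 0 (eF2 2 v0 v1) vn) (eF2 2 (eF2 0 (eF2 3 v0 v1) eZ) (eF2 2 (eF1 1 (eF2 0 v0 eZ)) (eF1 1 (eF2 0 v1 eZ)))))"

definition codeK :: scom where
  "codeK = SIFE 11 12 (EHd (EHd (EVar 9)))
     (SS (SA 2 (ECons (task 2 (ECons (EHd (ETl (EHd (EVar 9)))) (ECons ENil (ETl (EVar 9)))))
                (ECons (task 2 (ECons (ETl (ETl (EHd (EVar 9)))) (ECons (edat dT) (ETl (EVar 9)))))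
                (ECons (task 4 (edat (tg 2))) (EVar 2)))))
     (SS (SA 4 (ECons (edat (tg 2)) (ECons (econs (ETl (EVar 9))) (EVar 4))))
         (SA 5 (ECons (ECons ENil (ECons ENil (ETl (EVar 9)))) (ECons (ECons ENil (ECons (edat dT) (ETl (EVar 9)))) (EVar 5))))))
     (SIFE 13 14 (ETl (EHd (EVar 9)))
        (SA 3 (ECons (ECons ENil (ECons ENil (ETl (EVar 9)))) (EVar 3)))
        (SA 3 (ECons eZ (EVar 3))))"

definition codeM1 :: scom where
  "codeM1 = SA 3 (ECons (ECons (EVar 9) (EHd (EVar 3))) (ETl (EVar 3)))"
definition codeM2 :: scom where
  "codeM2 = SA 3 (ECons (ECons (EVar 9) (ECons (EHd (ETl (EVar 3))) (EHd (EVar 3)))) (ETl (ETl (EVar 3))))"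
definition codeMQ :: scom where
  "codeMQ = SA 3 (ECons (ECons (EHd (EVar 9)) (ECons (ETl (EVar 9)) (EHd (EVar 3)))) (ETl (EVar 3)))"
definition codeFIN :: scom where
  "codeFIN = SIFE 11 12 (etl 4 (EVar 6))
     (SA 3 (ECons (eF2 2 (EVar 4) (EHd (EVar 3))) (ETl (EVar 3))))
     (SA 3 (ECons (eF2 3 (eF1 1 (EVar 4)) (EHd (EVar 3))) (ETl (EVar 3))))"
definition codeUB :: scom where
  "codeUB = SIFE 11 12 (EVar 5)
     (SS (SA 3 (ECons (ECons (EVar 6) (ECons (EHd (EVar 5)) (EHd (EVar 3)))) (ETl (EVar 3))))
       (SS (SA 5 (ETl (EVar 5))) (SA 2 (ECons (EVar 7) (EVar 2)))))
     (SA 7 ENil)"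

definition BODY :: scom where
  "BODY = SS (SA 7 (EHd (EVar 2))) (SS (SA 2 (ETl (EVar 2))) (SS (SA 8 (EHd (EVar 7))) (SS (SA 9 (ETl (EVar 7)))
    (SS (SIF 10 (sel 0) codeA) (SS (SIF 10 (sel 1) codeB) (SS (SIF 10 (sel 2) codeK) (SS (SIF 10 (sel 3) codeM1)
    (SS (SIF 10 (sel 4) codeM2) (SS (SIF 10 (sel 5) codeMQ) (SS (SIF 10 (sel 6) codeFIN) (SIF 10 (sel 7) codeUB)))))))))))"

lemma wf_BODY: "wf BODY"
  by (simp add: BODY_def codeA_def codeB_def codeK_def codeM1_def codeM2_def codeMQ_def codeFIN_def codeUB_def)

definition KB :: nat where "KB = 2 + cost BODY"

lemma body_step: "s 2 \<noteq> DNil \<Longrightarrow> \<exists>t. steps (EVar 2) (cp BODY) s t (sem BODY s) \<and> t \<le> KB"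
proof -
  assume "s 2 \<noteq> DNil"
  moreover have "exec (cp BODY) s (tm BODY s) (sem BODY s)" by (rule exec_comp[OF wf_BODY])
  ultimately have "steps (EVar 2) (cp BODY) s (1 + etime (EVar 2) + tm BODY s) (sem BODY s)"
    by (intro steps_one) auto
  moreover have "1 + etime (EVar 2) + tm BODY s \<le> KB" using tm_cost[of BODY s] by (simp add: KB_def)
  ultimately show ?thesis by blast
qed

lemmas code_defs = codeA_def codeB_def codeK_def codeM1_def codeM2_def codeMQ_def codeFIN_def codeUB_def


lemma etl_num[simp]: "etl (numeral n) e = ETl (etl (pred_numeral n) e)" by (simp add: numeral_eq_Suc)
lemma kc_num[simp]: "kc (numeral n) = DCons DNil (kc (pred_numeral n))" by (simp add: numeral_eq_Suc)
lemma tg_num[simp]: "tg (numeral n) = DCons DNil (tg (pred_numeral n))" by (simp add: numeral_eq_Suc)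

declare enc_nat.simps[simp del]
lemma enc_nat_0[simp]: "enc_nat 0 = DNil" by (simp add: enc_nat.simps)
lemma enc_nat_even: "n \<ge> 1 \<Longrightarrow> enc_nat (2 * n) = DCons DNil (enc_nat n)"
  by (subst enc_nat.simps) auto
lemma enc_nat_odd: "enc_nat (2 * n + 1) = DCons dT (enc_nat n)"
  by (subst enc_nat.simps) auto
lemma enc_nat_Suc2[simp]: "enc_nat (Suc (2 * n)) = DCons dT (enc_nat n)"
  using enc_nat_odd by simp
lemma enc_nat_1[simp]: "enc_nat (Suc 0) = DCons dT DNil" using enc_nat_Suc2[of 0] by simp
lemma enc_nat_2xn[simp]: "enc_nat (2 * xn rp) = DCons DNil (enc_nat (xn rp))"
  using enc_nat_even[of "xn rp"] xn_pos[of rp] by simp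
lemma enc_nm: "enc_nat (nm rp) = DCons DNil (enc_nat (xn rp))"
  unfolding nm_def by simp
lemma enc_ren: "enc_nat (2 * x + 1) = DCons dT (enc_nat x)" by (rule enc_nat_odd)
lemma enc_xn_Nil: "enc_nat (xn []) = DCons dT DNil" by simp

lemma eval_econs: "eval s X = enc_nat (xn rp) \<Longrightarrow> eval s (econs X) = enc_fm (consf rp)"
  by (simp add: econs_def eTV_def eZ_def eF2_def eF1_def consf_def enc_nm Let_def)

definition tA :: "fm \<Rightarrow> dat" where "tA \<phi> = DCons (kc 0) (enc_fm \<phi>)"
definition tB :: "trm \<Rightarrow> dat" where "tB a = DCons (kc 1) (enc_trm a)"
definition tK :: "tree \<Rightarrow> dat \<Rightarrow> dat" where "tK c X = DCons (kc 2) (DCons (enc_tree c) X)"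
definition tM1 :: "dat \<Rightarrow> dat" where "tM1 h = DCons (kc 3) h"
definition tM2 :: "dat \<Rightarrow> dat" where "tM2 h = DCons (kc 4) h"
definition tMQ :: "dat \<Rightarrow> dat \<Rightarrow> dat" where "tMQ h v = DCons (kc 5) (DCons h v)"
definition tFIN :: dat where "tFIN = DCons (kc 6) DNil"
definition tUB :: dat where "tUB = DCons (kc 7) DNil"

lemmas tdefs = tA_def tB_def tK_def tM1_def tM2_def tMQ_def tFIN_def tUB_def

abbreviation same456 :: "state \<Rightarrow> state \<Rightarrow> bool" where
  "same456 s' s \<equiv> s' 4 = s 4 \<and> s' 5 = s 5 \<and> s' 6 = s 6"

lemma body_FEq: "s 2 = DCons (tA (FEq a b)) W0 \<Longrightarrow>
  sem BODY s 2 = DCons (tB a) (DCons (tB b) (DCons (tM2 (tg 0)) W0)) \<and> sem BODY s 3 = s 3 \<and> same456 (sem BODY s) s"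
  by (simp add: BODY_def sel_def codeA_def tdefs)

lemma body_FNot: "s 2 = DCons (tA (FNot p)) W0 \<Longrightarrow>
  sem BODY s 2 = DCons (tA p) (DCons (tM1 (tg 1)) W0) \<and> sem BODY s 3 = s 3 \<and> same456 (sem BODY s) s"
  by (simp add: BODY_def sel_def codeA_def tdefs)

lemma body_FAnd: "s 2 = DCons (tA (FAnd p q)) W0 \<Longrightarrow>
  sem BODY s 2 = DCons (tA p) (DCons (tA q) (DCons (tM2 (tg 2)) W0)) \<and> sem BODY s 3 = s 3 \<and> same456 (sem BODY s) s"
  by (simp add: BODY_def sel_def codeA_def tdefs)

lemma body_FOr: "s 2 = DCons (tA (FOr p q)) W0 \<Longrightarrow>
  sem BODY s 2 = DCons (tA p) (DCons (tA q) (DCons (tM2 (tg 3)) W0)) \<and> sem BODY s 3 = s 3 \<and> same456 (sem BODY s) s"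
  by (simp add: BODY_def sel_def codeA_def tdefs)

lemma body_TVar: "s 2 = DCons (tB (TVar x)) W0 \<Longrightarrow>
  sem BODY s 2 = W0 \<and> sem BODY s 3 = DCons (enc_trm (TVar (2 * x + 1))) (s 3) \<and> same456 (sem BODY s) s"
  by (simp add: BODY_def sel_def codeB_def tdefs enc_ren)

lemma body_TConst: "s 2 = DCons (tB (TConst c)) W0 \<Longrightarrow>
  sem BODY s 2 = DCons (tK c (enc_nat (xn []))) W0 \<and> sem BODY s 3 = s 3 \<and> same456 (sem BODY s) s"
  by (simp add: BODY_def sel_def codeB_def tdefs enc_xn_Nil)

lemma body_TJoin: "s 2 = DCons (tB (TJoin a b)) W0 \<Longrightarrow>
  sem BODY s 2 = DCons (tB a) (DCons (tB b) (DCons (tM2 (tg 2)) W0)) \<and> sem BODY s 3 = s 3 \<and> same456 (sem BODY s) s"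
  by (simp add: BODY_def sel_def codeB_def tdefs)

lemma body_TMeet: "s 2 = DCons (tB (TMeet a b)) W0 \<Longrightarrow>
  sem BODY s 2 = DCons (tB a) (DCons (tB b) (DCons (tM2 (tg 3)) W0)) \<and> sem BODY s 3 = s 3 \<and> same456 (sem BODY s) s"
  by (simp add: BODY_def sel_def codeB_def tdefs)

lemma body_TCompl: "s 2 = DCons (tB (TCompl a)) W0 \<Longrightarrow>
  sem BODY s 2 = DCons (tB a) (DCons (tM1 (tg 4)) W0) \<and> sem BODY s 3 = s 3 \<and> same456 (sem BODY s) s"
  by (simp add: BODY_def sel_def codeB_def tdefs)

lemma body_Leaf: "s 2 = DCons (tK (Leaf b) (enc_nat (xn rp))) W0 \<Longrightarrow>
  sem BODY s 2 = W0 \<and> sem BODY s 3 = DCons (enc_trm (trk (Leaf b) rp)) (s 3) \<and> same456 (sem BODY s) s"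
  by (cases b) (simp_all add: BODY_def sel_def codeK_def tdefs enc_nm eZ_def)

lemma body_Node: "s 2 = DCons (tK (Node l r) (enc_nat (xn rp))) W0 \<Longrightarrow>
  sem BODY s 2 = DCons (tK l (enc_nat (xn (False # rp)))) (DCons (tK r (enc_nat (xn (True # rp)))) (DCons (tM2 (tg 2)) W0))
  \<and> sem BODY s 3 = s 3 \<and> sem BODY s 4 = DCons (tg 2) (DCons (enc_fm (consf rp)) (s 4))
  \<and> sem BODY s 5 = DCons (enc_nat (nm (False # rp))) (DCons (enc_nat (nm (True # rp))) (s 5)) \<and> sem BODY s 6 = s 6"
proof -
  assume a: "s 2 = DCons (tK (Node l r) (enc_nat (xn rp))) W0"
  have "enc_nat (nm (False # rp)) = DCons DNil (DCons DNil (enc_nat (xn rp)))"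
       "enc_nat (nm (True # rp)) = DCons DNil (DCons dT (enc_nat (xn rp)))"
    by (simp_all add: enc_nm)
  then show ?thesis using a
    by (simp add: BODY_def sel_def codeK_def tdefs eval_econs)
qed

lemma body_M1: "s 2 = DCons (tM1 h) W0 \<Longrightarrow> s 3 = DCons r R0 \<Longrightarrow>
  sem BODY s 2 = W0 \<and> sem BODY s 3 = DCons (DCons h r) R0 \<and> same456 (sem BODY s) s"
  by (simp add: BODY_def sel_def codeM1_def tdefs)

lemma body_M2: "s 2 = DCons (tM2 h) W0 \<Longrightarrow> s 3 = DCons r2 (DCons r1 R0) \<Longrightarrow>
  sem BODY s 2 = W0 \<and> sem BODY s 3 = DCons (DCons h (DCons r1 r2)) R0 \<and> same456 (sem BODY s) s"
  by (simp add: BODY_def sel_def codeM2_def tdefs)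

lemma body_MQ: "s 2 = DCons (tMQ h v) W0 \<Longrightarrow> s 3 = DCons r R0 \<Longrightarrow>
  sem BODY s 2 = W0 \<and> sem BODY s 3 = DCons (DCons h (DCons v r)) R0 \<and> same456 (sem BODY s) s"
  by (simp add: BODY_def sel_def codeMQ_def tdefs)

lemma body_FIN5: "s 2 = DCons tFIN W0 \<Longrightarrow> s 3 = DCons r R0 \<Longrightarrow> s 6 = tg 5 \<Longrightarrow>
  sem BODY s 2 = W0 \<and> sem BODY s 3 = DCons (DCons (tg 2) (DCons (s 4) r)) R0 \<and> same456 (sem BODY s) s"
  by (simp add: BODY_def sel_def codeFIN_def tdefs eF2_def)

lemma body_FIN4: "s 2 = DCons tFIN W0 \<Longrightarrow> s 3 = DCons r R0 \<Longrightarrow> s 6 = tg 4 \<Longrightarrow>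
  sem BODY s 2 = W0 \<and> sem BODY s 3 = DCons (DCons (tg 3) (DCons (DCons (tg 1) (s 4)) r)) R0 \<and> same456 (sem BODY s) s"
  by (simp add: BODY_def sel_def codeFIN_def tdefs eF2_def eF1_def)

lemma body_UB1: "s 2 = DCons tUB W0 \<Longrightarrow> s 3 = DCons r R0 \<Longrightarrow> s 5 = DCons u U' \<Longrightarrow>
  sem BODY s 2 = DCons tUB W0 \<and> sem BODY s 3 = DCons (DCons (s 6) (DCons u r)) R0 \<and> sem BODY s 4 = s 4
  \<and> sem BODY s 5 = U' \<and> sem BODY s 6 = s 6"
  by (simp add: BODY_def sel_def codeUB_def tdefs)

lemma body_UB0: "s 2 = DCons tUB W0 \<Longrightarrow> s 5 = DNil \<Longrightarrow>
  sem BODY s 2 = W0 \<and> sem BODY s 3 = s 3 \<and> same456 (sem BODY s) s"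
  by (simp add: BODY_def sel_def codeUB_def tdefs)


definition RUN :: "dat \<Rightarrow> dat \<Rightarrow> (dat \<Rightarrow> dat) \<Rightarrow> (dat \<Rightarrow> dat) \<Rightarrow> nat \<Rightarrow> bool" where
  "RUN tsk res fC fU n = (\<forall>s W0. s 2 = DCons tsk W0 \<longrightarrow> (\<exists>t s'. steps (EVar 2) (cp BODY) s t s' \<and>
     s' 2 = W0 \<and> s' 3 = DCons res (s 3) \<and> s' 4 = fC (s 4) \<and> s' 5 = fU (s 5) \<and> s' 6 = s 6 \<and> t \<le> n))"

lemma RUN_mono: "RUN tsk res fC fU n \<Longrightarrow> n \<le> m \<Longrightarrow> RUN tsk res fC fU m"
  unfolding RUN_def by (meson le_trans)

lemma RUN_leaf:
  assumes "\<And>s W0. s 2 = DCons tsk W0 \<Longrightarrow> sem BODY s 2 = W0 \<and> sem BODY s 3 = DCons r (s 3) \<and> same456 (sem BODY s) s"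
  shows "RUN tsk r id id KB"
  unfolding RUN_def
proof (intro allI impI)
  fix s :: state and W0 assume s: "s 2 = DCons tsk W0"
  obtain t where "steps (EVar 2) (cp BODY) s t (sem BODY s)" "t \<le> KB" using body_step[of s] s by auto
  then show "\<exists>t s'. steps (EVar 2) (cp BODY) s t s' \<and> s' 2 = W0 \<and> s' 3 = DCons r (s 3) \<and>
     s' 4 = id (s 4) \<and> s' 5 = id (s 5) \<and> s' 6 = s 6 \<and> t \<le> KB" using assms[of s W0, OF s] by auto
qed

lemma RUN_chain:
  assumes "\<And>s W0. s 2 = DCons tsk W0 \<Longrightarrow> sem BODY s 2 = DCons X W0 \<and> sem BODY s 3 = s 3 \<and> same456 (sem BODY s) s"
    and "RUN X r fC fU n"
  shows "RUN tsk r fC fU (KB + n)"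
  unfolding RUN_def
proof (intro allI impI)
  fix s :: state and W0 assume s: "s 2 = DCons tsk W0"
  obtain t1 where t1: "steps (EVar 2) (cp BODY) s t1 (sem BODY s)" "t1 \<le> KB" using body_step[of s] s by auto
  note a = assms(1)[of s W0, OF s]
  obtain t2 s2 where r: "steps (EVar 2) (cp BODY) (sem BODY s) t2 s2" "s2 2 = W0" "s2 3 = DCons r (sem BODY s 3)"
    "s2 4 = fC (sem BODY s 4)" "s2 5 = fU (sem BODY s 5)" "s2 6 = sem BODY s 6" "t2 \<le> n"
    using assms(2) a unfolding RUN_def by blast
  show "\<exists>t s'. steps (EVar 2) (cp BODY) s t s' \<and> s' 2 = W0 \<and> s' 3 = DCons r (s 3) \<and>
     s' 4 = fC (s 4) \<and> s' 5 = fU (s 5) \<and> s' 6 = s 6 \<and> t \<le> KB + n"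
    using steps_trans[OF t1(1) r(1)] r a t1 by (intro exI[of _ "t1 + t2"] exI[of _ s2]) auto
qed

lemma RUN_un:
  assumes "\<And>s W0. s 2 = DCons tsk W0 \<Longrightarrow> sem BODY s 2 = DCons X (DCons (tM1 h) W0) \<and> sem BODY s 3 = s 3 \<and> same456 (sem BODY s) s"
    and "RUN X r fC fU n"
  shows "RUN tsk (DCons h r) fC fU (2 * KB + n)"
  unfolding RUN_def
proof (intro allI impI)
  fix s :: state and W0 assume s: "s 2 = DCons tsk W0"
  obtain t1 where t1: "steps (EVar 2) (cp BODY) s t1 (sem BODY s)" "t1 \<le> KB" using body_step[of s] s by auto
  note a = assms(1)[of s W0, OF s]
  obtain t2 s2 where r: "steps (EVar 2) (cp BODY) (sem BODY s) t2 s2" "s2 2 = DCons (tM1 h) W0" "s2 3 = DCons r (sem BODY s 3)"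
    "s2 4 = fC (sem BODY s 4)" "s2 5 = fU (sem BODY s 5)" "s2 6 = sem BODY s 6" "t2 \<le> n"
    using assms(2) a unfolding RUN_def by blast
  obtain t3 where t3: "steps (EVar 2) (cp BODY) s2 t3 (sem BODY s2)" "t3 \<le> KB" using body_step[of s2] r by auto
  have m: "sem BODY s2 2 = W0 \<and> sem BODY s2 3 = DCons (DCons h r) (s 3) \<and> same456 (sem BODY s2) s2"
    using body_M1[of s2 h W0 r "s 3"] r a by auto
  show "\<exists>t s'. steps (EVar 2) (cp BODY) s t s' \<and> s' 2 = W0 \<and> s' 3 = DCons (DCons h r) (s 3) \<and>
     s' 4 = fC (s 4) \<and> s' 5 = fU (s 5) \<and> s' 6 = s 6 \<and> t \<le> 2 * KB + n"
    using steps_trans[OF steps_trans[OF t1(1) r(1)] t3(1)] r a t1 t3 m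
    by (intro exI[of _ "t1 + t2 + t3"] exI[of _ "sem BODY s2"]) auto
qed

lemma RUN_bin:
  assumes "\<And>s W0. s 2 = DCons tsk W0 \<Longrightarrow> sem BODY s 2 = DCons X (DCons Y (DCons (tM2 h) W0)) \<and> sem BODY s 3 = s 3
      \<and> sem BODY s 4 = gC (s 4) \<and> sem BODY s 5 = gU (s 5) \<and> sem BODY s 6 = s 6"
    and "RUN X rx fx ux nx" and "RUN Y ry fy uy ny"
  shows "RUN tsk (DCons h (DCons rx ry)) (\<lambda>d. fy (fx (gC d))) (\<lambda>d. uy (ux (gU d))) (2 * KB + nx + ny)"
  unfolding RUN_def
proof (intro allI impI)
  fix s :: state and W0 assume s: "s 2 = DCons tsk W0"
  obtain t1 where t1: "steps (EVar 2) (cp BODY) s t1 (sem BODY s)" "t1 \<le> KB" using body_step[of s] s by auto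
  note a = assms(1)[of s W0, OF s]
  obtain t2 s2 where r: "steps (EVar 2) (cp BODY) (sem BODY s) t2 s2" "s2 2 = DCons Y (DCons (tM2 h) W0)" "s2 3 = DCons rx (sem BODY s 3)"
    "s2 4 = fx (sem BODY s 4)" "s2 5 = ux (sem BODY s 5)" "s2 6 = sem BODY s 6" "t2 \<le> nx"
    using assms(2) a unfolding RUN_def by blast
  obtain t3 s3 where q: "steps (EVar 2) (cp BODY) s2 t3 s3" "s3 2 = DCons (tM2 h) W0" "s3 3 = DCons ry (s2 3)"
    "s3 4 = fy (s2 4)" "s3 5 = uy (s2 5)" "s3 6 = s2 6" "t3 \<le> ny"
    using assms(3) r unfolding RUN_def by blast
  obtain t4 where t4: "steps (EVar 2) (cp BODY) s3 t4 (sem BODY s3)" "t4 \<le> KB" using body_step[of s3] q by auto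
  have m: "sem BODY s3 2 = W0 \<and> sem BODY s3 3 = DCons (DCons h (DCons rx ry)) (s 3) \<and> same456 (sem BODY s3) s3"
    using body_M2[of s3 h W0 ry rx "s 3"] q r a by auto
  show "\<exists>t s'. steps (EVar 2) (cp BODY) s t s' \<and> s' 2 = W0 \<and> s' 3 = DCons (DCons h (DCons rx ry)) (s 3) \<and>
     s' 4 = fy (fx (gC (s 4))) \<and> s' 5 = uy (ux (gU (s 5))) \<and> s' 6 = s 6 \<and> t \<le> 2 * KB + nx + ny"
    using steps_trans[OF steps_trans[OF steps_trans[OF t1(1) r(1)] q(1)] t4(1)] r q a t1 t4 m
    by (intro exI[of _ "t1 + t2 + t3 + t4"] exI[of _ "sem BODY s3"]) auto
qed

fun ckd :: "tree \<Rightarrow> bool list \<Rightarrow> dat \<Rightarrow> dat" where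
  "ckd (Leaf b) rp d = d"
| "ckd (Node l r) rp d = ckd r (True # rp) (ckd l (False # rp) (DCons (tg 2) (DCons (enc_fm (consf rp)) d)))"

fun ukd :: "tree \<Rightarrow> bool list \<Rightarrow> dat \<Rightarrow> dat" where
  "ukd (Leaf b) rp d = d"
| "ukd (Node l r) rp d = ukd r (True # rp) (ukd l (False # rp) (DCons (enc_nat (nm (False # rp))) (DCons (enc_nat (nm (True # rp))) d)))"

lemma run_K: "RUN (tK c (enc_nat (xn rp))) (enc_trm (trk c rp)) (ckd c rp) (ukd c rp) (2 * KB * dsize (enc_tree c))"
proof (induction c arbitrary: rp)
  case (Leaf b)
  have "RUN (tK (Leaf b) (enc_nat (xn rp))) (enc_trm (trk (Leaf b) rp)) id id KB"
    by (rule RUN_leaf) (rule body_Leaf)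
  moreover have "ckd (Leaf b) rp = id" "ukd (Leaf b) rp = id" by (auto simp: fun_eq_iff)
  moreover have "KB \<le> 2 * KB * dsize (enc_tree (Leaf b))" by (cases b) auto
  ultimately show ?case using RUN_mono by metis
next
  case (Node l r)
  have "RUN (tK (Node l r) (enc_nat (xn rp))) (DCons (tg 2) (DCons (enc_trm (trk l (False # rp))) (enc_trm (trk r (True # rp)))))
     (\<lambda>d. ckd r (True # rp) (ckd l (False # rp) (DCons (tg 2) (DCons (enc_fm (consf rp)) d))))
     (\<lambda>d. ukd r (True # rp) (ukd l (False # rp) (DCons (enc_nat (nm (False # rp))) (DCons (enc_nat (nm (True # rp))) d))))
     (2 * KB + 2 * KB * dsize (enc_tree l) + 2 * KB * dsize (enc_tree r))"
    by (rule RUN_bin[OF _ Node.IH(1) Node.IH(2)]) (rule body_Node)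
  moreover have le: "2 * KB + 2 * KB * dsize (enc_tree l) + 2 * KB * dsize (enc_tree r) \<le> 2 * KB * dsize (enc_tree (Node l r))"
    by (simp add: algebra_simps)
  moreover have "ckd (Node l r) rp = (\<lambda>d. ckd r (True # rp) (ckd l (False # rp) (DCons (tg 2) (DCons (enc_fm (consf rp)) d))))"
    by (rule ext) simp
  moreover have "ukd (Node l r) rp = (\<lambda>d. ukd r (True # rp) (ukd l (False # rp) (DCons (enc_nat (nm (False # rp))) (DCons (enc_nat (nm (True # rp))) d))))"
    by (rule ext) simp
  moreover have "enc_trm (trk (Node l r) rp) = DCons (tg 2) (DCons (enc_trm (trk l (False # rp))) (enc_trm (trk r (True # rp))))"
    by simp
  ultimately show ?case using RUN_mono by metis
qed


fun ctd :: "trm \<Rightarrow> dat \<Rightarrow> dat" where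
  "ctd (TVar x) d = d"
| "ctd (TConst c) d = ckd c [] d"
| "ctd (TJoin a b) d = ctd b (ctd a d)"
| "ctd (TMeet a b) d = ctd b (ctd a d)"
| "ctd (TCompl a) d = ctd a d"

fun utd :: "trm \<Rightarrow> dat \<Rightarrow> dat" where
  "utd (TVar x) d = d"
| "utd (TConst c) d = ukd c [] d"
| "utd (TJoin a b) d = utd b (utd a d)"
| "utd (TMeet a b) d = utd b (utd a d)"
| "utd (TCompl a) d = utd a d"

fun cfd :: "fm \<Rightarrow> dat \<Rightarrow> dat" where
  "cfd (FEq a b) d = ctd b (ctd a d)"
| "cfd (FNot p) d = cfd p d"
| "cfd (FAnd p q) d = cfd q (cfd p d)"
| "cfd (FOr p q) d = cfd q (cfd p d)"
| "cfd (FAll x p) d = cfd p d"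
| "cfd (FEx x p) d = cfd p d"

fun ufd :: "fm \<Rightarrow> dat \<Rightarrow> dat" where
  "ufd (FEq a b) d = utd b (utd a d)"
| "ufd (FNot p) d = ufd p d"
| "ufd (FAnd p q) d = ufd q (ufd p d)"
| "ufd (FOr p q) d = ufd q (ufd p d)"
| "ufd (FAll x p) d = ufd p d"
| "ufd (FEx x p) d = ufd p d"

lemma RUN_eq: "RUN t r f u n \<Longrightarrow> r = r' \<Longrightarrow> f = f' \<Longrightarrow> u = u' \<Longrightarrow> n \<le> n' \<Longrightarrow> RUN t r' f' u' n'"
  using RUN_mono by blast

lemma run_T: "RUN (tB a) (enc_trm (trt a)) (ctd a) (utd a) (2 * KB * dsize (enc_trm a))"
proof (induction a)
  case (TVar x)
  have "RUN (tB (TVar x)) (enc_trm (TVar (2 * x + 1))) id id KB" by (rule RUN_leaf) (rule body_TVar)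
  then show ?case by (rule RUN_eq) (auto simp: fun_eq_iff)
next
  case (TConst c)
  have "RUN (tB (TConst c)) (enc_trm (trk c [])) (ckd c []) (ukd c []) (KB + 2 * KB * dsize (enc_tree c))"
    by (rule RUN_chain[OF _ run_K]) (rule body_TConst)
  then show ?case by (rule RUN_eq) (auto simp: fun_eq_iff algebra_simps)
next
  case (TJoin a b)
  have "RUN (tB (TJoin a b)) (DCons (tg 2) (DCons (enc_trm (trt a)) (enc_trm (trt b))))
     (\<lambda>d. ctd b (ctd a (id d))) (\<lambda>d. utd b (utd a (id d)))
     (2 * KB + 2 * KB * dsize (enc_trm a) + 2 * KB * dsize (enc_trm b))"
    by (rule RUN_bin[OF _ TJoin.IH(1) TJoin.IH(2)]) (drule body_TJoin, simp)
  then show ?case by (rule RUN_eq) (auto simp: fun_eq_iff algebra_simps)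
next
  case (TMeet a b)
  have "RUN (tB (TMeet a b)) (DCons (tg 3) (DCons (enc_trm (trt a)) (enc_trm (trt b))))
     (\<lambda>d. ctd b (ctd a (id d))) (\<lambda>d. utd b (utd a (id d)))
     (2 * KB + 2 * KB * dsize (enc_trm a) + 2 * KB * dsize (enc_trm b))"
    by (rule RUN_bin[OF _ TMeet.IH(1) TMeet.IH(2)]) (drule body_TMeet, simp)
  then show ?case by (rule RUN_eq) (auto simp: fun_eq_iff algebra_simps)
next
  case (TCompl a)
  have "RUN (tB (TCompl a)) (DCons (tg 4) (enc_trm (trt a))) (ctd a) (utd a) (2 * KB + 2 * KB * dsize (enc_trm a))"
    by (rule RUN_un[OF _ TCompl.IH]) (rule body_TCompl)
  then show ?case by (rule RUN_eq) (auto simp: fun_eq_iff algebra_simps)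
qed

lemma run_F: "qfree \<phi> \<Longrightarrow> RUN (tA \<phi>) (enc_fm (trf \<phi>)) (cfd \<phi>) (ufd \<phi>) (2 * KB * dsize (enc_fm \<phi>))"
proof (induction \<phi>)
  case (FEq a b)
  have "RUN (tA (FEq a b)) (DCons (tg 0) (DCons (enc_trm (trt a)) (enc_trm (trt b))))
     (\<lambda>d. ctd b (ctd a (id d))) (\<lambda>d. utd b (utd a (id d)))
     (2 * KB + 2 * KB * dsize (enc_trm a) + 2 * KB * dsize (enc_trm b))"
    by (rule RUN_bin[OF _ run_T run_T]) (drule body_FEq, simp)
  then show ?case by (rule RUN_eq) (auto simp: fun_eq_iff algebra_simps)
next
  case (FNot p)
  have "RUN (tA (FNot p)) (DCons (tg 1) (enc_fm (trf p))) (cfd p) (ufd p) (2 * KB + 2 * KB * dsize (enc_fm p))"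
    using FNot.prems by (intro RUN_un[OF _ FNot.IH]) (simp_all add: body_FNot)
  then show ?case by (rule RUN_eq) (auto simp: fun_eq_iff algebra_simps)
next
  case (FAnd p q)
  have "RUN (tA (FAnd p q)) (DCons (tg 2) (DCons (enc_fm (trf p)) (enc_fm (trf q))))
     (\<lambda>d. cfd q (cfd p (id d))) (\<lambda>d. ufd q (ufd p (id d)))
     (2 * KB + 2 * KB * dsize (enc_fm p) + 2 * KB * dsize (enc_fm q))"
    using FAnd.prems by (intro RUN_bin[OF _ FAnd.IH(1) FAnd.IH(2)]) (simp_all add: body_FAnd)
  then show ?case by (rule RUN_eq) (auto simp: fun_eq_iff algebra_simps)
next
  case (FOr p q)
  have "RUN (tA (FOr p q)) (DCons (tg 3) (DCons (enc_fm (trf p)) (enc_fm (trf q))))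
     (\<lambda>d. cfd q (cfd p (id d))) (\<lambda>d. ufd q (ufd p (id d)))
     (2 * KB + 2 * KB * dsize (enc_fm p) + 2 * KB * dsize (enc_fm q))"
    using FOr.prems by (intro RUN_bin[OF _ FOr.IH(1) FOr.IH(2)]) (simp_all add: body_FOr)
  then show ?case by (rule RUN_eq) (auto simp: fun_eq_iff algebra_simps)
qed auto

fun encl :: "nat list \<Rightarrow> dat" where
  "encl [] = DNil"
| "encl (u # us) = DCons (enc_nat u) (encl us)"

lemma ckd_enc: "ckd c rp (enc_fm C) = enc_fm (ck c rp C)"
proof (induction c arbitrary: rp C)
  case (Leaf x) then show ?case by simp
next
  case (Node l r)
  have "ckd (Node l r) rp (enc_fm C) = ckd r (True # rp) (ckd l (False # rp) (enc_fm (FAnd (consf rp) C)))" by simp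
  also have "\<dots> = enc_fm (ck (Node l r) rp C)" by (simp only: Node.IH ck.simps)
  finally show ?case .
qed
lemma ukd_enc: "ukd c rp (encl U) = encl (uk c rp U)"
proof (induction c arbitrary: rp U)
  case (Leaf x) then show ?case by simp
next
  case (Node l r)
  have "ukd (Node l r) rp (encl U) = ukd r (True # rp) (ukd l (False # rp) (encl (nm (False # rp) # nm (True # rp) # U)))" by simp
  also have "\<dots> = encl (uk (Node l r) rp U)" by (simp only: Node.IH uk.simps)
  finally show ?case .
qed
lemma ctd_enc: "ctd a (enc_fm C) = enc_fm (ct a C)"
  by (induction a arbitrary: C) (auto simp: ckd_enc)
lemma utd_enc: "utd a (encl U) = encl (ut a U)"
  by (induction a arbitrary: U) (auto simp: ukd_enc)
lemma cfd_enc: "cfd \<phi> (enc_fm C) = enc_fm (cf \<phi> C)"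
  by (induction \<phi> arbitrary: C) (auto simp: ctd_enc)
lemma ufd_enc: "ufd \<phi> (encl U) = encl (uf \<phi> U)"
  by (induction \<phi> arbitrary: U) (auto simp: utd_enc)


definition PAB :: scom where
  "PAB = SS (SA 2 (ECons (task 5 (ECons (EHd (EVar 0)) (ECons (edat dT) (EHd (ETl (EVar 0)))))) (EVar 2)))
            (SA 0 (ETl (ETl (EVar 0))))"
definition PAG :: exp where "PAG = etl 3 (EHd (EVar 0))"

definition INIT :: scom where
  "INIT = SS (SA 6 (edat (tg 5))) (SS (SIF 10 (etl 3 (EHd (EVar 0))) (SA 6 (EHd (EVar 0))))
     (SS (SA 4 (edat (enc_fm C0))) (SS (SA 5 (edat (encl [nm []]))) (SS (SA 2 (edat (DCons tUB DNil))) (SA 3 ENil)))))"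
definition MID :: scom where
  "MID = SA 2 (ECons (task 0 (EVar 0)) (ECons (edat tFIN) (EVar 2)))"
definition FINAL :: scom where "FINAL = SA 1 (EHd (EVar 3))"

definition PROG :: com where
  "PROG = Seq (cp INIT) (Seq (While PAG (cp PAB)) (Seq (cp MID) (Seq (While (EVar 2) (cp BODY)) (cp FINAL))))"

fun mat :: "fm \<Rightarrow> fm" where
  "mat (FAll x p) = mat p"
| "mat (FEx x p) = mat p"
| "mat p = p"

fun Qb :: "fm \<Rightarrow> bool" where
  "Qb (FAll x p) = True"
| "Qb p = False"

definition qd :: "bool \<Rightarrow> dat" where "qd q = (if q then tg 4 else tg 5)"

definition qnode :: "bool \<Rightarrow> nat \<Rightarrow> fm \<Rightarrow> fm" where
  "qnode q u \<phi> = (if q then FAll u \<phi> else FEx u \<phi>)"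

fun wrapP :: "fm \<Rightarrow> fm \<Rightarrow> fm" where
  "wrapP M (FAll x p) = FAll (2 * x + 1) (wrapP M p)"
| "wrapP M (FEx x p) = FEx (2 * x + 1) (wrapP M p)"
| "wrapP M p = M"

definition Mform :: "bool \<Rightarrow> fm \<Rightarrow> fm \<Rightarrow> fm" where
  "Mform q C \<psi> = (if q then FOr (FNot C) \<psi> else FAnd C \<psi>)"

definition outf :: "fm \<Rightarrow> fm" where
  "outf \<Phi> = fold (qnode (Qb \<Phi>)) (uf (mat \<Phi>) [nm []]) (wrapP (Mform (Qb \<Phi>) (cf (mat \<Phi>) C0) (trf (mat \<Phi>))) \<Phi>)"

fun mq :: "fm \<Rightarrow> dat \<Rightarrow> dat" where
  "mq (FAll x p) W = mq p (DCons (tMQ (tg 4) (enc_nat (2 * x + 1))) W)"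
| "mq (FEx x p) W = mq p (DCons (tMQ (tg 5) (enc_nat (2 * x + 1))) W)"
| "mq p W = W"

fun nq :: "fm \<Rightarrow> nat" where
  "nq (FAll x p) = Suc (nq p)"
| "nq (FEx x p) = Suc (nq p)"
| "nq p = 0"

definition KA :: nat where "KA = 1 + etime PAG + cost PAB"

lemma qfree_guard: "qfree \<psi> \<Longrightarrow> s 0 = enc_fm \<psi> \<Longrightarrow> eval s PAG = DNil"
  by (cases \<psi>) (auto simp: PAG_def)

lemma run_A: "prenex \<phi> \<Longrightarrow> s 0 = enc_fm \<phi> \<Longrightarrow> \<exists>t s'. steps PAG (cp PAB) s t s' \<and> s' 0 = enc_fm (mat \<phi>) \<and>
  s' 2 = mq \<phi> (s 2) \<and> s' 3 = s 3 \<and> s' 4 = s 4 \<and> s' 5 = s 5 \<and> s' 6 = s 6 \<and> t \<le> KA * nq \<phi>"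
proof (induction \<phi> arbitrary: s rule: prenex.induct)
  case (1 p)
  then show ?case by (intro exI[of _ 0] exI[of _ s]) (cases p; auto intro: steps_refl)
next
  case (2 p x)
  have g: "eval s PAG \<noteq> DNil" using 2 by (simp add: PAG_def)
  have ex: "exec (cp PAB) s (tm PAB s) (sem PAB s)" by (rule exec_comp) (simp add: PAB_def)
  have st: "steps PAG (cp PAB) s (1 + etime PAG + tm PAB s) (sem PAB s)" by (rule steps_one[OF g ex])
  have sp: "sem PAB s 0 = enc_fm p" "sem PAB s 2 = DCons (tMQ (tg 4) (enc_nat (2 * x + 1))) (s 2)"
     "sem PAB s 3 = s 3" "sem PAB s 4 = s 4" "sem PAB s 5 = s 5" "sem PAB s 6 = s 6"
    using 2 by (simp_all add: PAB_def tdefs enc_ren)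
  obtain t s' where r: "steps PAG (cp PAB) (sem PAB s) t s'" "s' 0 = enc_fm (mat p)" "s' 2 = mq p (sem PAB s 2)"
    "s' 3 = sem PAB s 3" "s' 4 = sem PAB s 4" "s' 5 = sem PAB s 5" "s' 6 = sem PAB s 6" "t \<le> KA * nq p"
    using 2(2)[of "sem PAB s"] sp by blast
  have "1 + etime PAG + tm PAB s \<le> KA" using tm_cost[of PAB s] by (simp add: KA_def)
  then show ?case using steps_trans[OF st r(1)] r sp
    by (intro exI[of _ "1 + etime PAG + tm PAB s + t"] exI[of _ s']) auto
next
  case (3 p x)
  have g: "eval s PAG \<noteq> DNil" using 3 by (simp add: PAG_def)
  have ex: "exec (cp PAB) s (tm PAB s) (sem PAB s)" by (rule exec_comp) (simp add: PAB_def)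
  have st: "steps PAG (cp PAB) s (1 + etime PAG + tm PAB s) (sem PAB s)" by (rule steps_one[OF g ex])
  have sp: "sem PAB s 0 = enc_fm p" "sem PAB s 2 = DCons (tMQ (tg 5) (enc_nat (2 * x + 1))) (s 2)"
     "sem PAB s 3 = s 3" "sem PAB s 4 = s 4" "sem PAB s 5 = s 5" "sem PAB s 6 = s 6"
    using 3 by (simp_all add: PAB_def tdefs enc_ren)
  obtain t s' where r: "steps PAG (cp PAB) (sem PAB s) t s'" "s' 0 = enc_fm (mat p)" "s' 2 = mq p (sem PAB s 2)"
    "s' 3 = sem PAB s 3" "s' 4 = sem PAB s 4" "s' 5 = sem PAB s 5" "s' 6 = sem PAB s 6" "t \<le> KA * nq p"
    using 3(2)[of "sem PAB s"] sp by blast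
  have "1 + etime PAG + tm PAB s \<le> KA" using tm_cost[of PAB s] by (simp add: KA_def)
  then show ?case using steps_trans[OF st r(1)] r sp
    by (intro exI[of _ "1 + etime PAG + tm PAB s + t"] exI[of _ s']) auto
qed

lemma mat_qfree: "prenex \<phi> \<Longrightarrow> qfree (mat \<phi>)"
  by (induction rule: prenex.induct) (case_tac p; auto)+

lemma run_MQ: "prenex \<phi> \<Longrightarrow> s 2 = mq \<phi> W0 \<Longrightarrow> s 3 = DCons (enc_fm M) R0 \<Longrightarrow>
  \<exists>t s'. steps (EVar 2) (cp BODY) s t s' \<and> s' 2 = W0 \<and> s' 3 = DCons (enc_fm (wrapP M \<phi>)) R0 \<and>
    s' 4 = s 4 \<and> s' 5 = s 5 \<and> s' 6 = s 6 \<and> t \<le> KB * nq \<phi>"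
proof (induction \<phi> arbitrary: W0 rule: prenex.induct)
  case (1 p)
  then show ?case by (intro exI[of _ 0] exI[of _ s]) (cases p; auto intro: steps_refl)
next
  case (2 p x)
  obtain t s' where r: "steps (EVar 2) (cp BODY) s t s'" "s' 2 = DCons (tMQ (tg 4) (enc_nat (2 * x + 1))) W0"
    "s' 3 = DCons (enc_fm (wrapP M p)) R0" "s' 4 = s 4" "s' 5 = s 5" "s' 6 = s 6" "t \<le> KB * nq p"
    using 2 by fastforce
  obtain t2 where t2: "steps (EVar 2) (cp BODY) s' t2 (sem BODY s')" "t2 \<le> KB" using body_step[of s'] r by auto
  have b: "sem BODY s' 2 = W0 \<and> sem BODY s' 3 = DCons (DCons (tg 4) (DCons (enc_nat (2 * x + 1)) (enc_fm (wrapP M p)))) R0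
    \<and> same456 (sem BODY s') s'" by (rule body_MQ[OF r(2) r(3)])
  show ?case using steps_trans[OF r(1) t2(1)] r t2 b
    by (intro exI[of _ "t + t2"] exI[of _ "sem BODY s'"]) auto
next
  case (3 p x)
  obtain t s' where r: "steps (EVar 2) (cp BODY) s t s'" "s' 2 = DCons (tMQ (tg 5) (enc_nat (2 * x + 1))) W0"
    "s' 3 = DCons (enc_fm (wrapP M p)) R0" "s' 4 = s 4" "s' 5 = s 5" "s' 6 = s 6" "t \<le> KB * nq p"
    using 3 by fastforce
  obtain t2 where t2: "steps (EVar 2) (cp BODY) s' t2 (sem BODY s')" "t2 \<le> KB" using body_step[of s'] r by auto
  have b: "sem BODY s' 2 = W0 \<and> sem BODY s' 3 = DCons (DCons (tg 5) (DCons (enc_nat (2 * x + 1)) (enc_fm (wrapP M p)))) R0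
    \<and> same456 (sem BODY s') s'" by (rule body_MQ[OF r(2) r(3)])
  show ?case using steps_trans[OF r(1) t2(1)] r t2 b
    by (intro exI[of _ "t + t2"] exI[of _ "sem BODY s'"]) auto
qed

lemma run_UB: "s 2 = DCons tUB W0 \<Longrightarrow> s 5 = encl Us \<Longrightarrow> s 3 = DCons (enc_fm \<phi>) R0 \<Longrightarrow> s 6 = qd q \<Longrightarrow>
  \<exists>t s'. steps (EVar 2) (cp BODY) s t s' \<and> s' 2 = W0 \<and> s' 3 = DCons (enc_fm (fold (qnode q) Us \<phi>)) R0 \<and>
    t \<le> KB * (length Us + 1)"
proof (induction Us arbitrary: s \<phi>)
  case Nil
  obtain t where t: "steps (EVar 2) (cp BODY) s t (sem BODY s)" "t \<le> KB" using body_step[of s] Nil by auto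
  have "sem BODY s 2 = W0 \<and> sem BODY s 3 = s 3 \<and> same456 (sem BODY s) s" by (rule body_UB0) (use Nil in auto)
  then show ?case using t Nil by (intro exI[of _ t] exI[of _ "sem BODY s"]) auto
next
  case (Cons u Us)
  obtain t where t: "steps (EVar 2) (cp BODY) s t (sem BODY s)" "t \<le> KB" using body_step[of s] Cons by auto
  have b: "sem BODY s 2 = DCons tUB W0 \<and> sem BODY s 3 = DCons (DCons (s 6) (DCons (enc_nat u) (enc_fm \<phi>))) R0 \<and> sem BODY s 4 = s 4
    \<and> sem BODY s 5 = encl Us \<and> sem BODY s 6 = s 6" by (rule body_UB1) (use Cons.prems in auto)
  have e: "DCons (s 6) (DCons (enc_nat u) (enc_fm \<phi>)) = enc_fm (qnode q u \<phi>)"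
    using Cons.prems by (simp add: qd_def qnode_def)
  obtain t2 s2 where r: "steps (EVar 2) (cp BODY) (sem BODY s) t2 s2" "s2 2 = W0"
    "s2 3 = DCons (enc_fm (fold (qnode q) Us (qnode q u \<phi>))) R0" "t2 \<le> KB * (length Us + 1)"
    using Cons.IH[of "sem BODY s" "qnode q u \<phi>"] b e Cons.prems by auto
  show ?case using steps_trans[OF t(1) r(1)] t r by (intro exI[of _ "t + t2"] exI[of _ s2]) auto
qed


lemma init_sem: "prenex \<Phi> \<Longrightarrow> s 0 = enc_fm \<Phi> \<Longrightarrow>
  sem INIT s 0 = enc_fm \<Phi> \<and> sem INIT s 2 = DCons tUB DNil \<and> sem INIT s 3 = DNil \<and> sem INIT s 4 = enc_fm C0 \<and>
  sem INIT s 5 = encl [nm []] \<and> sem INIT s 6 = qd (Qb \<Phi>)"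
  by (cases \<Phi>) (auto simp: INIT_def qd_def elim: prenex.cases)

definition TB :: "fm \<Rightarrow> nat" where
  "TB \<Phi> = cost INIT + KA * nq \<Phi> + 1 + etime PAG + cost MID +
     (KB + 2 * KB * dsize (enc_fm (mat \<Phi>)) + KB * nq \<Phi> + KB * (length (uf (mat \<Phi>) [nm []]) + 1)) + 2 + cost FINAL"

lemma qd_FIN: "s 2 = DCons tFIN W0 \<Longrightarrow> s 3 = DCons (enc_fm \<psi>) R0 \<Longrightarrow> s 6 = qd q \<Longrightarrow> s 4 = enc_fm C \<Longrightarrow>
  sem BODY s 2 = W0 \<and> sem BODY s 3 = DCons (enc_fm (Mform q C \<psi>)) R0 \<and> same456 (sem BODY s) s"
proof (cases q)
  case True
  assume a: "s 2 = DCons tFIN W0" "s 3 = DCons (enc_fm \<psi>) R0" "s 6 = qd q" "s 4 = enc_fm C"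
  then show ?thesis using body_FIN4[of s W0 "enc_fm \<psi>" R0] True by (simp add: qd_def Mform_def)
next
  case False
  assume a: "s 2 = DCons tFIN W0" "s 3 = DCons (enc_fm \<psi>) R0" "s 6 = qd q" "s 4 = enc_fm C"
  then show ?thesis using body_FIN5[of s W0 "enc_fm \<psi>" R0] False by (simp add: qd_def Mform_def)
qed

theorem run_PROG: "prenex \<Phi> \<Longrightarrow> \<exists>t. run PROG (enc_fm \<Phi>) t (enc_fm (outf \<Phi>)) \<and> t \<le> TB \<Phi>"
proof -
  assume pr: "prenex \<Phi>"
  define s0 :: state where "s0 = (\<lambda>v. if v = 0 then enc_fm \<Phi> else DNil)"
  define s1 where "s1 = sem INIT s0"
  have i1: "exec (cp INIT) s0 (tm INIT s0) s1" unfolding s1_def by (rule exec_comp) (simp add: INIT_def)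
  have s1: "s1 0 = enc_fm \<Phi>" "s1 2 = DCons tUB DNil" "s1 3 = DNil" "s1 4 = enc_fm C0"
     "s1 5 = encl [nm []]" "s1 6 = qd (Qb \<Phi>)"
    using init_sem[OF pr, of s0] by (auto simp: s1_def s0_def)
  obtain ta s2 where A: "steps PAG (cp PAB) s1 ta s2" "s2 0 = enc_fm (mat \<Phi>)" "s2 2 = mq \<Phi> (s1 2)"
    "s2 3 = s1 3" "s2 4 = s1 4" "s2 5 = s1 5" "s2 6 = s1 6" "ta \<le> KA * nq \<Phi>"
    using run_A[of \<Phi> s1, OF pr s1(1)] by blast
  have ea: "exec (While PAG (cp PAB)) s1 (ta + 1 + etime PAG) s2"
    by (rule steps_while[OF A(1)]) (rule qfree_guard[of "mat \<Phi>" s2, OF mat_qfree[OF pr] A(2)])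
  define s3 where "s3 = sem MID s2"
  have em: "exec (cp MID) s2 (tm MID s2) s3" unfolding s3_def by (rule exec_comp) (simp add: MID_def)
  let ?\<psi> = "mat \<Phi>"
  let ?q = "Qb \<Phi>"
  have s3: "s3 2 = DCons (tA ?\<psi>) (DCons tFIN (mq \<Phi> (DCons tUB DNil)))" "s3 3 = DNil" "s3 4 = enc_fm C0"
    "s3 5 = encl [nm []]" "s3 6 = qd ?q"
    using A s1 by (simp_all add: s3_def MID_def tdefs)
  obtain t4 s4 where F: "steps (EVar 2) (cp BODY) s3 t4 s4" "s4 2 = DCons tFIN (mq \<Phi> (DCons tUB DNil))"
    "s4 3 = DCons (enc_fm (trf ?\<psi>)) (s3 3)" "s4 4 = cfd ?\<psi> (s3 4)" "s4 5 = ufd ?\<psi> (s3 5)" "s4 6 = s3 6"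
    "t4 \<le> 2 * KB * dsize (enc_fm ?\<psi>)"
    using run_F[OF mat_qfree[OF pr]] s3(1) unfolding RUN_def by blast
  have s4: "s4 4 = enc_fm (cf ?\<psi> C0)" "s4 5 = encl (uf ?\<psi> [nm []])" "s4 6 = qd ?q" "s4 3 = DCons (enc_fm (trf ?\<psi>)) DNil"
    using F s3 by (simp_all add: cfd_enc ufd_enc[of _ "[nm []]", simplified])
  obtain t5 where t5: "steps (EVar 2) (cp BODY) s4 t5 (sem BODY s4)" "t5 \<le> KB" using body_step[of s4] F by auto
  define M where "M = Mform ?q (cf ?\<psi> C0) (trf ?\<psi>)"
  have s5: "sem BODY s4 2 = mq \<Phi> (DCons tUB DNil) \<and> sem BODY s4 3 = DCons (enc_fm M) DNil \<and> same456 (sem BODY s4) s4"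
    unfolding M_def by (rule qd_FIN[OF F(2) s4(4) s4(3) s4(1)])
  obtain t6 s6 where Q: "steps (EVar 2) (cp BODY) (sem BODY s4) t6 s6" "s6 2 = DCons tUB DNil"
    "s6 3 = DCons (enc_fm (wrapP M \<Phi>)) DNil" "s6 4 = sem BODY s4 4" "s6 5 = sem BODY s4 5" "s6 6 = sem BODY s4 6"
    "t6 \<le> KB * nq \<Phi>"
    using run_MQ[OF pr, of "sem BODY s4" "DCons tUB DNil" M DNil] s5 by blast
  obtain t7 s7 where U: "steps (EVar 2) (cp BODY) s6 t7 s7" "s7 2 = DNil"
    "s7 3 = DCons (enc_fm (fold (qnode ?q) (uf ?\<psi> [nm []]) (wrapP M \<Phi>))) DNil"
    "t7 \<le> KB * (length (uf ?\<psi> [nm []]) + 1)"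
    using run_UB[of s6 DNil "uf ?\<psi> [nm []]" "wrapP M \<Phi>" DNil ?q] Q s5 s4 by auto
  have stm: "steps (EVar 2) (cp BODY) s3 (t4 + (t5 + (t6 + t7))) s7"
    using steps_trans[OF F(1) steps_trans[OF t5(1) steps_trans[OF Q(1) U(1)]]] .
  have ew: "exec (While (EVar 2) (cp BODY)) s3 (t4 + (t5 + (t6 + t7)) + 1 + etime (EVar 2)) s7"
    by (rule steps_while[OF stm]) (simp add: U(2))
  define s8 where "s8 = sem FINAL s7"
  have ef: "exec (cp FINAL) s7 (tm FINAL s7) s8" unfolding s8_def by (rule exec_comp) (simp add: FINAL_def)
  have s8: "s8 1 = enc_fm (outf \<Phi>)" using U(3) by (simp add: s8_def FINAL_def outf_def M_def)
  have ex: "exec PROG s0 (tm INIT s0 + ((ta + 1 + etime PAG) + (tm MID s2 + ((t4 + (t5 + (t6 + t7)) + 1 + etime (EVar 2)) + tm FINAL s7)))) s8"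
    unfolding PROG_def by (intro exec.intros(2)[OF i1] exec.intros(2)[OF ea] exec.intros(2)[OF em] exec.intros(2)[OF ew ef])
  have "run PROG (enc_fm \<Phi>) (tm INIT s0 + ((ta + 1 + etime PAG) + (tm MID s2 + ((t4 + (t5 + (t6 + t7)) + 1 + etime (EVar 2)) + tm FINAL s7)))) (enc_fm (outf \<Phi>))"
    unfolding run_def using ex s8 by (auto simp: s0_def)
  moreover have "tm INIT s0 + ((ta + 1 + etime PAG) + (tm MID s2 + ((t4 + (t5 + (t6 + t7)) + 1 + etime (EVar 2)) + tm FINAL s7))) \<le> TB \<Phi>"
    using tm_cost[of INIT s0] tm_cost[of MID s2] tm_cost[of FINAL s7] A(8) F(7) t5(2) Q(7) U(4)
    unfolding TB_def by simp
  ultimately show ?thesis by blast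
qed


fun pv :: "fm \<Rightarrow> nat set" where
  "pv (FAll x p) = insert x (pv p)"
| "pv (FEx x p) = insert x (pv p)"
| "pv p = {}"

lemma ffv_prenex: "prenex \<phi> \<Longrightarrow> ffv \<phi> = ffv (mat \<phi>) - pv \<phi>"
  by (induction rule: prenex.induct) (case_tac p; auto)+

lemma ffv_wrapP: "prenex \<phi> \<Longrightarrow> ffv (wrapP M \<phi>) = ffv M - (\<lambda>x. 2 * x + 1) ` pv \<phi>"
  by (induction rule: prenex.induct) (case_tac p; auto)+

lemma trf_wrapP: "prenex \<phi> \<Longrightarrow> trf \<phi> = wrapP (trf (mat \<phi>)) \<phi>"
  by (induction rule: prenex.induct) (case_tac p; auto)+

lemma fconsts_prenex: "prenex \<phi> \<Longrightarrow> fconsts (mat \<phi>) = fconsts \<phi>"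
  by (induction rule: prenex.induct) (case_tac p; auto)+

lemma fconsts_wrapP: "prenex \<phi> \<Longrightarrow> fconsts (wrapP M \<phi>) = fconsts M"
  by (induction rule: prenex.induct) (case_tac p; auto)+

lemma prenex_wrapP: "prenex \<phi> \<Longrightarrow> qfree M \<Longrightarrow> prenex (wrapP M \<phi>)"
  by (induction rule: prenex.induct) (case_tac p; auto intro: prenex.intros)+

lemma prenex_fold: "prenex \<phi> \<Longrightarrow> prenex (fold (qnode q) Us \<phi>)"
proof (induction Us arbitrary: \<phi>)
  case Nil then show ?case by simp
next
  case (Cons u Us)
  have "prenex (qnode q u \<phi>)" using Cons.prems by (simp add: qnode_def prenex.intros)
  then show ?case using Cons.IH by simp
qed

lemma ffv_fold: "ffv (fold (qnode q) Us \<phi>) = ffv \<phi> - set Us"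
  by (induction Us arbitrary: \<phi>) (auto simp: qnode_def)

lemma fconsts_fold: "fconsts (fold (qnode q) Us \<phi>) = fconsts \<phi>"
  by (induction Us arbitrary: \<phi>) (auto simp: qnode_def)

lemma qprefix_fold: "qprefix (fold (qnode q) Us \<phi>) = replicate (length Us) q @ qprefix \<phi>"
  by (induction Us arbitrary: \<phi>) (auto simp: qnode_def replicate_app_Cons_same)

lemma qprefix_wrapP: "prenex \<phi> \<Longrightarrow> qprefix (wrapP (Mform q C \<psi>) \<phi>) = qprefix \<phi>"
  by (induction rule: prenex.induct) (case_tac p; auto simp: Mform_def)+

lemma switches_rep: "l = [] \<or> hd l = q \<Longrightarrow> switches (replicate n q @ l) = switches l"
proof (induction n)
  case 0 then show ?case by simp
next
  case (Suc n)
  then show ?case by (cases n; cases l) auto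
qed

lemma qprefix_hd: "prenex \<Phi> \<Longrightarrow> qprefix \<Phi> = [] \<or> hd (qprefix \<Phi>) = Qb \<Phi>"
  by (cases \<Phi>) (auto elim: prenex.cases)

definition ovr :: "(nat \<Rightarrow> tree) \<Rightarrow> nat set \<Rightarrow> (nat \<Rightarrow> tree) \<Rightarrow> nat \<Rightarrow> tree" where
  "ovr e S f = (\<lambda>v. if v \<in> S then f v else e v)"

lemma holds_fold_ex: "holds e (fold (qnode False) Us \<phi>) = (\<exists>f. (\<forall>v. canonical (f v)) \<and> holds (ovr e (set Us) f) \<phi>)"
proof (induction Us arbitrary: \<phi>)
  case Nil
  show ?case by (auto simp: ovr_def intro!: exI[of _ "\<lambda>_. Leaf False"])
next
  case (Cons u Us)
  have "holds e (fold (qnode False) (u # Us) \<phi>) = holds e (fold (qnode False) Us (FEx u \<phi>))"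
    by (simp add: qnode_def)
  also have "\<dots> = (\<exists>f. (\<forall>v. canonical (f v)) \<and> holds (ovr e (set Us) f) (FEx u \<phi>))"
    by (rule Cons.IH)
  also have "\<dots> = (\<exists>f. (\<forall>v. canonical (f v)) \<and> holds (ovr e (set (u # Us)) f) \<phi>)"
  proof
    assume "\<exists>f. (\<forall>v. canonical (f v)) \<and> holds (ovr e (set Us) f) (FEx u \<phi>)"
    then obtain f t where f: "\<forall>v. canonical (f v)" "canonical t" "holds ((ovr e (set Us) f)(u := t)) \<phi>" by auto
    have "(ovr e (set Us) f)(u := t) = ovr e (set (u # Us)) (f(u := t))" by (auto simp: ovr_def)
    then show "\<exists>f. (\<forall>v. canonical (f v)) \<and> holds (ovr e (set (u # Us)) f) \<phi>"
      using f by (intro exI[of _ "f(u := t)"]) auto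
  next
    assume "\<exists>f. (\<forall>v. canonical (f v)) \<and> holds (ovr e (set (u # Us)) f) \<phi>"
    then obtain f where f: "\<forall>v. canonical (f v)" "holds (ovr e (set (u # Us)) f) \<phi>" by auto
    have "(ovr e (set Us) f)(u := f u) = ovr e (set (u # Us)) f" by (auto simp: ovr_def)
    then show "\<exists>f. (\<forall>v. canonical (f v)) \<and> holds (ovr e (set Us) f) (FEx u \<phi>)"
      using f by (intro exI[of _ f]) (auto intro!: exI[of _ "f u"])
  qed
  finally show ?case .
qed

lemma holds_fold_all: "holds e (fold (qnode True) Us \<phi>) = (\<forall>f. (\<forall>v. canonical (f v)) \<longrightarrow> holds (ovr e (set Us) f) \<phi>)"
proof (induction Us arbitrary: \<phi>)
  case Nil
  have "\<And>f. holds (ovr e {} f) \<phi> = holds e \<phi>" by (simp add: ovr_def)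
  then show ?case by (auto intro: exI[of _ "\<lambda>_. Leaf False"])
next
  case (Cons u Us)
  have "holds e (fold (qnode True) (u # Us) \<phi>) = holds e (fold (qnode True) Us (FAll u \<phi>))"
    by (simp add: qnode_def)
  also have "\<dots> = (\<forall>f. (\<forall>v. canonical (f v)) \<longrightarrow> holds (ovr e (set Us) f) (FAll u \<phi>))"
    by (rule Cons.IH)
  also have "\<dots> = (\<forall>f. (\<forall>v. canonical (f v)) \<longrightarrow> holds (ovr e (set (u # Us)) f) \<phi>)"
  proof
    assume A: "\<forall>f. (\<forall>v. canonical (f v)) \<longrightarrow> holds (ovr e (set Us) f) (FAll u \<phi>)"
    show "\<forall>f. (\<forall>v. canonical (f v)) \<longrightarrow> holds (ovr e (set (u # Us)) f) \<phi>"
    proof (intro allI impI)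
      fix f :: "nat \<Rightarrow> tree" assume f: "\<forall>v. canonical (f v)"
      have e: "(ovr e (set Us) f)(u := f u) = ovr e (set (u # Us)) f" by (auto simp: ovr_def)
      have "holds ((ovr e (set Us) f)(u := f u)) \<phi>" using A f by simp
      then show "holds (ovr e (set (u # Us)) f) \<phi>" unfolding e .
    qed
  next
    assume A: "\<forall>f. (\<forall>v. canonical (f v)) \<longrightarrow> holds (ovr e (set (u # Us)) f) \<phi>"
    show "\<forall>f. (\<forall>v. canonical (f v)) \<longrightarrow> holds (ovr e (set Us) f) (FAll u \<phi>)"
    proof (intro allI impI)
      fix f :: "nat \<Rightarrow> tree" assume f: "\<forall>v. canonical (f v)"
      have "\<And>t. canonical t \<Longrightarrow> holds ((ovr e (set Us) f)(u := t)) \<phi>"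
      proof -
        fix t assume t: "canonical t"
        have "(ovr e (set Us) f)(u := t) = ovr e (set (u # Us)) (f(u := t))" by (auto simp: ovr_def)
        then show "holds ((ovr e (set Us) f)(u := t)) \<phi>" using A f t by auto
      qed
      then show "holds (ovr e (set Us) f) (FAll u \<phi>)" by simp
    qed
  qed
  finally show ?case .
qed

lemma holds_wrap_and: "prenex \<phi> \<Longrightarrow> \<forall>x\<in>pv \<phi>. 2 * x + 1 \<notin> ffv C \<Longrightarrow>
   holds e (wrapP (FAnd C \<psi>) \<phi>) = (holds e C \<and> holds e (wrapP \<psi> \<phi>))"
proof (induction \<phi> arbitrary: e rule: prenex.induct)
  case (1 p) then show ?case by (cases p) auto
next
  case (2 p x)
  have "\<And>t. holds (e(2 * x + 1 := t)) C = holds e C" using 2 by (intro holds_agree) auto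
  moreover have ex: "\<exists>t::tree. canonical t" by (rule exI[of _ "Leaf False"]) simp
  ultimately show ?case using 2 by (simp; blast)
next
  case (3 p x)
  have "\<And>t. holds (e(2 * x + 1 := t)) C = holds e C" using 3 by (intro holds_agree) auto
  moreover have ex: "\<exists>t::tree. canonical t" by (rule exI[of _ "Leaf False"]) simp
  ultimately show ?case using 3 by (simp; blast)
qed

lemma holds_wrap_or: "prenex \<phi> \<Longrightarrow> \<forall>x\<in>pv \<phi>. 2 * x + 1 \<notin> ffv C \<Longrightarrow>
   holds e (wrapP (FOr (FNot C) \<psi>) \<phi>) = (\<not> holds e C \<or> holds e (wrapP \<psi> \<phi>))"
proof (induction \<phi> arbitrary: e rule: prenex.induct)
  case (1 p) then show ?case by (cases p) auto
next
  case (2 p x)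
  have "\<And>t. holds (e(2 * x + 1 := t)) C = holds e C" using 2 by (intro holds_agree) auto
  moreover have ex: "\<exists>t::tree. canonical t" by (rule exI[of _ "Leaf False"]) simp
  ultimately show ?case using 2 by (simp; blast)
next
  case (3 p x)
  have "\<And>t. holds (e(2 * x + 1 := t)) C = holds e C" using 3 by (intro holds_agree) auto
  moreover have ex: "\<exists>t::tree. canonical t" by (rule exI[of _ "Leaf False"]) simp
  ultimately show ?case using 3 by (simp; blast)
qed

lemma estd_consf: "holds estd (consf rp)"
proof -
  have j: "tjoin (place (rev rp @ [False]) (Leaf True)) (place (rev rp @ [True]) (Leaf True)) = place (rev rp) (Leaf True)"
    by (rule den_inj) (auto simp: den_place_T sprefix_snoc place_T_can)
  have m: "tmeet (place (rev rp @ [False]) (Leaf True)) (place (rev rp @ [True]) (Leaf True)) = Leaf False"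
    by (rule den_inj) (auto simp: den_place_T sprefix_snoc)
  show ?thesis using j m place_T_nz by (simp add: holds_consf)
qed

lemma estd_C0: "holds estd C0" by (simp add: C0_def)


lemma qfree_trf: "qfree \<phi> \<Longrightarrow> qfree (trf \<phi>)" by (induction \<phi>) auto
lemma qfree_cf: "qfree C \<Longrightarrow> qfree (cf \<phi> C)"
proof -
  have k: "qfree C \<Longrightarrow> qfree (ck c rp C)" for c rp C by (induction c arbitrary: rp C) (auto simp: consf_def)
  have t: "qfree C \<Longrightarrow> qfree (ct a C)" for a C using k by (induction a arbitrary: C) auto
  show "qfree C \<Longrightarrow> qfree (cf \<phi> C)" using t by (induction \<phi> arbitrary: C) auto
qed

lemma NMs_even: "v \<in> NMs \<phi> \<Longrightarrow> even v" by (auto simp: NMs_def NK_def nm_even)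

lemma CN_prenex: "prenex \<Phi> \<Longrightarrow> CN (mat \<Phi>) = CN \<Phi>" by (simp add: CN_def fconsts_prenex)
lemma NMs_prenex: "prenex \<Phi> \<Longrightarrow> NMs (mat \<Phi>) = NMs \<Phi>" by (simp add: NMs_def fconsts_prenex)

lemma ovr_can: "\<forall>v. canonical (e v) \<Longrightarrow> \<forall>v. canonical (f v) \<Longrightarrow> \<forall>v. canonical (ovr e S f v)"
  by (simp add: ovr_def)

theorem outf_props:
  assumes sen: "sentence \<Phi>" and pr: "prenex \<Phi>" and kc: "\<forall>k\<in>fconsts \<Phi>. canonical k"
  shows "sentence (outf \<Phi>) \<and> prenex (outf \<Phi>) \<and> fconsts (outf \<Phi>) \<subseteq> {Leaf True, Leaf False} \<and>
     alternations (outf \<Phi>) = alternations \<Phi> \<and> (models_B \<Phi> \<longleftrightarrow> models_B (outf \<Phi>))"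
proof -
  define \<psi> where "\<psi> = mat \<Phi>"
  define q where "q = Qb \<Phi>"
  define C where "C = cf \<psi> C0"
  define Us where "Us = uf \<psi> [nm []]"
  define M where "M = Mform q C (trf \<psi>)"
  have out: "outf \<Phi> = fold (qnode q) Us (wrapP M \<Phi>)"
    by (simp add: outf_def \<psi>_def q_def C_def Us_def M_def)
  have qp: "qfree \<psi>" unfolding \<psi>_def by (rule mat_qfree[OF pr])
  have qC: "qfree C" unfolding C_def by (rule qfree_cf) (simp add: C0_def)
  have qM: "qfree M" using qp qC by (simp add: M_def Mform_def qfree_trf)
  have sU: "set Us = NMs \<psi>" by (simp add: Us_def set_uf0)
  have fC: "ffv C \<subseteq> NMs \<psi>"
    using ffv_cf[of \<psi> C0] by (auto simp: C_def C0_def NMs_def)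
  have fpsi: "ffv \<psi> \<subseteq> pv \<Phi>" using ffv_prenex[OF pr] sen by (auto simp: sentence_def \<psi>_def)
  have ft: "ffv (trf \<psi>) \<subseteq> (\<lambda>x. 2 * x + 1) ` pv \<Phi> \<union> NMs \<psi>" using ffv_trf[of \<psi>] fpsi by blast
  have s1: "sentence (outf \<Phi>)"
    using fC ft sU unfolding sentence_def out ffv_fold ffv_wrapP[OF pr] by (auto simp: M_def Mform_def)
  have s2: "prenex (outf \<Phi>)" unfolding out by (intro prenex_fold prenex_wrapP pr qM)
  have cC: "fconsts C \<subseteq> {Leaf True, Leaf False}" unfolding C_def by (rule fconsts_cf) (simp add: C0_def)
  have s3: "fconsts (outf \<Phi>) \<subseteq> {Leaf True, Leaf False}"
    unfolding out fconsts_fold fconsts_wrapP[OF pr] using cC fconsts_trf[of \<psi>] by (auto simp: M_def Mform_def)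
  have s4: "alternations (outf \<Phi>) = alternations \<Phi>"
    unfolding alternations_def out qprefix_fold M_def qprefix_wrapP[OF pr]
    by (rule switches_rep) (use qprefix_hd[OF pr] in \<open>simp add: q_def\<close>)
  have evC: "\<forall>x\<in>pv \<Phi>. 2 * x + 1 \<notin> ffv C" using fC NMs_even by fastforce
  have tw: "wrapP (trf \<psi>) \<Phi> = trf \<Phi>" using trf_wrapP[OF pr] by (simp add: \<psi>_def)
  have core: "\<And>e. \<forall>v. canonical (e v) \<Longrightarrow> holds e C \<Longrightarrow> holds e (trf \<Phi>) = models_B \<Phi>"
  proof -
    fix e :: "nat \<Rightarrow> tree" assume ce: "\<forall>v. canonical (e v)" and hC: "holds e C"
    have "holds e C0" "\<forall>rp\<in>CN \<Phi>. holds e (consf rp)"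
      using hC unfolding C_def holds_cf CN_prenex[OF pr, folded \<psi>_def] by auto
    then show "holds e (trf \<Phi>) = models_B \<Phi>"
      using main_sem[OF ce _ _ kc] sen by (simp add: sentence_def)
  qed
  define e0 :: "nat \<Rightarrow> tree" where "e0 = (\<lambda>_. Leaf False)"
  have ce0: "\<forall>v. canonical (e0 v)" by (simp add: e0_def)
  have wit: "holds (ovr e0 (set Us) estd) C"
  proof -
    have "holds estd C" unfolding C_def holds_cf using estd_C0 estd_consf by auto
    moreover have "\<forall>v\<in>ffv C. ovr e0 (set Us) estd v = estd v" using fC sU by (auto simp: ovr_def)
    ultimately show ?thesis using holds_agree[of C "ovr e0 (set Us) estd" estd] by simp
  qed
  have cwit: "\<forall>v. canonical (ovr e0 (set Us) estd v)" using ovr_can[OF ce0] estd_can by blast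
  have s5: "models_B \<Phi> \<longleftrightarrow> models_B (outf \<Phi>)"
  proof (cases q)
    case True
    have "models_B (outf \<Phi>) = (\<forall>f. (\<forall>v. canonical (f v)) \<longrightarrow> holds (ovr e0 (set Us) f) (wrapP (FOr (FNot C) (trf \<psi>)) \<Phi>))"
      unfolding models_B_def out using True by (simp add: M_def Mform_def holds_fold_all e0_def)
    also have "\<dots> = (\<forall>f. (\<forall>v. canonical (f v)) \<longrightarrow> (holds (ovr e0 (set Us) f) C \<longrightarrow> holds (ovr e0 (set Us) f) (trf \<Phi>)))"
      using holds_wrap_or[OF pr evC] tw by simp
    also have "\<dots> = models_B \<Phi>"
    proof
      assume A: "\<forall>f. (\<forall>v. canonical (f v)) \<longrightarrow> (holds (ovr e0 (set Us) f) C \<longrightarrow> holds (ovr e0 (set Us) f) (trf \<Phi>))"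
      have "holds (ovr e0 (set Us) estd) (trf \<Phi>)" using A estd_can wit by blast
      then show "models_B \<Phi>" using core[OF cwit wit] by simp
    next
      assume m: "models_B \<Phi>"
      show "\<forall>f. (\<forall>v. canonical (f v)) \<longrightarrow> (holds (ovr e0 (set Us) f) C \<longrightarrow> holds (ovr e0 (set Us) f) (trf \<Phi>))"
      proof (intro allI impI)
        fix f :: "nat \<Rightarrow> tree" assume cf: "\<forall>v. canonical (f v)" and hc: "holds (ovr e0 (set Us) f) C"
        show "holds (ovr e0 (set Us) f) (trf \<Phi>)" using core[OF ovr_can[OF ce0 cf] hc] m by simp
      qed
    qed
    finally show ?thesis by simp
  next
    case False
    have "models_B (outf \<Phi>) = (\<exists>f. (\<forall>v. canonical (f v)) \<and> holds (ovr e0 (set Us) f) (wrapP (FAnd C (trf \<psi>)) \<Phi>))"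
      unfolding models_B_def out using False by (simp add: M_def Mform_def holds_fold_ex e0_def)
    also have "\<dots> = (\<exists>f. (\<forall>v. canonical (f v)) \<and> holds (ovr e0 (set Us) f) C \<and> holds (ovr e0 (set Us) f) (trf \<Phi>))"
      using holds_wrap_and[OF pr evC] tw by simp
    also have "\<dots> = models_B \<Phi>"
    proof
      assume "\<exists>f. (\<forall>v. canonical (f v)) \<and> holds (ovr e0 (set Us) f) C \<and> holds (ovr e0 (set Us) f) (trf \<Phi>)"
      then obtain f where cf: "\<forall>v. canonical (f v)" and hc: "holds (ovr e0 (set Us) f) C"
        and ht: "holds (ovr e0 (set Us) f) (trf \<Phi>)" by blast
      then show "models_B \<Phi>" using core[OF ovr_can[OF ce0 cf] hc] by simp
    next
      assume m: "models_B \<Phi>"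
      have "holds (ovr e0 (set Us) estd) (trf \<Phi>)" using core[OF cwit wit] m by simp
      then show "\<exists>f. (\<forall>v. canonical (f v)) \<and> holds (ovr e0 (set Us) f) C \<and> holds (ovr e0 (set Us) f) (trf \<Phi>)"
        using estd_can wit by blast
    qed
    finally show ?thesis by simp
  qed
  show ?thesis using s1 s2 s3 s4 s5 by blast
qed


lemma ds_tg[simp]: "dsize (tg k) = 2 * k + 1" by (induction k) auto

lemma ds_xn: "dsize (enc_nat (xn rp)) \<le> 5 + 4 * length rp"
proof (induction rp)
  case Nil then show ?case by simp
next
  case (Cons b rp)
  then show ?case by (cases b) auto
qed

lemma ds_nm: "dsize (enc_nat (nm rp)) \<le> 7 + 4 * length rp"
  using ds_xn[of rp] by (simp add: enc_nm)

lemma ds_tree_pos: "dsize (enc_tree c) \<ge> 3" by (cases c) auto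

lemma ds_trk: "dsize (enc_trm (trk c rp)) \<le> dsize (enc_tree c) * (9 + 4 * (length rp + dsize (enc_tree c)))"
proof (induction c arbitrary: rp)
  case (Leaf b)
  show ?case
  proof (cases b)
    case True
    then show ?thesis using ds_nm[of rp] by simp
  next
    case False
    then show ?thesis by simp
  qed
next
  case (Node l r)
  define dl where "dl = dsize (enc_tree l)"
  define dr where "dr = dsize (enc_tree r)"
  define dN where "dN = dsize (enc_tree (Node l r))"
  have dN: "dN = 5 + dl + dr" by (simp add: dN_def dl_def dr_def)
  define K where "K = 9 + 4 * (length rp + dN)"
  have A: "dsize (enc_trm (trk l (False # rp))) \<le> dl * K"
  proof -
    have "dsize (enc_trm (trk l (False # rp))) \<le> dl * (9 + 4 * (length (False # rp) + dl))"
      using Node.IH(1)[of "False # rp"] by (simp add: dl_def)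
    also have "\<dots> \<le> dl * K" unfolding K_def using dN by (intro mult_le_mono2) simp
    finally show ?thesis .
  qed
  have B: "dsize (enc_trm (trk r (True # rp))) \<le> dr * K"
  proof -
    have "dsize (enc_trm (trk r (True # rp))) \<le> dr * (9 + 4 * (length (True # rp) + dr))"
      using Node.IH(2)[of "True # rp"] by (simp add: dr_def)
    also have "\<dots> \<le> dr * K" unfolding K_def using dN by (intro mult_le_mono2) simp
    finally show ?thesis .
  qed
  have "dsize (enc_trm (trk (Node l r) rp)) = 7 + dsize (enc_trm (trk l (False # rp))) + dsize (enc_trm (trk r (True # rp)))"
    by simp
  also have "\<dots> \<le> 7 + dl * K + dr * K" using A B by simp
  also have "\<dots> \<le> dN * K" unfolding dN K_def by (simp add: algebra_simps)
  finally show ?case by (simp add: dN_def K_def)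
qed

lemma ds_const_le_t: "c \<in> tconsts a \<Longrightarrow> dsize (enc_tree c) \<le> dsize (enc_trm a)"
  by (induction a) auto

lemma ds_const_le: "c \<in> fconsts \<phi> \<Longrightarrow> dsize (enc_tree c) \<le> dsize (enc_fm \<phi>)"
  by (induction \<phi>) (auto dest: ds_const_le_t)

lemma ds_trt: "\<forall>c\<in>tconsts a. dsize (enc_tree c) \<le> N \<Longrightarrow> dsize (enc_trm (trt a)) \<le> dsize (enc_trm a) * (13 + 4 * N)"
proof (induction a)
  case (TVar x)
  have a: "dsize (enc_nat x) \<le> dsize (enc_nat x) * (13 + 4 * N)" by simp
  have b: "dsize (enc_trm (trt (TVar x))) = 6 + dsize (enc_nat x)" by simp
  have c: "dsize (enc_trm (TVar x)) * (13 + 4 * N) = 2 * (13 + 4 * N) + dsize (enc_nat x) * (13 + 4 * N)"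
    by (simp add: algebra_simps)
  show ?case unfolding b c by (simp add: algebra_simps)
next
  case (TConst c)
  have d: "dsize (enc_tree c) \<le> N" using TConst by simp
  have "dsize (enc_trm (trt (TConst c))) \<le> dsize (enc_tree c) * (9 + 4 * (0 + dsize (enc_tree c)))"
    using ds_trk[of c "[]"] by simp
  also have "\<dots> \<le> dsize (enc_tree c) * (13 + 4 * N)" using d by (intro mult_le_mono2) simp
  also have "\<dots> \<le> dsize (enc_trm (TConst c)) * (13 + 4 * N)" by (intro mult_le_mono1) simp
  finally show ?case .
next
  case (TJoin a b)
  then show ?case by (simp add: algebra_simps)
next
  case (TMeet a b)
  then show ?case by (simp add: algebra_simps)
next
  case (TCompl a)
  then show ?case by (simp add: algebra_simps)
qed

lemma ds_trf: "\<forall>c\<in>fconsts \<phi>. dsize (enc_tree c) \<le> N \<Longrightarrow> dsize (enc_fm (trf \<phi>)) \<le> dsize (enc_fm \<phi>) * (13 + 4 * N)"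
proof (induction \<phi>)
  case (FEq a b)
  then show ?case using ds_trt[of a N] ds_trt[of b N] by (simp add: algebra_simps)
next
  case (FAll x p)
  define K where "K = 13 + 4 * N"
  have e: "dsize (enc_nat (2 * x + 1)) = 4 + dsize (enc_nat x)" by (simp add: enc_ren)
  have ih: "dsize (enc_fm (trf p)) \<le> dsize (enc_fm p) * K" using FAll by (simp add: K_def)
  have k: "1 \<le> K" by (simp add: K_def)
  have "dsize (enc_fm (trf (FAll x p))) = 15 + dsize (enc_nat x) + dsize (enc_fm (trf p))" by (simp add: e)
  also have "\<dots> \<le> 11 * K + dsize (enc_nat x) * K + dsize (enc_fm p) * K"
    using ih k by (intro add_mono) (auto simp: K_def)
  also have "\<dots> = (11 + dsize (enc_nat x) + dsize (enc_fm p)) * K" by (simp add: algebra_simps)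
  also have "\<dots> = dsize (enc_fm (FAll x p)) * K" by (simp add: algebra_simps)
  finally show ?case by (simp add: K_def)
next
  case (FEx x p)
  define K where "K = 13 + 4 * N"
  have e: "dsize (enc_nat (2 * x + 1)) = 4 + dsize (enc_nat x)" by (simp add: enc_ren)
  have ih: "dsize (enc_fm (trf p)) \<le> dsize (enc_fm p) * K" using FEx by (simp add: K_def)
  have k: "1 \<le> K" by (simp add: K_def)
  have "dsize (enc_fm (trf (FEx x p))) = 17 + dsize (enc_nat x) + dsize (enc_fm (trf p))" by (simp add: e)
  also have "\<dots> \<le> 13 * K + dsize (enc_nat x) * K + dsize (enc_fm p) * K"
    using ih k by (intro add_mono) (auto simp: K_def)
  also have "\<dots> = (13 + dsize (enc_nat x) + dsize (enc_fm p)) * K" by (simp add: algebra_simps)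
  also have "\<dots> = dsize (enc_fm (FEx x p)) * K" by (simp add: algebra_simps)
  finally show ?case by (simp add: K_def)
qed (simp_all add: algebra_simps)


lemma ds_consf: "dsize (enc_fm (consf rp)) \<le> 250 + 28 * length rp"
  using ds_xn[of rp] by (simp add: consf_def enc_nm)

lemma ds_ck: "dsize (enc_fm (ck c rp C)) \<le> dsize (enc_fm C) + dsize (enc_tree c) * (260 + 28 * (length rp + dsize (enc_tree c)))"
proof (induction c arbitrary: rp C)
  case (Leaf x) then show ?case by simp
next
  case (Node l r)
  define dl where "dl = dsize (enc_tree l)"
  define dr where "dr = dsize (enc_tree r)"
  define dN where "dN = dsize (enc_tree (Node l r))"
  have dN: "dN = 5 + dl + dr" by (simp add: dN_def dl_def dr_def)
  define K where "K = 260 + 28 * (length rp + dN)"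
  have kl: "dl * (260 + 28 * (length (False # rp) + dl)) \<le> dl * K" unfolding K_def using dN by (intro mult_le_mono2) simp
  have kr: "dr * (260 + 28 * (length (True # rp) + dr)) \<le> dr * K" unfolding K_def using dN by (intro mult_le_mono2) simp
  have A: "dsize (enc_fm (ck l (False # rp) (FAnd (consf rp) C))) \<le> dsize (enc_fm (FAnd (consf rp) C)) + dl * K"
    using Node.IH(1)[of "False # rp" "FAnd (consf rp) C", folded dl_def] kl by linarith
  have B: "dsize (enc_fm (ck (Node l r) rp C)) \<le> dsize (enc_fm (ck l (False # rp) (FAnd (consf rp) C))) + dr * K"
    using Node.IH(2)[of "True # rp" "ck l (False # rp) (FAnd (consf rp) C)", folded dr_def] kr by (simp only: ck.simps; linarith)
  have c: "dsize (enc_fm (FAnd (consf rp) C)) \<le> 257 + 28 * length rp + dsize (enc_fm C)"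
    using ds_consf[of rp] by simp
  have "dsize (enc_fm (ck (Node l r) rp C)) \<le> 257 + 28 * length rp + dsize (enc_fm C) + dl * K + dr * K"
    using A B c by linarith
  also have "\<dots> \<le> dsize (enc_fm C) + dN * K" unfolding dN K_def by (simp add: algebra_simps)
  finally show ?case by (simp add: dN_def K_def)
qed

lemma ds_ct: "\<forall>c\<in>tconsts a. dsize (enc_tree c) \<le> N \<Longrightarrow>
  dsize (enc_fm (ct a C)) \<le> dsize (enc_fm C) + dsize (enc_trm a) * (260 + 28 * N)"
proof (induction a arbitrary: C)
  case (TConst c)
  have d: "dsize (enc_tree c) \<le> N" using TConst by simp
  have "dsize (enc_fm (ct (TConst c) C)) \<le> dsize (enc_fm C) + dsize (enc_tree c) * (260 + 28 * (0 + dsize (enc_tree c)))"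
    using ds_ck[of c "[]" C] by simp
  also have "\<dots> \<le> dsize (enc_fm C) + dsize (enc_tree c) * (260 + 28 * N)" using d by simp
  also have "\<dots> \<le> dsize (enc_fm C) + dsize (enc_trm (TConst c)) * (260 + 28 * N)" by simp
  finally show ?case .
next
  case (TJoin a b)
  have "dsize (enc_fm (ct (TJoin a b) C)) \<le> dsize (enc_fm C) + dsize (enc_trm a) * (260 + 28 * N) + dsize (enc_trm b) * (260 + 28 * N)"
  proof -
    have h1: "dsize (enc_fm (ct a C)) \<le> dsize (enc_fm C) + dsize (enc_trm a) * (260 + 28 * N)" using TJoin.IH(1)[of C] TJoin.prems by simp
    have h2: "dsize (enc_fm (ct b (ct a C))) \<le> dsize (enc_fm (ct a C)) + dsize (enc_trm b) * (260 + 28 * N)" using TJoin.IH(2)[of "ct a C"] TJoin.prems by simp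
    show ?thesis using h1 h2 by (simp only: ct.simps cf.simps; linarith)
  qed
  then show ?case by (simp add: algebra_simps)
next
  case (TMeet a b)
  have "dsize (enc_fm (ct (TMeet a b) C)) \<le> dsize (enc_fm C) + dsize (enc_trm a) * (260 + 28 * N) + dsize (enc_trm b) * (260 + 28 * N)"
  proof -
    have h1: "dsize (enc_fm (ct a C)) \<le> dsize (enc_fm C) + dsize (enc_trm a) * (260 + 28 * N)" using TMeet.IH(1)[of C] TMeet.prems by simp
    have h2: "dsize (enc_fm (ct b (ct a C))) \<le> dsize (enc_fm (ct a C)) + dsize (enc_trm b) * (260 + 28 * N)" using TMeet.IH(2)[of "ct a C"] TMeet.prems by simp
    show ?thesis using h1 h2 by (simp only: ct.simps cf.simps; linarith)
  qed
  then show ?case by (simp add: algebra_simps)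
next
  case (TCompl a)
  define K where "K = 260 + 28 * N"
  have "dsize (enc_fm (ct a C)) \<le> dsize (enc_fm C) + dsize (enc_trm a) * K" using TCompl by (simp add: K_def)
  moreover have "dsize (enc_trm a) * K \<le> dsize (enc_trm (TCompl a)) * K" by (intro mult_le_mono1) simp
  ultimately show ?case by (simp add: K_def)
qed auto

lemma ds_cf: "\<forall>c\<in>fconsts \<phi>. dsize (enc_tree c) \<le> N \<Longrightarrow>
  dsize (enc_fm (cf \<phi> C)) \<le> dsize (enc_fm C) + dsize (enc_fm \<phi>) * (260 + 28 * N)"
proof (induction \<phi> arbitrary: C)
  case (FEq a b)
  have "dsize (enc_fm (cf (FEq a b) C)) \<le> dsize (enc_fm C) + dsize (enc_trm a) * (260 + 28 * N) + dsize (enc_trm b) * (260 + 28 * N)"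
  proof -
    have h1: "dsize (enc_fm (ct a C)) \<le> dsize (enc_fm C) + dsize (enc_trm a) * (260 + 28 * N)" using ds_ct[of a N C] FEq.prems by simp
    have h2: "dsize (enc_fm (ct b (ct a C))) \<le> dsize (enc_fm (ct a C)) + dsize (enc_trm b) * (260 + 28 * N)" using ds_ct[of b N "ct a C"] FEq.prems by simp
    show ?thesis using h1 h2 by (simp only: ct.simps cf.simps; linarith)
  qed
  then show ?case by (simp add: algebra_simps)
next
  case (FAnd p q)
  have "dsize (enc_fm (cf (FAnd p q) C)) \<le> dsize (enc_fm C) + dsize (enc_fm p) * (260 + 28 * N) + dsize (enc_fm q) * (260 + 28 * N)"
  proof -
    have h1: "dsize (enc_fm (cf p C)) \<le> dsize (enc_fm C) + dsize (enc_fm p) * (260 + 28 * N)" using FAnd.IH(1)[of C] FAnd.prems by simp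
    have h2: "dsize (enc_fm (cf q (cf p C))) \<le> dsize (enc_fm (cf p C)) + dsize (enc_fm q) * (260 + 28 * N)" using FAnd.IH(2)[of "cf p C"] FAnd.prems by simp
    show ?thesis using h1 h2 by (simp only: ct.simps cf.simps; linarith)
  qed
  then show ?case by (simp add: algebra_simps)
next
  case (FOr p q)
  have "dsize (enc_fm (cf (FOr p q) C)) \<le> dsize (enc_fm C) + dsize (enc_fm p) * (260 + 28 * N) + dsize (enc_fm q) * (260 + 28 * N)"
  proof -
    have h1: "dsize (enc_fm (cf p C)) \<le> dsize (enc_fm C) + dsize (enc_fm p) * (260 + 28 * N)" using FOr.IH(1)[of C] FOr.prems by simp
    have h2: "dsize (enc_fm (cf q (cf p C))) \<le> dsize (enc_fm (cf p C)) + dsize (enc_fm q) * (260 + 28 * N)" using FOr.IH(2)[of "cf p C"] FOr.prems by simp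
    show ?thesis using h1 h2 by (simp only: ct.simps cf.simps; linarith)
  qed
  then show ?case by (simp add: algebra_simps)
next
  case (FNot p)
  define K where "K = 260 + 28 * N"
  have "dsize (enc_fm (cf p C)) \<le> dsize (enc_fm C) + dsize (enc_fm p) * K" using FNot by (simp add: K_def)
  moreover have "dsize (enc_fm p) * K \<le> dsize (enc_fm (FNot p)) * K" by (intro mult_le_mono1) simp
  ultimately show ?case by (simp add: K_def)
next
  case (FAll x p)
  define K where "K = 260 + 28 * N"
  have "dsize (enc_fm (cf p C)) \<le> dsize (enc_fm C) + dsize (enc_fm p) * K" using FAll by (simp add: K_def)
  moreover have "dsize (enc_fm p) * K \<le> dsize (enc_fm (FAll x p)) * K" by (intro mult_le_mono1) simp
  ultimately show ?case by (simp add: K_def)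
next
  case (FEx x p)
  define K where "K = 260 + 28 * N"
  have "dsize (enc_fm (cf p C)) \<le> dsize (enc_fm C) + dsize (enc_fm p) * K" using FEx by (simp add: K_def)
  moreover have "dsize (enc_fm p) * K \<le> dsize (enc_fm (FEx x p)) * K" by (intro mult_le_mono1) simp
  ultimately show ?case by (simp add: K_def)
qed


fun sz :: "nat list \<Rightarrow> nat" where
  "sz [] = 0"
| "sz (u # us) = 13 + dsize (enc_nat u) + sz us"

lemma sz_uk: "sz (uk c rp U) \<le> sz U + dsize (enc_tree c) * (60 + 8 * (length rp + dsize (enc_tree c)))"
proof (induction c arbitrary: rp U)
  case (Leaf x) then show ?case by simp
next
  case (Node l r)
  define dl where "dl = dsize (enc_tree l)"
  define dr where "dr = dsize (enc_tree r)"
  define dN where "dN = dsize (enc_tree (Node l r))"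
  have dN: "dN = 5 + dl + dr" by (simp add: dN_def dl_def dr_def)
  define K where "K = 60 + 8 * (length rp + dN)"
  have kl: "dl * (60 + 8 * (length (False # rp) + dl)) \<le> dl * K" unfolding K_def using dN by (intro mult_le_mono2) simp
  have kr: "dr * (60 + 8 * (length (True # rp) + dr)) \<le> dr * K" unfolding K_def using dN by (intro mult_le_mono2) simp
  define U1 where "U1 = nm (False # rp) # nm (True # rp) # U"
  have A: "sz (uk l (False # rp) U1) \<le> sz U1 + dl * K"
    using Node.IH(1)[of "False # rp" U1, folded dl_def] kl by linarith
  have B: "sz (uk (Node l r) rp U) \<le> sz (uk l (False # rp) U1) + dr * K"
    using Node.IH(2)[of "True # rp" "uk l (False # rp) U1", folded dr_def] kr by (simp only: uk.simps U1_def; linarith)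
  have c: "sz U1 \<le> 48 + 8 * length rp + sz U"
    using ds_nm[of "False # rp"] ds_nm[of "True # rp"] by (simp add: U1_def)
  have "sz (uk (Node l r) rp U) \<le> 48 + 8 * length rp + sz U + dl * K + dr * K"
    using A B c by linarith
  also have "\<dots> \<le> sz U + dN * K" unfolding dN K_def by (simp add: algebra_simps)
  finally show ?case by (simp add: dN_def K_def)
qed

lemma sz_ut: "\<forall>c\<in>tconsts a. dsize (enc_tree c) \<le> N \<Longrightarrow> sz (ut a U) \<le> sz U + dsize (enc_trm a) * (60 + 8 * N)"
proof (induction a arbitrary: U)
  case (TConst c)
  have d: "dsize (enc_tree c) \<le> N" using TConst by simp
  have "sz (ut (TConst c) U) \<le> sz U + dsize (enc_tree c) * (60 + 8 * (0 + dsize (enc_tree c)))"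
    using sz_uk[of c "[]" U] by simp
  also have "\<dots> \<le> sz U + dsize (enc_tree c) * (60 + 8 * N)" using d by simp
  also have "\<dots> \<le> sz U + dsize (enc_trm (TConst c)) * (60 + 8 * N)" by simp
  finally show ?case .
next
  case (TJoin a b)
  have h1: "sz (ut a U) \<le> sz U + dsize (enc_trm a) * (60 + 8 * N)" using TJoin by simp
  have h2: "sz (ut b (ut a U)) \<le> sz (ut a U) + dsize (enc_trm b) * (60 + 8 * N)" using TJoin by simp
  have "sz (ut (TJoin a b) U) \<le> sz U + dsize (enc_trm a) * (60 + 8 * N) + dsize (enc_trm b) * (60 + 8 * N)"
    using h1 h2 by (simp only: ut.simps; linarith)
  then show ?case by (simp add: algebra_simps)
next
  case (TMeet a b)
  have h1: "sz (ut a U) \<le> sz U + dsize (enc_trm a) * (60 + 8 * N)" using TMeet by simp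
  have h2: "sz (ut b (ut a U)) \<le> sz (ut a U) + dsize (enc_trm b) * (60 + 8 * N)" using TMeet by simp
  have "sz (ut (TMeet a b) U) \<le> sz U + dsize (enc_trm a) * (60 + 8 * N) + dsize (enc_trm b) * (60 + 8 * N)"
    using h1 h2 by (simp only: ut.simps; linarith)
  then show ?case by (simp add: algebra_simps)
next
  case (TCompl a)
  define K where "K = 60 + 8 * N"
  have "sz (ut a U) \<le> sz U + dsize (enc_trm a) * K" using TCompl by (simp add: K_def)
  moreover have "dsize (enc_trm a) * K \<le> dsize (enc_trm (TCompl a)) * K" by (intro mult_le_mono1) simp
  ultimately show ?case by (simp add: K_def)
qed auto

lemma sz_uf: "\<forall>c\<in>fconsts \<phi>. dsize (enc_tree c) \<le> N \<Longrightarrow> sz (uf \<phi> U) \<le> sz U + dsize (enc_fm \<phi>) * (60 + 8 * N)"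
proof (induction \<phi> arbitrary: U)
  case (FEq a b)
  have h1: "sz (ut a U) \<le> sz U + dsize (enc_trm a) * (60 + 8 * N)" using sz_ut[of a N U] FEq by simp
  have h2: "sz (ut b (ut a U)) \<le> sz (ut a U) + dsize (enc_trm b) * (60 + 8 * N)" using sz_ut[of b N "ut a U"] FEq by simp
  have "sz (uf (FEq a b) U) \<le> sz U + dsize (enc_trm a) * (60 + 8 * N) + dsize (enc_trm b) * (60 + 8 * N)"
    using h1 h2 by (simp only: uf.simps; linarith)
  then show ?case by (simp add: algebra_simps)
next
  case (FAnd p q)
  have h1: "sz (uf p U) \<le> sz U + dsize (enc_fm p) * (60 + 8 * N)" using FAnd by simp
  have h2: "sz (uf q (uf p U)) \<le> sz (uf p U) + dsize (enc_fm q) * (60 + 8 * N)" using FAnd by simp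
  have "sz (uf (FAnd p q) U) \<le> sz U + dsize (enc_fm p) * (60 + 8 * N) + dsize (enc_fm q) * (60 + 8 * N)"
    using h1 h2 by (simp only: uf.simps; linarith)
  then show ?case by (simp add: algebra_simps)
next
  case (FOr p q)
  have h1: "sz (uf p U) \<le> sz U + dsize (enc_fm p) * (60 + 8 * N)" using FOr by simp
  have h2: "sz (uf q (uf p U)) \<le> sz (uf p U) + dsize (enc_fm q) * (60 + 8 * N)" using FOr by simp
  have "sz (uf (FOr p q) U) \<le> sz U + dsize (enc_fm p) * (60 + 8 * N) + dsize (enc_fm q) * (60 + 8 * N)"
    using h1 h2 by (simp only: uf.simps; linarith)
  then show ?case by (simp add: algebra_simps)
next
  case (FNot p)
  define K where "K = 60 + 8 * N"
  have "sz (uf p U) \<le> sz U + dsize (enc_fm p) * K" using FNot by (simp add: K_def)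
  moreover have "dsize (enc_fm p) * K \<le> dsize (enc_fm (FNot p)) * K" by (intro mult_le_mono1) simp
  ultimately show ?case by (simp add: K_def)
next
  case (FAll x p)
  define K where "K = 60 + 8 * N"
  have "sz (uf p U) \<le> sz U + dsize (enc_fm p) * K" using FAll by (simp add: K_def)
  moreover have "dsize (enc_fm p) * K \<le> dsize (enc_fm (FAll x p)) * K" by (intro mult_le_mono1) simp
  ultimately show ?case by (simp add: K_def)
next
  case (FEx x p)
  define K where "K = 60 + 8 * N"
  have "sz (uf p U) \<le> sz U + dsize (enc_fm p) * K" using FEx by (simp add: K_def)
  moreover have "dsize (enc_fm p) * K \<le> dsize (enc_fm (FEx x p)) * K" by (intro mult_le_mono1) simp
  ultimately show ?case by (simp add: K_def)
qed

lemma len_uk: "length (uk c rp U) \<le> length U + dsize (enc_tree c)"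
proof (induction c arbitrary: rp U)
  case (Leaf x) then show ?case by simp
next
  case (Node l r)
  have h1: "length (uk l (False # rp) (nm (False # rp) # nm (True # rp) # U)) \<le> 2 + length U + dsize (enc_tree l)"
    using Node.IH(1)[of "False # rp" "nm (False # rp) # nm (True # rp) # U"] by simp
  have h2: "length (uk r (True # rp) (uk l (False # rp) (nm (False # rp) # nm (True # rp) # U)))
     \<le> length (uk l (False # rp) (nm (False # rp) # nm (True # rp) # U)) + dsize (enc_tree r)"
    by (rule Node.IH(2))
  show ?case using h1 h2 by simp
qed

lemma len_ut: "length (ut a U) \<le> length U + dsize (enc_trm a)"
proof (induction a arbitrary: U)
  case (TConst c) then show ?case using len_uk[of c "[]" U] by simp
next
  case (TJoin a b)
  have "length (ut a U) \<le> length U + dsize (enc_trm a)" by (rule TJoin.IH(1))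
  moreover have "length (ut b (ut a U)) \<le> length (ut a U) + dsize (enc_trm b)" by (rule TJoin.IH(2))
  ultimately show ?case by simp
next
  case (TMeet a b)
  have "length (ut a U) \<le> length U + dsize (enc_trm a)" by (rule TMeet.IH(1))
  moreover have "length (ut b (ut a U)) \<le> length (ut a U) + dsize (enc_trm b)" by (rule TMeet.IH(2))
  ultimately show ?case by simp
next
  case (TCompl a)
  have "length (ut a U) \<le> length U + dsize (enc_trm a)" by (rule TCompl.IH)
  then show ?case by simp
qed simp

lemma len_uf: "length (uf \<phi> U) \<le> length U + dsize (enc_fm \<phi>)"
proof (induction \<phi> arbitrary: U)
  case (FEq a b) then show ?case using len_ut[of a U] len_ut[of b "ut a U"] by simp
next
  case (FAnd p q)
  have "length (uf p U) \<le> length U + dsize (enc_fm p)" by (rule FAnd.IH(1))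
  moreover have "length (uf q (uf p U)) \<le> length (uf p U) + dsize (enc_fm q)" by (rule FAnd.IH(2))
  ultimately show ?case by simp
next
  case (FOr p q)
  have "length (uf p U) \<le> length U + dsize (enc_fm p)" by (rule FOr.IH(1))
  moreover have "length (uf q (uf p U)) \<le> length (uf p U) + dsize (enc_fm q)" by (rule FOr.IH(2))
  ultimately show ?case by simp
next
  case (FNot p)
  have "length (uf p U) \<le> length U + dsize (enc_fm p)" by (rule FNot.IH)
  then show ?case by simp
next
  case (FAll x p)
  have "length (uf p U) \<le> length U + dsize (enc_fm p)" by (rule FAll.IH)
  then show ?case by simp
next
  case (FEx x p)
  have "length (uf p U) \<le> length U + dsize (enc_fm p)" by (rule FEx.IH)
  then show ?case by simp
qed

lemma ds_fold: "dsize (enc_fm (fold (qnode q) Us \<phi>)) \<le> dsize (enc_fm \<phi>) + sz Us"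
proof (induction Us arbitrary: \<phi>)
  case Nil then show ?case by simp
next
  case (Cons u Us)
  have "dsize (enc_fm (qnode q u \<phi>)) \<le> dsize (enc_fm \<phi>) + 13 + dsize (enc_nat u)" by (simp add: qnode_def)
  then show ?case using Cons.IH[of "qnode q u \<phi>"] by simp
qed

lemma ds_wrapP: "prenex \<phi> \<Longrightarrow> dsize (enc_fm (wrapP M \<phi>)) + dsize (enc_fm M') = dsize (enc_fm (wrapP M' \<phi>)) + dsize (enc_fm M)"
  by (induction rule: prenex.induct) (case_tac p; simp)+

lemma ds_mat: "dsize (enc_fm (mat \<phi>)) \<le> dsize (enc_fm \<phi>)"
  by (induction \<phi>) auto

lemma nq_le: "nq \<phi> \<le> dsize (enc_fm \<phi>)"
  by (induction \<phi>) auto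


definition KT :: nat where
  "KT = cost INIT + 1 + etime PAG + cost MID + 2 + cost FINAL + 3 * KB + KA + 4 * KB"

lemma tb_bound: "TB \<Phi> \<le> KT + KT * fsize \<Phi>"
proof -
  define n where "n = fsize \<Phi>"
  have a: "nq \<Phi> \<le> n" using nq_le[of \<Phi>] by (simp add: n_def fsize_def)
  have b: "dsize (enc_fm (mat \<Phi>)) \<le> n" using ds_mat[of \<Phi>] by (simp add: n_def fsize_def)
  have c: "length (uf (mat \<Phi>) [nm []]) \<le> 1 + n" using len_uf[of "mat \<Phi>" "[nm []]"] b by simp
  have f1: "KA * nq \<Phi> \<le> KA * n" using a by (rule mult_le_mono2)
  have f2: "2 * KB * dsize (enc_fm (mat \<Phi>)) \<le> 2 * KB * n" using b by (rule mult_le_mono2)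
  have f3: "KB * nq \<Phi> \<le> KB * n" using a by (rule mult_le_mono2)
  have f4: "KB * (length (uf (mat \<Phi>) [nm []]) + 1) \<le> KB * (n + 2)" using c by (intro mult_le_mono2) simp
  have "TB \<Phi> \<le> cost INIT + KA * n + 1 + etime PAG + cost MID + (KB + 2 * KB * n + KB * n + KB * (n + 2)) + 2 + cost FINAL"
    unfolding TB_def using f1 f2 f3 f4 by linarith
  also have "\<dots> \<le> KT + KT * n" unfolding KT_def by (simp add: algebra_simps)
  finally show ?thesis by (simp add: n_def)
qed

lemma fsize_pos: "fsize \<Phi> \<ge> 1" by (cases \<Phi>) (auto simp: fsize_def)

lemma fsize_bound:
  assumes pr: "prenex \<Phi>"
  shows "fsize (outf \<Phi>) \<le> 420 * (fsize \<Phi>)\<^sup>2 + 420"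
proof -
  define n where "n = fsize \<Phi>"
  define \<psi> where "\<psi> = mat \<Phi>"
  define q where "q = Qb \<Phi>"
  define C where "C = cf \<psi> C0"
  define Us where "Us = uf \<psi> [nm []]"
  define M where "M = Mform q C (trf \<psi>)"
  have out: "outf \<Phi> = fold (qnode q) Us (wrapP M \<Phi>)"
    by (simp add: outf_def \<psi>_def q_def C_def Us_def M_def)
  have N\<Phi>: "\<forall>c\<in>fconsts \<Phi>. dsize (enc_tree c) \<le> n" using ds_const_le by (simp add: n_def fsize_def)
  have N\<psi>: "\<forall>c\<in>fconsts \<psi>. dsize (enc_tree c) \<le> n" using N\<Phi> fconsts_prenex[OF pr] by (simp add: \<psi>_def)
  have d\<psi>: "dsize (enc_fm \<psi>) \<le> n" using ds_mat[of \<Phi>] by (simp add: \<psi>_def n_def fsize_def)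
  define K1 where "K1 = 13 + 4 * n"
  define K2 where "K2 = 260 + 28 * n"
  define K3 where "K3 = 60 + 8 * n"
  have t\<Phi>: "dsize (enc_fm (trf \<Phi>)) \<le> n * K1" using ds_trf[OF N\<Phi>] by (simp add: n_def fsize_def K1_def)
  have t\<psi>: "dsize (enc_fm (trf \<psi>)) \<le> n * K1"
  proof -
    have "dsize (enc_fm (trf \<psi>)) \<le> dsize (enc_fm \<psi>) * K1" using ds_trf[OF N\<psi>] by (simp add: K1_def)
    also have "\<dots> \<le> n * K1" using d\<psi> by (rule mult_le_mono1)
    finally show ?thesis .
  qed
  have dC0: "dsize (enc_fm C0) \<le> 30" by (simp add: C0_def enc_nm)
  have dC: "dsize (enc_fm C) \<le> 30 + n * K2"
  proof -
    have "dsize (enc_fm C) \<le> dsize (enc_fm C0) + dsize (enc_fm \<psi>) * K2" using ds_cf[OF N\<psi>] by (simp add: C_def K2_def)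
    also have "dsize (enc_fm \<psi>) * K2 \<le> n * K2" using d\<psi> by (rule mult_le_mono1)
    finally show ?thesis using dC0 by simp
  qed
  have sz0: "sz [nm []] \<le> 30" by (simp add: enc_nm)
  have sU: "sz Us \<le> 30 + n * K3"
  proof -
    have "sz Us \<le> sz [nm []] + dsize (enc_fm \<psi>) * K3" unfolding Us_def K3_def by (rule sz_uf[OF N\<psi>])
    also have "dsize (enc_fm \<psi>) * K3 \<le> n * K3" using d\<psi> by (rule mult_le_mono1)
    finally show ?thesis using sz0 by simp
  qed
  have dM: "dsize (enc_fm M) \<le> 13 + dsize (enc_fm C) + dsize (enc_fm (trf \<psi>))"
    by (simp add: M_def Mform_def)
  have dW: "dsize (enc_fm (wrapP M \<Phi>)) \<le> dsize (enc_fm (trf \<Phi>)) + dsize (enc_fm M)"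
    using ds_wrapP[OF pr, of M "trf \<psi>"] trf_wrapP[OF pr] by (simp add: \<psi>_def)
  have "fsize (outf \<Phi>) \<le> dsize (enc_fm (wrapP M \<Phi>)) + sz Us" unfolding fsize_def out by (rule ds_fold)
  also have "\<dots> \<le> n * K1 + 13 + (30 + n * K2) + n * K1 + (30 + n * K3)"
    using dW dM t\<Phi> t\<psi> dC sU by linarith
  also have "\<dots> = 73 + 346 * n + 44 * (n * n)" by (simp add: K1_def K2_def K3_def algebra_simps)
  also have "\<dots> \<le> 420 * (n * n) + 420"
  proof -
    have "1 \<le> n" using fsize_pos by (simp add: n_def)
    then have "n \<le> n * n" by simp
    then show ?thesis by linarith
  qed
  finally show ?thesis by (simp add: n_def power2_eq_square)
qed

theorem lemma1:
  shows "\<exists>(p :: com) (c :: nat). \<forall>\<Phi>.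
    sentence \<Phi> \<and> prenex \<Phi> \<and> (\<forall>k \<in> fconsts \<Phi>. canonical k) \<longrightarrow>
    (\<exists>\<Phi>' t. run p (enc_fm \<Phi>) t (enc_fm \<Phi>') \<and>
       t \<le> c * (fsize \<Phi>)\<^sup>2 + c \<and>
       sentence \<Phi>' \<and> prenex \<Phi>' \<and>
       fconsts \<Phi>' \<subseteq> {Leaf True, Leaf False} \<and>
       alternations \<Phi>' = alternations \<Phi> \<and>
       (models_B \<Phi> \<longleftrightarrow> models_B \<Phi>') \<and>
       fsize \<Phi>' \<le> c * (fsize \<Phi>)\<^sup>2 + c)"
proof (intro exI[of _ PROG] exI[of _ "KT + 420"] allI impI)
  fix \<Phi> assume A: "sentence \<Phi> \<and> prenex \<Phi> \<and> (\<forall>k \<in> fconsts \<Phi>. canonical k)"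
  then have pr: "prenex \<Phi>" by blast
  obtain t where t: "run PROG (enc_fm \<Phi>) t (enc_fm (outf \<Phi>))" "t \<le> TB \<Phi>" using run_PROG[OF pr] by blast
  have n1: "fsize \<Phi> \<le> (fsize \<Phi>)\<^sup>2" using fsize_pos[of \<Phi>] by (simp add: power2_eq_square)
  have "t \<le> KT + KT * fsize \<Phi>" using t(2) tb_bound[of \<Phi>] by linarith
  also have "\<dots> \<le> KT + KT * (fsize \<Phi>)\<^sup>2" using n1 by simp
  also have "\<dots> \<le> (KT + 420) * (fsize \<Phi>)\<^sup>2 + (KT + 420)" by (simp add: algebra_simps)
  finally have tb: "t \<le> (KT + 420) * (fsize \<Phi>)\<^sup>2 + (KT + 420)" .
  have "fsize (outf \<Phi>) \<le> 420 * (fsize \<Phi>)\<^sup>2 + 420" by (rule fsize_bound[OF pr])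
  also have "\<dots> \<le> (KT + 420) * (fsize \<Phi>)\<^sup>2 + (KT + 420)" by (simp add: algebra_simps)
  finally have sb: "fsize (outf \<Phi>) \<le> (KT + 420) * (fsize \<Phi>)\<^sup>2 + (KT + 420)" .
  have props: "sentence (outf \<Phi>) \<and> prenex (outf \<Phi>) \<and> fconsts (outf \<Phi>) \<subseteq> {Leaf True, Leaf False} \<and>
     alternations (outf \<Phi>) = alternations \<Phi> \<and> (models_B \<Phi> \<longleftrightarrow> models_B (outf \<Phi>))"
    using outf_props A by blast
  show "\<exists>\<Phi>' t. run PROG (enc_fm \<Phi>) t (enc_fm \<Phi>') \<and>
       t \<le> (KT + 420) * (fsize \<Phi>)\<^sup>2 + (KT + 420) \<and>
       sentence \<Phi>' \<and> prenex \<Phi>' \<and>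
       fconsts \<Phi>' \<subseteq> {Leaf True, Leaf False} \<and>
       alternations \<Phi>' = alternations \<Phi> \<and>
       (models_B \<Phi> \<longleftrightarrow> models_B \<Phi>') \<and>
       fsize \<Phi>' \<le> (KT + 420) * (fsize \<Phi>)\<^sup>2 + (KT + 420)"
    using t(1) tb sb props by blast
qed


end
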